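(* Let $u$ and $v$ be two prime words such that $u<_{lex}v$. Then $u^\alpha v$ is a prime word for every ordinal $\alpha$.
   Context: $A$ is a finite alphabet with a linear order $<_A$. Words are sequences of letters indexed by countable ordinals; $x^\alpha$ is the concatenation of $\alpha$ copies of $x$. A prefix of $x$ is $x[0,\gamma)$, a suffix is $x[\gamma,|x|)$ ($0\le\gamma\le|x|$), proper if $0<\gamma<|x|$. Write $x<_{str}x'$ if there are letters $a<_Ab$ and words $y,z,z'$ with $x=yaz$, $x'=ybz'$; $x\le_{lex}x'$ iff $x$ is a prefix of $x'$ or $x<_{str}x'$; $<_{lex}$ is its strict version. A word $x$ is primitive if $x=y^\alpha$ implies $\alpha=1$ and $y=x$. A word $w$ is prime if it is primitive and every proper suffix $z$ of $w$ satisfies $w\le_{lex}z$. *)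

theory Defs
  imports Main "HOL-Library.Countable_Set"
begin

text \<open>A word is represented by a well-order r on its set of positions Field r (countable),
together with a labelling of positions. Two representations denote the same word iff
they are isomorphic (word_iso). The empty relation is the empty word.\<close>

type_synonym ('i, 'a) wrd = "'i rel \<times> ('i \<Rightarrow> 'a)"

definition word :: "('i, 'a) wrd \<Rightarrow> bool" where
  "word x \<longleftrightarrow> Well_order (fst x) \<and> countable (Field (fst x))"

definition word_iso :: "('i, 'a) wrd \<Rightarrow> ('j, 'a) wrd \<Rightarrow> bool" where
  "word_iso x y \<longleftrightarrow> (\<exists>h. bij_betw h (Field (fst x)) (Field (fst y))
     \<and> (\<forall>p\<in>Field (fst x). \<forall>q\<in>Field (fst x). (p, q) \<in> fst x \<longleftrightarrow> (h p, h q) \<in> fst y)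
     \<and> (\<forall>p\<in>Field (fst x). snd y (h p) = snd x p))"

definition wconc :: "('i, 'a) wrd \<Rightarrow> ('j, 'a) wrd \<Rightarrow> ('i + 'j, 'a) wrd" where
  "wconc x y =
     ({(Inl p, Inl q) | p q. (p, q) \<in> fst x}
      \<union> {(Inr p, Inr q) | p q. (p, q) \<in> fst y}
      \<union> {(Inl p, Inr q) | p q. p \<in> Field (fst x) \<and> q \<in> Field (fst y)},
      case_sum (snd x) (snd y))"

definition wletter :: "'a \<Rightarrow> (unit, 'a) wrd" where
  "wletter a = ({((), ())}, \<lambda>_. a)"

definition wpow :: "('i, 'a) wrd \<Rightarrow> 'o rel \<Rightarrow> ('o \<times> 'i, 'a) wrd" where
  "wpow x \<alpha> =
     ({((o1, p1), (o2, p2)) | o1 p1 o2 p2.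
         o1 \<in> Field \<alpha> \<and> o2 \<in> Field \<alpha> \<and> p1 \<in> Field (fst x) \<and> p2 \<in> Field (fst x) \<and>
         (((o1, o2) \<in> \<alpha> \<and> o1 \<noteq> o2) \<or> (o1 = o2 \<and> (p1, p2) \<in> fst x))},
      \<lambda>(o1, p1). snd x p1)"

definition wrestr :: "('i, 'a) wrd \<Rightarrow> 'i set \<Rightarrow> ('i, 'a) wrd" where
  "wrestr x S = (fst x \<inter> (S \<times> S), snd x)"

definition is_prefix :: "('i, 'a) wrd \<Rightarrow> ('j, 'a) wrd \<Rightarrow> bool" where
  "is_prefix x x' \<longleftrightarrow> word_iso x x' \<or>
     (\<exists>p\<in>Field (fst x'). word_iso x (wrestr x' {q. (q, p) \<in> fst x' \<and> q \<noteq> p}))"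

definition str_less :: "('i, 'a::linorder) wrd \<Rightarrow> ('j, 'a) wrd \<Rightarrow> bool" where
  "str_less x x' \<longleftrightarrow> (\<exists>(y :: (nat, 'a) wrd) (z :: (nat, 'a) wrd) (z' :: (nat, 'a) wrd) a b.
     word y \<and> word z \<and> word z' \<and> a < b \<and>
     word_iso x (wconc (wconc y (wletter a)) z) \<and>
     word_iso x' (wconc (wconc y (wletter b)) z'))"

definition lex_le :: "('i, 'a::linorder) wrd \<Rightarrow> ('j, 'a) wrd \<Rightarrow> bool" where
  "lex_le x x' \<longleftrightarrow> is_prefix x x' \<or> str_less x x'"

definition lex_less :: "('i, 'a::linorder) wrd \<Rightarrow> ('j, 'a) wrd \<Rightarrow> bool" where
  "lex_less x x' \<longleftrightarrow> lex_le x x' \<and> \<not> word_iso x x'"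

text \<open>Primitive: x = y^beta implies beta = 1 and y = x. Every countable word and countable
ordinal is represented (up to isomorphism) by a well-order on a subset of nat.\<close>
definition primitive :: "('i, 'a) wrd \<Rightarrow> bool" where
  "primitive x \<longleftrightarrow> (\<forall>(y :: (nat, 'a) wrd) (\<beta> :: nat rel).
     word y \<and> Well_order \<beta> \<and> word_iso x (wpow y \<beta>) \<longrightarrow>
       (\<exists>o1. Field \<beta> = {o1}) \<and> word_iso y x)"

text \<open>Proper suffixes: x[gamma,|x|) with 0 < gamma < |x|, i.e. starting at a
non-minimal position p.\<close>
definition prime_word :: "('i, 'a::linorder) wrd \<Rightarrow> bool" where
  "prime_word w \<longleftrightarrow> primitive w \<and>
     (\<forall>p\<in>Field (fst w). (\<exists>q. (q, p) \<in> fst w \<and> q \<noteq> p) \<longrightarrow>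
        lex_le w (wrestr w {q. (p, q) \<in> fst w}))"

end

theory Submission
  imports Defs
begin

lemma wo_refl: "Well_order r \<Longrightarrow> a \<in> Field r \<Longrightarrow> (a,a) \<in> r"
  by (meson wo_rel.REFL wo_rel_def refl_onD)

lemma wo_trans: "Well_order r \<Longrightarrow> (a,b) \<in> r \<Longrightarrow> (b,c) \<in> r \<Longrightarrow> (a,c) \<in> r"
  using wo_rel.TRANS[of r] unfolding wo_rel_def trans_def by blast

lemma wo_antisym: "Well_order r \<Longrightarrow> (a,b) \<in> r \<Longrightarrow> (b,a) \<in> r \<Longrightarrow> a = b"
  using wo_rel.ANTISYM[of r] unfolding wo_rel_def antisym_def by blast

lemma wo_total: "Well_order r \<Longrightarrow> a \<in> Field r \<Longrightarrow> b \<in> Field r \<Longrightarrow> (a,b) \<in> r \<or> (b,a) \<in> r"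
  using wo_rel.TOTALS[of r] unfolding wo_rel_def by blast

lemma wo_induct:
  assumes "Well_order r" and "\<And>a. (\<And>b. (b,a) \<in> r \<Longrightarrow> b \<noteq> a \<Longrightarrow> P b) \<Longrightarrow> P a"
  shows "P a"
  using wo_rel.well_order_induct[of r P] assms unfolding wo_rel_def by blast

lemma wo_min:
  assumes "Well_order r" "S \<subseteq> Field r" "S \<noteq> {}"
  shows "\<exists>m\<in>S. \<forall>s\<in>S. (m,s) \<in> r"
  using wo_rel.minim_in[of r S] wo_rel.minim_least[of r S] assms unfolding wo_rel_def by blast

lemma wo_FieldI1: "(a,b) \<in> r \<Longrightarrow> a \<in> Field r" by (auto simp: Field_def)
lemma wo_FieldI2: "(a,b) \<in> r \<Longrightarrow> b \<in> Field r" by (auto simp: Field_def)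

lemma wo_strict_mono_ge:
  assumes wo: "Well_order r" and hF: "\<And>a. a \<in> Field r \<Longrightarrow> h a \<in> Field r"
    and mono: "\<And>a b. (a,b) \<in> r \<Longrightarrow> a \<noteq> b \<Longrightarrow> (h a, h b) \<in> r \<and> h a \<noteq> h b"
    and a: "a \<in> Field r"
  shows "(a, h a) \<in> r"
proof (rule ccontr)
  assume nb: "(a, h a) \<notin> r"
  let ?S = "{a\<in>Field r. (a, h a) \<notin> r}"
  have "?S \<subseteq> Field r" "?S \<noteq> {}" using a nb by auto
  then obtain m where m: "m \<in> ?S" "\<forall>s\<in>?S. (m,s) \<in> r" using wo_min[OF wo] by blast
  have hm: "h m \<in> Field r" using hF m by auto
  have "(h m, m) \<in> r" using m wo_total[OF wo hm] by auto
  moreover have "h m \<noteq> m" using m wo_refl[OF wo] by auto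
  ultimately have "(h (h m), h m) \<in> r \<and> h (h m) \<noteq> h m" using mono by blast
  hence "h m \<in> ?S" using hm wo_antisym[OF wo] by blast
  hence "(m, h m) \<in> r" using m by blast
  with m show False by auto
qed

section \<open>Order embeddings onto initial segments\<close>

definition oemb :: "'i rel \<Rightarrow> 'j rel \<Rightarrow> 'i set \<Rightarrow> ('i \<Rightarrow> 'j) \<Rightarrow> bool" where
  "oemb r s A f \<longleftrightarrow> A \<subseteq> Field r \<and> (\<forall>a\<in>A. \<forall>b. (b,a) \<in> r \<longrightarrow> b \<in> A) \<and> f ` A \<subseteq> Field s
     \<and> (\<forall>a\<in>A. \<forall>b\<in>A. (a,b) \<in> r \<longleftrightarrow> (f a, f b) \<in> s) \<and> (\<forall>a\<in>A. \<forall>c. (c, f a) \<in> s \<longrightarrow> c \<in> f ` A)"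

lemma oembD:
  assumes "oemb r s A f"
  shows "A \<subseteq> Field r" "\<And>a b. a \<in> A \<Longrightarrow> (b,a) \<in> r \<Longrightarrow> b \<in> A" "\<And>a. a \<in> A \<Longrightarrow> f a \<in> Field s"
    "\<And>a b. a \<in> A \<Longrightarrow> b \<in> A \<Longrightarrow> (a,b) \<in> r \<longleftrightarrow> (f a, f b) \<in> s"
    "\<And>a c. a \<in> A \<Longrightarrow> (c, f a) \<in> s \<Longrightarrow> c \<in> f ` A"
  using assms unfolding oemb_def by blast+

lemma oemb_inj:
  assumes "Well_order r" "oemb r s A f" "a \<in> A" "b \<in> A" "f a = f b"
  shows "a = b"
proof -
  have "a \<in> Field r" using assms(2,3) oembD(1) by blast
  hence "(a,a) \<in> r" using wo_refl[OF assms(1)] by blast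
  hence "(f a, f a) \<in> s" using oembD(4)[OF assms(2) assms(3) assms(3)] by simp
  hence "(a,b) \<in> r" "(b,a) \<in> r" using assms(5) oembD(4)[OF assms(2) assms(3) assms(4)]  oembD(4)[OF assms(2) assms(4) assms(3)] by simp_all
  thus ?thesis using wo_antisym[OF assms(1)] by blast
qed

lemma oemb_comp:
  assumes "oemb r s A f" "oemb s t B g" "f ` A \<subseteq> B"
  shows "oemb r t A (g \<circ> f)"
  unfolding oemb_def
proof (intro conjI ballI allI impI)
  show "A \<subseteq> Field r" using oembD(1)[OF assms(1)] .
  show "\<And>a b. a \<in> A \<Longrightarrow> (b, a) \<in> r \<Longrightarrow> b \<in> A" using oembD(2)[OF assms(1)] by blast
  show "(g \<circ> f) ` A \<subseteq> Field t" using oembD(3)[OF assms(2)] assms(3) by auto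
  fix a assume a: "a \<in> A"
  { fix b assume b: "b \<in> A"
    have "f a \<in> B" "f b \<in> B" using a b assms(3) by auto
    show "((a, b) \<in> r) = (((g \<circ> f) a, (g \<circ> f) b) \<in> t)"
      using oembD(4)[OF assms(1) a b] oembD(4)[OF assms(2) \<open>f a \<in> B\<close> \<open>f b \<in> B\<close>] by simp }
  { fix c assume c: "(c, (g \<circ> f) a) \<in> t"
    have fa: "f a \<in> B" using a assms(3) by auto
    then obtain b where b: "b \<in> B" "c = g b" using oembD(5)[OF assms(2) fa] c by auto
    hence "(b, f a) \<in> s" using oembD(4)[OF assms(2) b(1) fa] c by auto
    then obtain a' where "a' \<in> A" "b = f a'" using oembD(5)[OF assms(1) a] by auto
    thus "c \<in> (g \<circ> f) ` A" using b by auto }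
qed

lemma oemb_restr:
  assumes "oemb r s A f" "A' \<subseteq> A" "\<And>a b. a \<in> A' \<Longrightarrow> (b,a) \<in> r \<Longrightarrow> b \<in> A'"
  shows "oemb r s A' f"
  unfolding oemb_def
proof (intro conjI ballI allI impI)
  show "A' \<subseteq> Field r" using oembD(1)[OF assms(1)] assms(2) by blast
  show "\<And>a b. a \<in> A' \<Longrightarrow> (b, a) \<in> r \<Longrightarrow> b \<in> A'" using assms(3) by blast
  show "f ` A' \<subseteq> Field s" using oembD(3)[OF assms(1)] assms(2) by blast
  show "\<And>a b. a \<in> A' \<Longrightarrow> b \<in> A' \<Longrightarrow> ((a, b) \<in> r) = ((f a, f b) \<in> s)"
    using oembD(4)[OF assms(1)] assms(2) by (meson subsetD)
  fix a c assume a: "a \<in> A'" and c: "(c, f a) \<in> s"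
  have aA: "a \<in> A" using a assms(2) by blast
  then obtain b where b: "b \<in> A" "c = f b" using oembD(5)[OF assms(1) aA c] by blast
  hence "(b,a) \<in> r" using oembD(4)[OF assms(1) b(1) aA] c by simp
  thus "c \<in> f ` A'" using assms(3) a b by blast
qed

lemma oemb_id:
  assumes "A \<subseteq> Field r" "\<And>a b. a \<in> A \<Longrightarrow> (b,a) \<in> r \<Longrightarrow> b \<in> A"
  shows "oemb r r A id"
  using assms unfolding oemb_def by auto

lemma oemb_unique:
  assumes wr: "Well_order r" and ws: "Well_order s" and f: "oemb r s A f" and g: "oemb r s A g"
    and aA: "a \<in> A"
  shows "f a = g a"
proof -
  have "a \<in> A \<longrightarrow> f a = g a"
  proof (rule wo_induct[OF wr])
    fix a assume IH0: "\<And>b. (b,a) \<in> r \<Longrightarrow> b \<noteq> a \<Longrightarrow> b \<in> A \<longrightarrow> f b = g b"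
    show "a \<in> A \<longrightarrow> f a = g a"
    proof
      assume aA: "a \<in> A"
      have IH: "\<And>b. (b,a) \<in> r \<Longrightarrow> b \<noteq> a \<Longrightarrow> f b = g b"
        using IH0 oembD(2)[OF f aA] by metis
      show "f a = g a"
      proof (rule ccontr)
        assume ne: "f a \<noteq> g a"
        have "f a \<in> Field s" "g a \<in> Field s" using oembD(3)[OF f aA] oembD(3)[OF g aA] by auto
        then consider "(f a, g a) \<in> s" | "(g a, f a) \<in> s" using wo_total[OF ws] by blast
        thus False
        proof cases
          case 1
          then obtain b where b: "b \<in> A" "f a = g b" using oembD(5)[OF g aA] by blast
          hence "(b,a) \<in> r" using oembD(4)[OF g b(1) aA] 1 by simp
          moreover have "b \<noteq> a" using b ne by blast
          ultimately have "f b = f a" using IH b by simp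
          hence "b = a" using oemb_inj[OF wr f b(1) aA] by blast
          thus False using \<open>b \<noteq> a\<close> by blast
        next
          case 2
          then obtain b where b: "b \<in> A" "g a = f b" using oembD(5)[OF f aA] by blast
          hence "(b,a) \<in> r" using oembD(4)[OF f b(1) aA] 2 by simp
          moreover have "b \<noteq> a" using b ne by auto
          ultimately have "g b = g a" using IH b by simp
          hence "b = a" using oemb_inj[OF wr g b(1) aA] by blast
          thus False using \<open>b \<noteq> a\<close> by blast
        qed
      qed
    qed
  qed
  thus ?thesis using aA by blast
qed

lemma under_sub: "under r p \<subseteq> Field r" unfolding under_def Field_def by blast
lemma under_closed: "Well_order r \<Longrightarrow> a \<in> under r p \<Longrightarrow> (b,a) \<in> r \<Longrightarrow> b \<in> under r p"
  unfolding under_def by (simp add: wo_trans[of r b a p])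
lemma underS_sub_under: "underS r p \<subseteq> under r p" unfolding under_def underS_def by blast
lemma under_self: "Well_order r \<Longrightarrow> p \<in> Field r \<Longrightarrow> p \<in> under r p"
  unfolding under_def by (simp add: wo_refl)
lemma Field_closed: "a \<in> Field r \<Longrightarrow> (b,a) \<in> r \<Longrightarrow> b \<in> Field r"
  unfolding Field_def by blast

section \<open>Prefix and strict-lexicographic comparison, position based\<close>

definition pre :: "('i,'a) wrd \<Rightarrow> ('j,'a) wrd \<Rightarrow> bool" where
  "pre x y \<longleftrightarrow> (\<exists>f. oemb (fst x) (fst y) (Field (fst x)) f \<and> (\<forall>a\<in>Field (fst x). snd y (f a) = snd x a))"

definition sless :: "('i,'a::linorder) wrd \<Rightarrow> ('j,'a) wrd \<Rightarrow> bool" where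
  "sless x y \<longleftrightarrow> (\<exists>p\<in>Field (fst x). \<exists>f. oemb (fst x) (fst y) (under (fst x) p) f
      \<and> (\<forall>a\<in>underS (fst x) p. snd y (f a) = snd x a) \<and> snd x p < snd y (f p))"

definition wle :: "('i,'a::linorder) wrd \<Rightarrow> ('j,'a) wrd \<Rightarrow> bool" where
  "wle x y \<longleftrightarrow> pre x y \<or> sless x y"

abbreviation wo :: "('i,'a) wrd \<Rightarrow> bool" where "wo x \<equiv> Well_order (fst x)"

lemma underS_under: "a \<in> underS r p \<Longrightarrow> a \<in> under r p"
  unfolding under_def underS_def by blast

lemma under_closed': "Well_order r \<Longrightarrow> \<forall>a\<in>under r p. \<forall>b. (b,a) \<in> r \<longrightarrow> b \<in> under r p"
  using under_closed[of r _ p] by metis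

lemma oemb_full_intro:
  assumes "\<And>a. a \<in> Field r \<Longrightarrow> f a \<in> Field s"
    "\<And>a b. a \<in> Field r \<Longrightarrow> b \<in> Field r \<Longrightarrow> (a,b) \<in> r \<longleftrightarrow> (f a, f b) \<in> s"
    "\<And>a c. a \<in> Field r \<Longrightarrow> (c, f a) \<in> s \<Longrightarrow> c \<in> f ` Field r"
  shows "oemb r s (Field r) f"
  unfolding oemb_def
proof (intro conjI ballI allI impI)
  show "\<And>a b. a \<in> Field r \<Longrightarrow> (b, a) \<in> r \<Longrightarrow> b \<in> Field r" by (rule Field_closed)
qed (use assms in auto)

lemma oemb_inv:
  assumes wr: "Well_order r" and f: "oemb r s A f"
  shows "oemb s r (f ` A) (inv_into A f)"
  unfolding oemb_def
proof (intro conjI ballI allI impI)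
  have inj: "inj_on f A" unfolding inj_on_def using oemb_inj[OF wr f] by blast
  show "f ` A \<subseteq> Field s" using oembD(3)[OF f] by blast
  show "\<And>a b. a \<in> f ` A \<Longrightarrow> (b, a) \<in> s \<Longrightarrow> b \<in> f ` A"
    using oembD(5)[OF f] by blast
  show "inv_into A f ` f ` A \<subseteq> Field r" using oembD(1)[OF f] inj by auto
  fix a assume a: "a \<in> f ` A"
  then obtain a0 where a0: "a0 \<in> A" "a = f a0" by blast
  have ia: "inv_into A f a = a0" using a0 inj by (simp add: inv_into_f_f)
  { fix b assume b: "b \<in> f ` A"
    then obtain b0 where b0: "b0 \<in> A" "b = f b0" by blast
    have ib: "inv_into A f b = b0" using b0 inj by (simp add: inv_into_f_f)
    show "((a, b) \<in> s) = ((inv_into A f a, inv_into A f b) \<in> r)"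
      using ia ib a0 b0 oembD(4)[OF f a0(1) b0(1)] by simp }
  { fix c assume c: "(c, inv_into A f a) \<in> r"
    hence cA: "c \<in> A" using ia oembD(2)[OF f a0(1)] by simp
    have "inv_into A f (f c) = c" using cA inj by (simp add: inv_into_f_f)
    thus "c \<in> inv_into A f ` f ` A" using cA by force }
qed

lemma embed_oemb:
  assumes wr: "Well_order r" and ws: "Well_order s" and e: "embed r s f"
  shows "oemb r s (Field r) f"
proof -
  have c: "compat r s f" and i: "inj_on f (Field r)" and o: "wo_rel.ofilter s (f ` Field r)"
    using embed_iff_compat_inj_on_ofilter[OF wr ws] e by blast+
  show ?thesis
  proof (rule oemb_full_intro)
    fix a assume a: "a \<in> Field r"
    show "f a \<in> Field s" using embed_in_Field[OF e a] .
  next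
    fix a b assume a: "a \<in> Field r" and b: "b \<in> Field r"
    show "(a,b) \<in> r \<longleftrightarrow> (f a, f b) \<in> s"
    proof
      assume "(a,b) \<in> r" thus "(f a, f b) \<in> s" using c unfolding compat_def by blast
    next
      assume h: "(f a, f b) \<in> s"
      show "(a,b) \<in> r"
      proof (rule ccontr)
        assume "(a,b) \<notin> r"
        hence "(b,a) \<in> r" using wo_total[OF wr a b] by blast
        hence "(f b, f a) \<in> s" using c unfolding compat_def by blast
        hence "f a = f b" using h wo_antisym[OF ws] by blast
        hence "a = b" using i a b unfolding inj_on_def by blast
        thus False using \<open>(a,b) \<notin> r\<close> wo_refl[OF wr a] by blast
      qed
    qed
  next
    fix a c assume a: "a \<in> Field r" and h: "(c, f a) \<in> s"
    have "f a \<in> f ` Field r" using a by blast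
    hence "under s (f a) \<subseteq> f ` Field r" using o unfolding wo_rel.ofilter_def[OF ws[unfolded wo_rel_def[symmetric]]] by blast
    thus "c \<in> f ` Field r" using h unfolding under_def by blast
  qed
qed

lemma word_isoD:
  assumes "word_iso x y"
  obtains h where "bij_betw h (Field (fst x)) (Field (fst y))"
    "\<And>p q. p \<in> Field (fst x) \<Longrightarrow> q \<in> Field (fst x) \<Longrightarrow> (p, q) \<in> fst x \<longleftrightarrow> (h p, h q) \<in> fst y"
    "\<And>p. p \<in> Field (fst x) \<Longrightarrow> snd y (h p) = snd x p"
  using assms unfolding word_iso_def by blast

lemma word_isoI:
  assumes "bij_betw h (Field (fst x)) (Field (fst y))"
    "\<And>p q. p \<in> Field (fst x) \<Longrightarrow> q \<in> Field (fst x) \<Longrightarrow> (p, q) \<in> fst x \<longleftrightarrow> (h p, h q) \<in> fst y"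
    "\<And>p. p \<in> Field (fst x) \<Longrightarrow> snd y (h p) = snd x p"
  shows "word_iso x y"
  using assms unfolding word_iso_def by blast

lemma iso_refl: "word_iso x x"
  by (rule word_isoI[of id]) auto

lemma iso_sym:
  assumes "word_iso x y" shows "word_iso y x"
proof -
  obtain h where h1: "bij_betw h (Field (fst x)) (Field (fst y))"
    and h2: "\<forall>p\<in>Field (fst x). \<forall>q\<in>Field (fst x). (p, q) \<in> fst x \<longleftrightarrow> (h p, h q) \<in> fst y"
    and h3: "\<forall>p\<in>Field (fst x). snd y (h p) = snd x p" using assms unfolding word_iso_def by blast
  note h = h1 h2[rule_format] h3[rule_format]
  let ?g = "inv_into (Field (fst x)) h"
  have g: "bij_betw ?g (Field (fst y)) (Field (fst x))" using h(1) by (rule bij_betw_inv_into)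
  have gh: "\<And>q. q \<in> Field (fst y) \<Longrightarrow> h (?g q) = q" using h(1)
    by (simp add: bij_betw_inv_into_right)
  show ?thesis
  proof (rule word_isoI[OF g])
    fix p q assume p: "p \<in> Field (fst y)" and q: "q \<in> Field (fst y)"
    have gp: "?g p \<in> Field (fst x)" using g p bij_betwE by blast
    have gq: "?g q \<in> Field (fst x)" using g q bij_betwE by blast
    show "(p, q) \<in> fst y \<longleftrightarrow> (?g p, ?g q) \<in> fst x" using h(2)[OF gp gq] gh[OF p] gh[OF q] by simp
  next
    fix p assume p: "p \<in> Field (fst y)"
    have gp: "?g p \<in> Field (fst x)" using g p bij_betwE by blast
    show "snd x (?g p) = snd y p" using h(3)[OF gp] gh[OF p] by simp
  qed
qed

lemma iso_trans:
  assumes "word_iso x y" "word_iso y z" shows "word_iso x z"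
proof -
  obtain h where h1: "bij_betw h (Field (fst x)) (Field (fst y))"
    and h2: "\<forall>p\<in>Field (fst x). \<forall>q\<in>Field (fst x). (p, q) \<in> fst x \<longleftrightarrow> (h p, h q) \<in> fst y"
    and h3: "\<forall>p\<in>Field (fst x). snd y (h p) = snd x p" using assms(1) unfolding word_iso_def by blast
  note h = h1 h2[rule_format] h3[rule_format]
  obtain g where g1: "bij_betw g (Field (fst y)) (Field (fst z))"
    and g2: "\<forall>p\<in>Field (fst y). \<forall>q\<in>Field (fst y). (p, q) \<in> fst y \<longleftrightarrow> (g p, g q) \<in> fst z"
    and g3: "\<forall>p\<in>Field (fst y). snd z (g p) = snd y p" using assms(2) unfolding word_iso_def by blast
  note g = g1 g2[rule_format] g3[rule_format]
  show ?thesis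
  proof (rule word_isoI[of "g \<circ> h"])
    show "bij_betw (g \<circ> h) (Field (fst x)) (Field (fst z))" using h(1) g(1) by (rule bij_betw_trans)
  next
    fix p q assume p: "p \<in> Field (fst x)" and q: "q \<in> Field (fst x)"
    have hp: "h p \<in> Field (fst y)" using h(1) p bij_betwE by blast
    have hq: "h q \<in> Field (fst y)" using h(1) q bij_betwE by blast
    show "(p, q) \<in> fst x \<longleftrightarrow> ((g \<circ> h) p, (g \<circ> h) q) \<in> fst z" using h(2)[OF p q] g(2)[OF hp hq] by simp
  next
    fix p assume p: "p \<in> Field (fst x)"
    have hp: "h p \<in> Field (fst y)" using h(1) p bij_betwE by blast
    show "snd z ((g \<circ> h) p) = snd x p" using h(3)[OF p] g(3)[OF hp] by simp
  qed
qed

lemma iso_pre: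
  assumes "word_iso x y" shows "pre x y"
proof -
  obtain h where h1: "bij_betw h (Field (fst x)) (Field (fst y))"
    and h2: "\<forall>p\<in>Field (fst x). \<forall>q\<in>Field (fst x). (p, q) \<in> fst x \<longleftrightarrow> (h p, h q) \<in> fst y"
    and h3: "\<forall>p\<in>Field (fst x). snd y (h p) = snd x p" using assms(1) unfolding word_iso_def by blast
  note h = h1 h2[rule_format] h3[rule_format]
  have "oemb (fst x) (fst y) (Field (fst x)) h"
  proof (rule oemb_full_intro)
    show "\<And>a. a \<in> Field (fst x) \<Longrightarrow> h a \<in> Field (fst y)" using h(1) bij_betwE by blast
    show "\<And>a b. a \<in> Field (fst x) \<Longrightarrow> b \<in> Field (fst x) \<Longrightarrow> ((a, b) \<in> fst x) = ((h a, h b) \<in> fst y)"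
      using h(2) by blast
    fix a c assume a: "a \<in> Field (fst x)" and c: "(c, h a) \<in> fst y"
    have "h a \<in> Field (fst y)" using h(1) a bij_betwE by blast
    hence "c \<in> Field (fst y)" using Field_closed[OF _ c] by blast
    thus "c \<in> h ` Field (fst x)" using h(1) unfolding bij_betw_def by blast
  qed
  thus ?thesis unfolding pre_def using h(3) by blast
qed

lemma pre_refl: "pre x x" using iso_pre[OF iso_refl] .

lemma pre_trans:
  assumes "pre x y" "pre y z" shows "pre x z"
proof -
  obtain f where f: "oemb (fst x) (fst y) (Field (fst x)) f" "\<forall>a\<in>Field (fst x). snd y (f a) = snd x a"
    using assms(1) unfolding pre_def by blast
  obtain g where g: "oemb (fst y) (fst z) (Field (fst y)) g" "\<forall>a\<in>Field (fst y). snd z (g a) = snd y a"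
    using assms(2) unfolding pre_def by blast
  have sub: "f ` Field (fst x) \<subseteq> Field (fst y)" using oembD(3)[OF f(1)] by blast
  have "oemb (fst x) (fst z) (Field (fst x)) (g \<circ> f)" by (rule oemb_comp[OF f(1) g(1) sub])
  moreover have "\<forall>a\<in>Field (fst x). snd z ((g \<circ> f) a) = snd x a" using f(2) g(2) sub by auto
  ultimately show ?thesis unfolding pre_def by blast
qed

lemma pre_antisym:
  assumes wx: "wo x" and wy: "wo y" and "pre x y" "pre y x" shows "word_iso x y"
proof -
  obtain f where f: "oemb (fst x) (fst y) (Field (fst x)) f" "\<forall>a\<in>Field (fst x). snd y (f a) = snd x a"
    using assms(3) unfolding pre_def by blast
  obtain g where g: "oemb (fst y) (fst x) (Field (fst y)) g" "\<forall>a\<in>Field (fst y). snd x (g a) = snd y a"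
    using assms(4) unfolding pre_def by blast
  have sf: "f ` Field (fst x) \<subseteq> Field (fst y)" using oembD(3)[OF f(1)] by blast
  have sg: "g ` Field (fst y) \<subseteq> Field (fst x)" using oembD(3)[OF g(1)] by blast
  have gf: "oemb (fst x) (fst x) (Field (fst x)) (g \<circ> f)" by (rule oemb_comp[OF f(1) g(1) sf])
  have fg: "oemb (fst y) (fst y) (Field (fst y)) (f \<circ> g)" by (rule oemb_comp[OF g(1) f(1) sg])
  have idx: "oemb (fst x) (fst x) (Field (fst x)) id" by (rule oemb_id) (auto dest: Field_closed)
  have idy: "oemb (fst y) (fst y) (Field (fst y)) id" by (rule oemb_id) (auto dest: Field_closed)
  have gf_id: "\<And>a. a \<in> Field (fst x) \<Longrightarrow> g (f a) = a"
    using oemb_unique[OF wx wx gf idx] by simp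
  have fg_id: "\<And>a. a \<in> Field (fst y) \<Longrightarrow> f (g a) = a"
    using oemb_unique[OF wy wy fg idy] by simp
  have bij: "bij_betw f (Field (fst x)) (Field (fst y))"
    using sf sg gf_id fg_id by (intro bij_betw_byWitness[of _ g]) auto
  show ?thesis
    by (rule word_isoI[OF bij]) (use oembD(4)[OF f(1)] f(2) in auto)
qed

lemma slessE:
  assumes "sless x y"
  obtains p f where "p \<in> Field (fst x)" "oemb (fst x) (fst y) (under (fst x) p) f"
    "\<And>a. a \<in> underS (fst x) p \<Longrightarrow> snd y (f a) = snd x a" "snd x p < snd y (f p)"
  using assms unfolding sless_def by blast

lemma slessI:
  assumes "p \<in> Field (fst x)" "oemb (fst x) (fst y) (under (fst x) p) f"
    "\<And>a. a \<in> underS (fst x) p \<Longrightarrow> snd y (f a) = snd x a" "snd x p < snd y (f p)"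
  shows "sless x y"
  using assms unfolding sless_def by blast

lemma sless_pre_right:
  assumes wx: "wo x" and s: "sless x y" and p: "pre y z" shows "sless x z"
proof -
  obtain p f where pf: "p \<in> Field (fst x)" "oemb (fst x) (fst y) (under (fst x) p) f"
    "\<And>a. a \<in> underS (fst x) p \<Longrightarrow> snd y (f a) = snd x a" "snd x p < snd y (f p)"
    using slessE[OF s] by blast
  obtain g where g: "oemb (fst y) (fst z) (Field (fst y)) g" "\<forall>a\<in>Field (fst y). snd z (g a) = snd y a"
    using p unfolding pre_def by blast
  have sub: "f ` under (fst x) p \<subseteq> Field (fst y)" using oembD(3)[OF pf(2)] by blast
  have pu: "p \<in> under (fst x) p" using under_self[OF wx pf(1)] .
  show ?thesis
  proof (rule slessI[OF pf(1) oemb_comp[OF pf(2) g(1) sub]])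
    fix a assume a: "a \<in> underS (fst x) p"
    hence "a \<in> under (fst x) p" by (rule underS_under)
    thus "snd z ((g \<circ> f) a) = snd x a" using pf(3)[OF a] g(2) sub by auto
  next
    show "snd x p < snd z ((g \<circ> f) p)" using pf(4) g(2) sub pu by auto
  qed
qed

lemma pre_sless_left:
  assumes wx: "wo x" and wx': "wo x'" and pr: "pre x x'" and s: "sless x y" shows "sless x' y"
proof -
  obtain p f where pf: "p \<in> Field (fst x)" "oemb (fst x) (fst y) (under (fst x) p) f"
    "\<And>a. a \<in> underS (fst x) p \<Longrightarrow> snd y (f a) = snd x a" "snd x p < snd y (f p)"
    using slessE[OF s] by blast
  obtain g where g: "oemb (fst x) (fst x') (Field (fst x)) g" "\<forall>a\<in>Field (fst x). snd x' (g a) = snd x a"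
    using pr unfolding pre_def by blast
  let ?U = "under (fst x) p"
  have gU: "oemb (fst x) (fst x') ?U g"
    by (rule oemb_restr[OF g(1) under_sub]) (use under_closed[OF wx, of _ p] in metis)
  have gi: "oemb (fst x') (fst x) (g ` ?U) (inv_into ?U g)" by (rule oemb_inv[OF wx gU])
  have pu: "p \<in> ?U" using under_self[OF wx pf(1)] .
  have eqU: "g ` ?U = under (fst x') (g p)"
  proof
    show "g ` ?U \<subseteq> under (fst x') (g p)"
      using oembD(4)[OF gU _ pu] unfolding under_def by blast
    show "under (fst x') (g p) \<subseteq> g ` ?U"
      using oembD(5)[OF gU pu] unfolding under_def by blast
  qed
  have inj: "inj_on g ?U" unfolding inj_on_def using oemb_inj[OF wx gU] by blast
  have ig: "\<And>a. a \<in> ?U \<Longrightarrow> inv_into ?U g (g a) = a" using inj by (simp add: inv_into_f_f)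
  have sub: "inv_into ?U g ` g ` ?U \<subseteq> ?U" using ig by auto
  have h: "oemb (fst x') (fst y) (g ` ?U) (f \<circ> inv_into ?U g)" by (rule oemb_comp[OF gi pf(2) sub])
  have gp: "g p \<in> Field (fst x')" using oembD(3)[OF g(1) pf(1)] .
  show ?thesis
  proof (rule slessI[OF gp h[unfolded eqU]])
    fix a' assume a': "a' \<in> underS (fst x') (g p)"
    hence "a' \<in> g ` ?U" using eqU underS_under[OF a'] by simp
    then obtain a where a: "a \<in> ?U" "a' = g a" by blast
    have "a \<noteq> p" using a a' unfolding underS_def by auto
    hence "a \<in> underS (fst x) p" using a unfolding under_def underS_def by blast
    moreover have "a \<in> Field (fst x)" using under_sub[of "fst x" p] a(1) by blast
    ultimately show "snd y ((f \<circ> inv_into ?U g) a') = snd x' a'" using pf(3) g(2) a ig by auto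
  next
    show "snd x' (g p) < snd y ((f \<circ> inv_into ?U g) (g p))" using pf(4) g(2) pf(1) ig pu by auto
  qed
qed

lemma pre_sless_False:
  assumes wx: "wo x" and wy: "wo y" and pr: "pre x y" and s: "sless x y" shows False
proof -
  obtain p f where pf: "p \<in> Field (fst x)" "oemb (fst x) (fst y) (under (fst x) p) f"
    "\<And>a. a \<in> underS (fst x) p \<Longrightarrow> snd y (f a) = snd x a" "snd x p < snd y (f p)"
    using slessE[OF s] by blast
  obtain g where g: "oemb (fst x) (fst y) (Field (fst x)) g" "\<forall>a\<in>Field (fst x). snd y (g a) = snd x a"
    using pr unfolding pre_def by blast
  have gU: "oemb (fst x) (fst y) (under (fst x) p) g"
    by (rule oemb_restr[OF g(1) under_sub]) (use under_closed[OF wx, of _ p] in metis)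
  have pu: "p \<in> under (fst x) p" using under_self[OF wx pf(1)] .
  have "f p = g p" using oemb_unique[OF wx wy pf(2) gU pu] .
  thus False using pf(4) g(2) pf(1) by simp
qed

lemma sless_trans:
  assumes wx: "wo x" and wy: "wo y" and wz: "wo z" and s1: "sless x y" and s2: "sless y z"
  shows "sless x z"
proof -
  obtain p f where pf: "p \<in> Field (fst x)" "oemb (fst x) (fst y) (under (fst x) p) f"
    "\<And>a. a \<in> underS (fst x) p \<Longrightarrow> snd y (f a) = snd x a" "snd x p < snd y (f p)"
    using slessE[OF s1] by blast
  obtain q g where qg: "q \<in> Field (fst y)" "oemb (fst y) (fst z) (under (fst y) q) g"
    "\<And>a. a \<in> underS (fst y) q \<Longrightarrow> snd z (g a) = snd y a" "snd y q < snd z (g q)"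
    using slessE[OF s2] by blast
  have pu: "p \<in> under (fst x) p" using under_self[OF wx pf(1)] .
  have qu: "q \<in> under (fst y) q" using under_self[OF wy qg(1)] .
  have fp: "f p \<in> Field (fst y)" using oembD(3)[OF pf(2) pu] .
  consider "f p = q" | "(f p, q) \<in> fst y" "f p \<noteq> q" | "(q, f p) \<in> fst y" "q \<noteq> f p"
    using wo_total[OF wy fp qg(1)] by blast
  thus ?thesis
  proof cases
    case 1
    have sub: "f ` under (fst x) p \<subseteq> under (fst y) q"
      using oembD(4)[OF pf(2) _ pu] 1 unfolding under_def by blast
    show ?thesis
    proof (rule slessI[OF pf(1) oemb_comp[OF pf(2) qg(2) sub]])
      fix a assume a: "a \<in> underS (fst x) p"
      have au: "a \<in> under (fst x) p" using underS_under[OF a] .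
      have "f a \<noteq> q" using 1 oemb_inj[OF wx pf(2) au pu] a unfolding underS_def by auto
      hence "f a \<in> underS (fst y) q" using sub au unfolding underS_def under_def by blast
      thus "snd z ((g \<circ> f) a) = snd x a" using qg(3) pf(3)[OF a] by simp
    next
      show "snd x p < snd z ((g \<circ> f) p)" using pf(4) qg(4) 1 by simp
    qed
  next
    case 2
    have sub: "f ` under (fst x) p \<subseteq> under (fst y) q"
      using oembD(4)[OF pf(2) _ pu] 2 wo_trans[OF wy] unfolding under_def by blast
    have fpS: "f p \<in> underS (fst y) q" using 2 unfolding underS_def by blast
    show ?thesis
    proof (rule slessI[OF pf(1) oemb_comp[OF pf(2) qg(2) sub]])
      fix a assume a: "a \<in> underS (fst x) p"
      have au: "a \<in> under (fst x) p" using underS_under[OF a] .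
      have "(f a, f p) \<in> fst y" using oembD(4)[OF pf(2) au pu] au unfolding under_def by blast
      hence "f a \<noteq> q" using 2 wo_antisym[OF wy] by blast
      hence "f a \<in> underS (fst y) q" using sub au unfolding underS_def under_def by blast
      thus "snd z ((g \<circ> f) a) = snd x a" using qg(3) pf(3)[OF a] by simp
    next
      have "snd z (g (f p)) = snd y (f p)" using qg(3)[OF fpS] .
      thus "snd x p < snd z ((g \<circ> f) p)" using pf(4) by simp
    qed
  next
    case 3
    then obtain p' where p': "p' \<in> under (fst x) p" "q = f p'" using oembD(5)[OF pf(2) pu] by blast
    have pp: "(p', p) \<in> fst x" "p' \<noteq> p" using p' 3 unfolding under_def by blast+
    have p'F: "p' \<in> Field (fst x)" using under_sub[of "fst x" p] p'(1) by blast
    let ?U = "under (fst x) p'"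
    have Usub: "?U \<subseteq> under (fst x) p" using pp wo_trans[OF wx] unfolding under_def by blast
    have fU: "oemb (fst x) (fst y) ?U f"
      by (rule oemb_restr[OF pf(2) Usub]) (use under_closed[OF wx, of _ p'] in metis)
    have p'u: "p' \<in> ?U" using under_self[OF wx p'F] .
    have sub: "f ` ?U \<subseteq> under (fst y) q"
      using oembD(4)[OF fU _ p'u] p' unfolding under_def by blast
    show ?thesis
    proof (rule slessI[OF p'F oemb_comp[OF fU qg(2) sub]])
      fix a assume a: "a \<in> underS (fst x) p'"
      have au: "a \<in> ?U" using underS_under[OF a] .
      have "f a \<noteq> q" using p' oemb_inj[OF wx fU au p'u] a unfolding underS_def by auto
      hence "f a \<in> underS (fst y) q" using sub au unfolding underS_def under_def by blast
      moreover have "a \<in> underS (fst x) p"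
        using a pp wo_trans[OF wx] wo_antisym[OF wx] unfolding underS_def by blast
      ultimately show "snd z ((g \<circ> f) a) = snd x a" using qg(3) pf(3) by simp
    next
      have "p' \<in> underS (fst x) p" using pp unfolding underS_def by blast
      hence "snd y q = snd x p'" using pf(3) p' by simp
      thus "snd x p' < snd z ((g \<circ> f) p')" using qg(4) p' by simp
    qed
  qed
qed

lemma sless_irrefl: "wo x \<Longrightarrow> \<not> sless x x"
  using pre_sless_False[OF _ _ pre_refl] by metis

lemma sless_asym: "wo x \<Longrightarrow> wo y \<Longrightarrow> sless x y \<Longrightarrow> sless y x \<Longrightarrow> False"
  using sless_trans[of x y x] sless_irrefl[of x] by metis

lemma sless_pre_False: "wo x \<Longrightarrow> wo y \<Longrightarrow> sless x y \<Longrightarrow> pre y x \<Longrightarrow> False"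
  using sless_pre_right[of x y x] sless_irrefl[of x] by metis


lemma oemb_under_image:
  assumes f: "oemb r s A f" and p: "p \<in> A"
  shows "f ` under r p = under s (f p)"
proof
  show "f ` under r p \<subseteq> under s (f p)"
  proof
    fix c assume "c \<in> f ` under r p"
    then obtain a where a: "(a,p) \<in> r" "c = f a" unfolding under_def by blast
    have aA: "a \<in> A" using oembD(2)[OF f p a(1)] .
    show "c \<in> under s (f p)" using oembD(4)[OF f aA p] a unfolding under_def by simp
  qed
  show "under s (f p) \<subseteq> f ` under r p"
  proof
    fix c assume c: "c \<in> under s (f p)"
    then obtain a where a: "a \<in> A" "c = f a" using oembD(5)[OF f p] unfolding under_def by blast
    hence "(a,p) \<in> r" using oembD(4)[OF f a(1) p] c unfolding under_def by simp
    thus "c \<in> f ` under r p" using a unfolding under_def by blast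
  qed
qed

lemma oemb_underS:
  assumes wr: "Well_order r" and f: "oemb r s A f" and p: "p \<in> A" and a: "a \<in> underS r p"
  shows "f a \<in> underS s (f p)"
proof -
  have ap: "(a,p) \<in> r" "a \<noteq> p" using a unfolding underS_def by auto
  have aA: "a \<in> A" using oembD(2)[OF f p ap(1)] .
  have "(f a, f p) \<in> s" using oembD(4)[OF f aA p] ap by simp
  moreover have "f a \<noteq> f p" using oemb_inj[OF wr f aA p] ap by auto
  ultimately show ?thesis unfolding underS_def by blast
qed

lemma oemb_under_restr:
  assumes wr: "Well_order r" and f: "oemb r s A f" and p: "p \<in> A"
  shows "oemb r s (under r p) f"
proof (rule oemb_restr[OF f])
  show "under r p \<subseteq> A" using oembD(2)[OF f p] unfolding under_def by blast
  show "\<And>a b. a \<in> under r p \<Longrightarrow> (b, a) \<in> r \<Longrightarrow> b \<in> under r p"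
    using under_closed[OF wr] by metis
qed

lemma pre_sless_trans:
  assumes wx: "wo x" and wy: "wo y" and wz: "wo z" and pr: "pre x y" and s: "sless y z"
  shows "sless x z \<or> pre x z"
proof -
  obtain f where f: "oemb (fst x) (fst y) (Field (fst x)) f" "\<forall>a\<in>Field (fst x). snd y (f a) = snd x a"
    using pr unfolding pre_def by blast
  obtain q g where qg: "q \<in> Field (fst y)" "oemb (fst y) (fst z) (under (fst y) q) g"
    "\<And>a. a \<in> underS (fst y) q \<Longrightarrow> snd z (g a) = snd y a" "snd y q < snd z (g q)"
    using slessE[OF s] by blast
  show ?thesis
  proof (cases "q \<in> f ` Field (fst x)")
    case True
    then obtain p where p: "p \<in> Field (fst x)" "q = f p" by blast
    have fU: "oemb (fst x) (fst y) (under (fst x) p) f" using oemb_under_restr[OF wx f(1) p(1)] .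
    have sub: "f ` under (fst x) p \<subseteq> under (fst y) q"
      using oemb_under_image[OF f(1) p(1)] p(2) by simp
    have "sless x z"
    proof (rule slessI[OF p(1) oemb_comp[OF fU qg(2) sub]])
      fix a assume a: "a \<in> underS (fst x) p"
      have "f a \<in> underS (fst y) q" using oemb_underS[OF wx f(1) p(1) a] p(2) by simp
      moreover have "a \<in> Field (fst x)" using a unfolding underS_def Field_def by blast
      ultimately show "snd z ((g \<circ> f) a) = snd x a" using qg(3) f(2) by simp
    next
      show "snd x p < snd z ((g \<circ> f) p)" using qg(4) f(2) p by simp
    qed
    thus ?thesis by blast
  next
    case False
    have sub: "f ` Field (fst x) \<subseteq> under (fst y) q"
    proof
      fix c assume "c \<in> f ` Field (fst x)"
      then obtain a where a: "a \<in> Field (fst x)" "c = f a" by blast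
      have fa: "f a \<in> Field (fst y)" using oembD(3)[OF f(1) a(1)] .
      have "(q, f a) \<notin> fst y"
      proof
        assume "(q, f a) \<in> fst y"
        hence "q \<in> f ` Field (fst x)" using oembD(5)[OF f(1) a(1)] by blast
        thus False using False by blast
      qed
      hence "(f a, q) \<in> fst y" using wo_total[OF wy fa qg(1)] by blast
      thus "c \<in> under (fst y) q" using a unfolding under_def by simp
    qed
    have "pre x z"
      unfolding pre_def
    proof (intro exI conjI)
      show "oemb (fst x) (fst z) (Field (fst x)) (g \<circ> f)" by (rule oemb_comp[OF f(1) qg(2) sub])
      show "\<forall>a\<in>Field (fst x). snd z ((g \<circ> f) a) = snd x a"
      proof
        fix a assume a: "a \<in> Field (fst x)"
        have "f a \<in> under (fst y) q" using sub a by blast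
        moreover have "f a \<noteq> q" using False a by blast
        ultimately have "f a \<in> underS (fst y) q" unfolding under_def underS_def by blast
        thus "snd z ((g \<circ> f) a) = snd x a" using qg(3) f(2) a by simp
      qed
    qed
    thus ?thesis by blast
  qed
qed

lemma wle_trans:
  assumes wx: "wo x" and wy: "wo y" and wz: "wo z" and "wle x y" "wle y z" shows "wle x z"
  using assms(4,5) unfolding wle_def
  using pre_trans[of x y z] pre_sless_trans[OF wx wy wz, of ] sless_pre_right[OF wx, of y z]
    sless_trans[OF wx wy wz] by blast

lemma sless_wle_trans:
  assumes wx: "wo x" and wy: "wo y" and wz: "wo z" and "sless x y" "wle y z" shows "sless x z"
  using assms(4,5) unfolding wle_def
  using sless_pre_right[OF wx, of y z] sless_trans[OF wx wy wz] by blast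

lemma wle_antisym:
  assumes wx: "wo x" and wy: "wo y" and "wle x y" "wle y x" shows "word_iso x y"
  using assms(3,4) unfolding wle_def
  using pre_antisym[OF wx wy] sless_pre_False[OF wx wy] sless_pre_False[OF wy wx] sless_asym[OF wx wy]
  by blast

lemma wle_iso_right: "wo x \<Longrightarrow> wle x y \<Longrightarrow> word_iso y y' \<Longrightarrow> wle x y'"
  unfolding wle_def using pre_trans[of x y y'] iso_pre[of y y'] sless_pre_right[of x y y'] by blast

lemma wle_iso_left: "wo x \<Longrightarrow> wo x' \<Longrightarrow> word_iso x' x \<Longrightarrow> wle x y \<Longrightarrow> wle x' y"
  unfolding wle_def using pre_trans[of x' x y] iso_pre[of x' x] iso_pre[of x x'] iso_sym[of x' x]
    pre_sless_left[of x x' y] by blast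

lemma sless_iso_left: "wo x \<Longrightarrow> wo x' \<Longrightarrow> word_iso x' x \<Longrightarrow> sless x y \<Longrightarrow> sless x' y"
  using iso_pre[of x x'] iso_sym[of x' x] pre_sless_left[of x x' y] by blast

lemma sless_iso_right: "wo x \<Longrightarrow> sless x y \<Longrightarrow> word_iso y y' \<Longrightarrow> sless x y'"
  using iso_pre[of y y'] sless_pre_right[of x y y'] by blast

lemma pre_wle: "pre x y \<Longrightarrow> wle x y" unfolding wle_def by blast
lemma sless_wle: "sless x y \<Longrightarrow> wle x y" unfolding wle_def by blast
lemma iso_wle: "word_iso x y \<Longrightarrow> wle x y" using iso_pre pre_wle by blast

lemma tri_aux:
  assumes wx: "wo x" and wy: "wo y" and f: "oemb (fst x) (fst y) (Field (fst x)) f"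
  shows "pre x y \<or> sless x y \<or> sless y x"
proof (cases "\<forall>a\<in>Field (fst x). snd y (f a) = snd x a")
  case True thus ?thesis unfolding pre_def using f by blast
next
  case False
  let ?S = "{a\<in>Field (fst x). snd y (f a) \<noteq> snd x a}"
  have "?S \<subseteq> Field (fst x)" "?S \<noteq> {}" using False by auto
  then obtain m where m: "m \<in> ?S" "\<forall>s\<in>?S. (m,s) \<in> fst x" using wo_min[OF wx] by blast
  have mF: "m \<in> Field (fst x)" using m by blast
  let ?U = "under (fst x) m"
  have fU: "oemb (fst x) (fst y) ?U f" using oemb_under_restr[OF wx f mF] .
  have lab: "\<And>a. a \<in> underS (fst x) m \<Longrightarrow> snd y (f a) = snd x a"
  proof (rule ccontr)
    fix a assume a: "a \<in> underS (fst x) m" and ne: "snd y (f a) \<noteq> snd x a"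
    have "a \<in> Field (fst x)" using a unfolding underS_def Field_def by blast
    hence "a \<in> ?S" using ne by blast
    hence "(m,a) \<in> fst x" using m by blast
    thus False using a wo_antisym[OF wx] unfolding underS_def by blast
  qed
  have mu: "m \<in> ?U" using under_self[OF wx mF] .
  consider "snd x m < snd y (f m)" | "snd y (f m) < snd x m" using m by fastforce
  thus ?thesis
  proof cases
    case 1
    have "sless x y" by (rule slessI[OF mF fU lab 1])
    thus ?thesis by blast
  next
    case 2
    have gi: "oemb (fst y) (fst x) (f ` ?U) (inv_into ?U f)" by (rule oemb_inv[OF wx fU])
    have eqU: "f ` ?U = under (fst y) (f m)" using oemb_under_image[OF f mF] .
    have inj: "inj_on f ?U" unfolding inj_on_def using oemb_inj[OF wx fU] by blast
    have ig: "\<And>a. a \<in> ?U \<Longrightarrow> inv_into ?U f (f a) = a" using inj by (simp add: inv_into_f_f)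
    have fm: "f m \<in> Field (fst y)" using oembD(3)[OF f mF] .
    have "sless y x"
    proof (rule slessI[OF fm gi[unfolded eqU]])
      fix b assume b: "b \<in> underS (fst y) (f m)"
      hence "b \<in> f ` ?U" using eqU underS_under[OF b] by simp
      then obtain a where a: "a \<in> ?U" "b = f a" by blast
      have "a \<noteq> m" using a b unfolding underS_def by auto
      hence "a \<in> underS (fst x) m" using a unfolding under_def underS_def by blast
      thus "snd x (inv_into ?U f b) = snd y b" using lab a ig by simp
    next
      show "snd y (f m) < snd x (inv_into ?U f (f m))" using 2 ig mu by simp
    qed
    thus ?thesis by blast
  qed
qed

lemma trichotomy:
  assumes wx: "wo x" and wy: "wo y"
  shows "pre x y \<or> pre y x \<or> sless x y \<or> sless y x"
proof -
  from wellorders_totally_ordered[OF wx wy]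
  consider f where "embed (fst x) (fst y) f" | f where "embed (fst y) (fst x) f" by blast
  thus ?thesis
  proof cases
    case 1 thus ?thesis using tri_aux[OF wx wy embed_oemb[OF wx wy 1]] by blast
  next
    case 2 thus ?thesis using tri_aux[OF wy wx embed_oemb[OF wy wx 2]] by blast
  qed
qed

lemma wo_intro:
  assumes refl: "\<And>a. a \<in> Field r \<Longrightarrow> (a,a) \<in> r"
  and trans: "\<And>a b c. (a,b) \<in> r \<Longrightarrow> (b,c) \<in> r \<Longrightarrow> (a,c) \<in> r"
  and antisym: "\<And>a b. (a,b) \<in> r \<Longrightarrow> (b,a) \<in> r \<Longrightarrow> a = b"
  and total: "\<And>a b. a \<in> Field r \<Longrightarrow> b \<in> Field r \<Longrightarrow> (a,b) \<in> r \<or> (b,a) \<in> r"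
  and least: "\<And>S. S \<subseteq> Field r \<Longrightarrow> S \<noteq> {} \<Longrightarrow> \<exists>m\<in>S. \<forall>s\<in>S. (m,s) \<in> r"
  shows "Well_order r"
proof -
  have "wf (r - Id)"
    unfolding wf_eq_minimal
  proof (intro allI impI)
    fix Q :: "'a set" and x assume x: "x \<in> Q"
    show "\<exists>z\<in>Q. \<forall>y. (y, z) \<in> r - Id \<longrightarrow> y \<notin> Q"
    proof (cases "Q \<inter> Field r = {}")
      case True
      have "\<forall>y. (y, x) \<in> r - Id \<longrightarrow> y \<notin> Q"
      proof (intro allI impI)
        fix y assume "(y,x) \<in> r - Id"
        hence "y \<in> Field r" by (auto simp: Field_def)
        thus "y \<notin> Q" using True by blast
      qed
      thus ?thesis using x by blast
    next
      case False
      then obtain m where m: "m \<in> Q \<inter> Field r" "\<forall>s\<in>Q \<inter> Field r. (m,s) \<in> r"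
        using least[of "Q \<inter> Field r"] by blast
      have "\<forall>y. (y, m) \<in> r - Id \<longrightarrow> y \<notin> Q"
      proof (intro allI impI)
        fix y assume y: "(y,m) \<in> r - Id"
        show "y \<notin> Q"
        proof
          assume "y \<in> Q"
          moreover have "y \<in> Field r" using y by (auto simp: Field_def)
          ultimately have "(m,y) \<in> r" using m by blast
          hence "y = m" using antisym y by blast
          thus False using y by blast
        qed
      qed
      thus ?thesis using m by blast
    qed
  qed
  moreover have "r \<subseteq> Field r \<times> Field r" by (auto simp: Field_def)
  ultimately show ?thesis
    unfolding well_order_on_def linear_order_on_def partial_order_on_def preorder_on_def
      refl_on_def trans_def antisym_def total_on_def
    using refl trans antisym total by blast
qed

lemma wconc_rel[simp]:
  "(Inl a, Inl b) \<in> fst (wconc x y) \<longleftrightarrow> (a,b) \<in> fst x"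
  "(Inr a', Inr b') \<in> fst (wconc x y) \<longleftrightarrow> (a',b') \<in> fst y"
  "(Inl a, Inr b') \<in> fst (wconc x y) \<longleftrightarrow> a \<in> Field (fst x) \<and> b' \<in> Field (fst y)"
  "(Inr a', Inl b) \<notin> fst (wconc x y)"
  unfolding wconc_def by auto

lemma wconc_lab[simp]:
  "snd (wconc x y) (Inl a) = snd x a" "snd (wconc x y) (Inr b) = snd y b"
  unfolding wconc_def by auto

lemma Field_wconc: "Field (fst (wconc x y)) = Inl ` Field (fst x) \<union> Inr ` Field (fst y)"
proof
  show "Field (fst (wconc x y)) \<subseteq> Inl ` Field (fst x) \<union> Inr ` Field (fst y)"
  proof
    fix c assume "c \<in> Field (fst (wconc x y))"
    then obtain d where "(c,d) \<in> fst (wconc x y) \<or> (d,c) \<in> fst (wconc x y)" unfolding Field_def by blast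
    thus "c \<in> Inl ` Field (fst x) \<union> Inr ` Field (fst y)"
      by (cases c; cases d) (auto intro: wo_FieldI1 wo_FieldI2)
  qed
  show "Inl ` Field (fst x) \<union> Inr ` Field (fst y) \<subseteq> Field (fst (wconc x y))"
  proof
    fix c assume "c \<in> Inl ` Field (fst x) \<union> Inr ` Field (fst y)"
    then consider a where "c = Inl a" "a \<in> Field (fst x)" | b where "c = Inr b" "b \<in> Field (fst y)" by blast
    thus "c \<in> Field (fst (wconc x y))"
    proof cases
      case 1
      then obtain d where "(a,d) \<in> fst x \<or> (d,a) \<in> fst x" unfolding Field_def by blast
      hence "(Inl a, Inl d) \<in> fst (wconc x y) \<or> (Inl d, Inl a) \<in> fst (wconc x y)" by simp
      thus ?thesis using 1 unfolding Field_def by blast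
    next
      case 2
      then obtain d where "(b,d) \<in> fst y \<or> (d,b) \<in> fst y" unfolding Field_def by blast
      hence "(Inr b, Inr d) \<in> fst (wconc x y) \<or> (Inr d, Inr b) \<in> fst (wconc x y)" by simp
      thus ?thesis using 2 unfolding Field_def by blast
    qed
  qed
qed

lemma Field_wconc_simps[simp]:
  "Inl a \<in> Field (fst (wconc x y)) \<longleftrightarrow> a \<in> Field (fst x)"
  "Inr b \<in> Field (fst (wconc x y)) \<longleftrightarrow> b \<in> Field (fst y)"
  unfolding Field_wconc by auto

lemma wo_wconc:
  assumes wx: "wo x" and wy: "wo y"
  shows "wo (wconc x y)"
proof (rule wo_intro)
  fix a assume "a \<in> Field (fst (wconc x y))"
  thus "(a,a) \<in> fst (wconc x y)" by (cases a) (auto simp: wo_refl[OF wx] wo_refl[OF wy])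
next
  fix a b c assume "(a,b) \<in> fst (wconc x y)" "(b,c) \<in> fst (wconc x y)"
  thus "(a,c) \<in> fst (wconc x y)"
    by (cases a; cases b; cases c) (auto intro: wo_trans[OF wx] wo_trans[OF wy] wo_FieldI1 wo_FieldI2)
next
  fix a b assume "(a,b) \<in> fst (wconc x y)" "(b,a) \<in> fst (wconc x y)"
  thus "a = b" by (cases a; cases b) (auto intro: wo_antisym[OF wx] wo_antisym[OF wy])
next
  fix a b assume "a \<in> Field (fst (wconc x y))" "b \<in> Field (fst (wconc x y))"
  thus "(a,b) \<in> fst (wconc x y) \<or> (b,a) \<in> fst (wconc x y)"
    by (cases a; cases b) (auto dest: wo_total[OF wx] wo_total[OF wy])
next
  fix S assume S: "S \<subseteq> Field (fst (wconc x y))" "S \<noteq> {}"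
  show "\<exists>m\<in>S. \<forall>s\<in>S. (m,s) \<in> fst (wconc x y)"
  proof (cases "\<exists>a. Inl a \<in> S")
    case True
    let ?A = "{a. Inl a \<in> S}"
    have "?A \<subseteq> Field (fst x)" "?A \<noteq> {}" using S True by auto
    then obtain m where m: "m \<in> ?A" "\<forall>s\<in>?A. (m,s) \<in> fst x" using wo_min[OF wx] by blast
    have "\<forall>s\<in>S. (Inl m, s) \<in> fst (wconc x y)"
    proof
      fix s assume s: "s \<in> S"
      show "(Inl m, s) \<in> fst (wconc x y)"
      proof (cases s)
        case (Inl a) thus ?thesis using s m by auto
      next
        case (Inr b) thus ?thesis using s m S by auto
      qed
    qed
    thus ?thesis using m by blast
  next
    case False
    let ?B = "{b. Inr b \<in> S}"
    have allr: "\<forall>s\<in>S. \<exists>b. s = Inr b" using False by (metis sumE)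
    hence "?B \<subseteq> Field (fst y)" "?B \<noteq> {}" using S by auto
    then obtain m where m: "m \<in> ?B" "\<forall>s\<in>?B. (m,s) \<in> fst y" using wo_min[OF wy] by blast
    have "\<forall>s\<in>S. (Inr m, s) \<in> fst (wconc x y)" using allr m by auto
    thus ?thesis using m by blast
  qed
qed

lemma wpow_rel[simp]:
  "((o1,p1),(o2,p2)) \<in> fst (wpow x k) \<longleftrightarrow> o1 \<in> Field k \<and> o2 \<in> Field k \<and> p1 \<in> Field (fst x) \<and> p2 \<in> Field (fst x) \<and>
         (((o1, o2) \<in> k \<and> o1 \<noteq> o2) \<or> (o1 = o2 \<and> (p1, p2) \<in> fst x))"
  unfolding wpow_def by auto

lemma wpow_lab[simp]: "snd (wpow x k) (o1,p1) = snd x p1"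
  unfolding wpow_def by auto

lemma Field_wpow:
  assumes wx: "wo x"
  shows "Field (fst (wpow x k)) = Field k \<times> Field (fst x)"
proof
  show "Field (fst (wpow x k)) \<subseteq> Field k \<times> Field (fst x)"
  proof
    fix c assume "c \<in> Field (fst (wpow x k))"
    then obtain d where "(c,d) \<in> fst (wpow x k) \<or> (d,c) \<in> fst (wpow x k)" unfolding Field_def by blast
    thus "c \<in> Field k \<times> Field (fst x)" by (cases c; cases d) auto
  qed
  show "Field k \<times> Field (fst x) \<subseteq> Field (fst (wpow x k))"
  proof
    fix c assume "c \<in> Field k \<times> Field (fst x)"
    then obtain o1 p1 where c: "c = (o1,p1)" "o1 \<in> Field k" "p1 \<in> Field (fst x)" by blast
    hence "(c,c) \<in> fst (wpow x k)" using wo_refl[OF wx] by simp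
    thus "c \<in> Field (fst (wpow x k))" unfolding Field_def by blast
  qed
qed

lemma Field_wpow_simp[simp]:
  "wo x \<Longrightarrow> (o1,p1) \<in> Field (fst (wpow x k)) \<longleftrightarrow> o1 \<in> Field k \<and> p1 \<in> Field (fst x)"
  using Field_wpow by blast

lemma wo_wpow:
  assumes wx: "wo x" and wk: "Well_order k"
  shows "wo (wpow x k)"
proof (rule wo_intro)
  fix a assume "a \<in> Field (fst (wpow x k))"
  thus "(a,a) \<in> fst (wpow x k)" using wx by (cases a) (auto simp: wo_refl[OF wx])
next
  fix a b c assume ab: "(a,b) \<in> fst (wpow x k)" and bc: "(b,c) \<in> fst (wpow x k)"
  obtain a1 a2 b1 b2 c1 c2 where abc: "a = (a1,a2)" "b = (b1,b2)" "c = (c1,c2)" by (cases a; cases b; cases c)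
  show "(a,c) \<in> fst (wpow x k)"
    using ab bc unfolding abc wpow_rel
    using wo_trans[OF wk, of a1 b1 c1] wo_antisym[OF wk, of a1 b1] wo_trans[OF wx, of a2 b2 c2] by blast
next
  fix a b assume ab: "(a,b) \<in> fst (wpow x k)" and ba: "(b,a) \<in> fst (wpow x k)"
  obtain a1 a2 b1 b2 where abc: "a = (a1,a2)" "b = (b1,b2)" by (cases a; cases b)
  show "a = b"
    using ab ba unfolding abc wpow_rel
    using wo_antisym[OF wk, of a1 b1] wo_antisym[OF wx, of a2 b2] by blast
next
  fix a b assume a: "a \<in> Field (fst (wpow x k))" and b: "b \<in> Field (fst (wpow x k))"
  obtain a1 a2 b1 b2 where abc: "a = (a1,a2)" "b = (b1,b2)" by (cases a; cases b)
  have F: "a1 \<in> Field k" "a2 \<in> Field (fst x)" "b1 \<in> Field k" "b2 \<in> Field (fst x)"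
    using a b unfolding abc Field_wpow[OF wx] by auto
  show "(a,b) \<in> fst (wpow x k) \<or> (b,a) \<in> fst (wpow x k)"
    unfolding abc wpow_rel using F wo_total[OF wk F(1) F(3)] wo_total[OF wx F(2) F(4)] by blast
next
  fix S assume S: "S \<subseteq> Field (fst (wpow x k))" "S \<noteq> {}"
  let ?O = "fst ` S"
  have "?O \<subseteq> Field k" "?O \<noteq> {}" using S unfolding Field_wpow[OF wx] by auto
  then obtain m where m: "m \<in> ?O" "\<forall>s\<in>?O. (m,s) \<in> k" using wo_min[OF wk] by blast
  let ?P = "{p. (m,p) \<in> S}"
  have "?P \<subseteq> Field (fst x)" "?P \<noteq> {}" using S m(1) unfolding Field_wpow[OF wx] by force+
  then obtain n where n: "n \<in> ?P" "\<forall>s\<in>?P. (n,s) \<in> fst x" using wo_min[OF wx] by blast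
  have "\<forall>s\<in>S. ((m,n), s) \<in> fst (wpow x k)"
  proof
    fix s assume s: "s \<in> S"
    obtain s1 s2 where s12: "s = (s1,s2)" by (cases s)
    have F: "s1 \<in> Field k" "s2 \<in> Field (fst x)" "m \<in> Field k" "n \<in> Field (fst x)"
      using s S n m unfolding s12 Field_wpow[OF wx] by force+
    have "(m, s1) \<in> k" using m s s12 by force
    thus "((m,n), s) \<in> fst (wpow x k)" using n s s12 F by auto
  qed
  thus "\<exists>m\<in>S. \<forall>s\<in>S. (m,s) \<in> fst (wpow x k)" using n by blast
qed

lemma wrestr_rel[simp]: "(a,b) \<in> fst (wrestr x S) \<longleftrightarrow> (a,b) \<in> fst x \<and> a \<in> S \<and> b \<in> S"
  unfolding wrestr_def by auto

lemma wrestr_lab[simp]: "snd (wrestr x S) = snd x"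
  unfolding wrestr_def by auto

lemma Field_wrestr:
  assumes wx: "wo x" shows "Field (fst (wrestr x S)) = S \<inter> Field (fst x)"
proof
  show "Field (fst (wrestr x S)) \<subseteq> S \<inter> Field (fst x)"
    unfolding Field_def by auto
  show "S \<inter> Field (fst x) \<subseteq> Field (fst (wrestr x S))"
  proof
    fix a assume "a \<in> S \<inter> Field (fst x)"
    hence "(a,a) \<in> fst (wrestr x S)" using wo_refl[OF wx] by auto
    thus "a \<in> Field (fst (wrestr x S))" unfolding Field_def by blast
  qed
qed

lemma wo_wrestr: "wo x \<Longrightarrow> wo (wrestr x S)"
  unfolding wrestr_def using Well_order_Restr by auto

lemma wrestr_Field: "wrestr x (Field (fst x)) = x"
  unfolding wrestr_def using Restr_Field[of "fst x"] by (metis prod.collapse)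

lemma wrestr_wrestr: "wrestr (wrestr x S) T = wrestr x (S \<inter> T)"
  unfolding wrestr_def by auto

lemma countable_wconc: "countable (Field (fst x)) \<Longrightarrow> countable (Field (fst y)) \<Longrightarrow> countable (Field (fst (wconc x y)))"
  unfolding Field_wconc by auto

lemma countable_wpow: "wo x \<Longrightarrow> countable (Field k) \<Longrightarrow> countable (Field (fst x)) \<Longrightarrow> countable (Field (fst (wpow x k)))"
  unfolding Field_wpow by auto

lemma countable_wrestr: "wo x \<Longrightarrow> countable (Field (fst x)) \<Longrightarrow> countable (Field (fst (wrestr x S)))"
  unfolding Field_wrestr by (auto intro: countable_subset)

lemma word_isoI2:
  assumes inj: "inj_on h (Field (fst x))" and img: "h ` Field (fst x) = Field (fst y)"
    and ord: "\<And>p q. p \<in> Field (fst x) \<Longrightarrow> q \<in> Field (fst x) \<Longrightarrow> (p, q) \<in> fst x \<longleftrightarrow> (h p, h q) \<in> fst y"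
    and lab: "\<And>p. p \<in> Field (fst x) \<Longrightarrow> snd y (h p) = snd x p"
  shows "word_iso x y"
proof (rule word_isoI[of h])
  show "bij_betw h (Field (fst x)) (Field (fst y))" unfolding bij_betw_def using inj img by blast
  show "\<And>p q. p \<in> Field (fst x) \<Longrightarrow> q \<in> Field (fst x) \<Longrightarrow> (p, q) \<in> fst x \<longleftrightarrow> (h p, h q) \<in> fst y"
    by (rule ord)
  show "\<And>p. p \<in> Field (fst x) \<Longrightarrow> snd y (h p) = snd x p" by (rule lab)
qed

lemma Field_Restr_wo:
  assumes wk: "Well_order k" and I: "I \<subseteq> Field k"
  shows "Field (Restr k I) = I"
proof
  show "Field (Restr k I) \<subseteq> I" by (rule Field_Restr_subset)
  show "I \<subseteq> Field (Restr k I)"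
  proof
    fix a assume a: "a \<in> I"
    have "(a,a) \<in> k" using wo_refl[OF wk] I a by blast
    hence "(a,a) \<in> Restr k I" using a by blast
    thus "a \<in> Field (Restr k I)" unfolding Field_def by blast
  qed
qed

lemma iso_pieces:
  assumes wx: "wo x" and disj: "S \<inter> T = {}"
    and ord: "\<And>s t. s \<in> S \<Longrightarrow> t \<in> T \<Longrightarrow> s \<in> Field (fst x) \<Longrightarrow> t \<in> Field (fst x) \<Longrightarrow> (s,t) \<in> fst x"
  shows "word_iso (wconc (wrestr x S) (wrestr x T)) (wrestr x (S \<union> T))"
proof (rule word_isoI2[of "case_sum id id"])
  have F: "Field (fst (wconc (wrestr x S) (wrestr x T))) = Inl ` (S \<inter> Field (fst x)) \<union> Inr ` (T \<inter> Field (fst x))"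
    unfolding Field_wconc Field_wrestr[OF wx] ..
  show "inj_on (case_sum id id) (Field (fst (wconc (wrestr x S) (wrestr x T))))"
    unfolding F inj_on_def using disj by auto
  show "case_sum id id ` Field (fst (wconc (wrestr x S) (wrestr x T))) = Field (fst (wrestr x (S \<union> T)))"
    unfolding F Field_wrestr[OF wx] by force
  fix p q assume p: "p \<in> Field (fst (wconc (wrestr x S) (wrestr x T)))" and q: "q \<in> Field (fst (wconc (wrestr x S) (wrestr x T)))"
  show "(p, q) \<in> fst (wconc (wrestr x S) (wrestr x T)) \<longleftrightarrow> (case_sum id id p, case_sum id id q) \<in> fst (wrestr x (S \<union> T))"
  proof (cases p; cases q)
    fix a b assume ab: "p = Inl a" "q = Inr b"
    have "a \<in> S" "a \<in> Field (fst x)" "b \<in> T" "b \<in> Field (fst x)" using p q ab unfolding F by auto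
    thus ?thesis using ab ord Field_wrestr[OF wx] by auto
  next
    fix a b assume ab: "p = Inr a" "q = Inl b"
    have "a \<in> T" "a \<in> Field (fst x)" "b \<in> S" "b \<in> Field (fst x)" using p q ab unfolding F by auto
    moreover have "a \<noteq> b" using disj \<open>a \<in> T\<close> \<open>b \<in> S\<close> by blast
    ultimately show ?thesis using ab ord[of b a] wo_antisym[OF wx, of a b] by auto
  next
    fix a b assume ab: "p = Inl a" "q = Inl b"
    have "a \<in> S" "b \<in> S" using p q ab unfolding F by auto
    thus ?thesis using ab by auto
  next
    fix a b assume ab: "p = Inr a" "q = Inr b"
    have "a \<in> T" "b \<in> T" using p q ab unfolding F by auto
    thus ?thesis using ab by auto
  qed
next
  fix p assume "p \<in> Field (fst (wconc (wrestr x S) (wrestr x T)))"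
  thus "snd (wrestr x (S \<union> T)) (case_sum id id p) = snd (wconc (wrestr x S) (wrestr x T)) p"
    by (cases p) auto
qed

lemma iso_Inl_piece:
  assumes wx: "wo x" and wy: "wo y"
  shows "word_iso (wrestr x B) (wrestr (wconc x y) (Inl ` B))"
proof (rule word_isoI2[of Inl])
  show "inj_on Inl (Field (fst (wrestr x B)))" by auto
  show "Inl ` Field (fst (wrestr x B)) = Field (fst (wrestr (wconc x y) (Inl ` B)))"
    unfolding Field_wrestr[OF wx] Field_wrestr[OF wo_wconc[OF wx wy]] Field_wconc by auto
qed (auto simp: Field_wrestr[OF wx])

lemma iso_Inr_piece:
  assumes wx: "wo x" and wy: "wo y"
  shows "word_iso (wrestr y B) (wrestr (wconc x y) (Inr ` B))"
proof (rule word_isoI2[of Inr])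
  show "inj_on Inr (Field (fst (wrestr y B)))" by auto
  show "Inr ` Field (fst (wrestr y B)) = Field (fst (wrestr (wconc x y) (Inr ` B)))"
    unfolding Field_wrestr[OF wy] Field_wrestr[OF wo_wconc[OF wx wy]] Field_wconc by auto
qed (auto simp: Field_wrestr[OF wy])

lemma iso_block:
  assumes wu: "wo u" and wk: "Well_order k" and o: "ob \<in> Field k"
  shows "word_iso (wrestr u B) (wrestr (wpow u k) ({ob} \<times> B))"
proof (rule word_isoI2[of "\<lambda>p. (ob,p)"])
  show "inj_on (Pair ob) (Field (fst (wrestr u B)))" by (auto simp: inj_on_def)
  show "Pair ob ` Field (fst (wrestr u B)) = Field (fst (wrestr (wpow u k) ({ob} \<times> B)))"
    unfolding Field_wrestr[OF wo_wpow[OF wu wk]] Field_wrestr[OF wu] Field_wpow[OF wu] using o by auto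
qed (auto simp: Field_wrestr[OF wu] o)

lemma wrestr_wpow:
  assumes wu: "wo u" and wk: "Well_order k" and I: "I \<subseteq> Field k"
  shows "wrestr (wpow u k) (I \<times> Field (fst u)) = wpow u (Restr k I)"
proof (rule prod_eqI)
  show "snd (wrestr (wpow u k) (I \<times> Field (fst u))) = snd (wpow u (Restr k I))"
    unfolding wpow_def by simp
  have FI: "Field (Restr k I) = I" using Field_Restr_wo[OF wk I] .
  show "fst (wrestr (wpow u k) (I \<times> Field (fst u))) = fst (wpow u (Restr k I))"
  proof (rule set_eqI)
    fix c :: "('c \<times> 'a) \<times> ('c \<times> 'a)"
    obtain o1 p1 o2 p2 where c: "c = ((o1,p1),(o2,p2))" by (cases c) auto
    show "c \<in> fst (wrestr (wpow u k) (I \<times> Field (fst u))) \<longleftrightarrow> c \<in> fst (wpow u (Restr k I))"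
      unfolding c wrestr_rel wpow_rel FI using I by auto
  qed
qed

lemma iso_restr_oemb:
  assumes wx: "wo x" and wy: "wo y" and g: "oemb (fst x) (fst y) A g"
    and lab: "\<And>a. a \<in> A \<Longrightarrow> snd y (g a) = snd x a" and B: "B \<subseteq> A"
  shows "word_iso (wrestr x B) (wrestr y (g ` B))"
proof (rule word_isoI2[of g])
  have BF: "B \<subseteq> Field (fst x)" using B oembD(1)[OF g] by blast
  have gBF: "g ` B \<subseteq> Field (fst y)" using B oembD(3)[OF g] by blast
  have FB: "Field (fst (wrestr x B)) = B" using BF Field_wrestr[OF wx] by blast
  have FgB: "Field (fst (wrestr y (g ` B))) = g ` B" using gBF Field_wrestr[OF wy] by blast
  show "inj_on g (Field (fst (wrestr x B)))" unfolding FB inj_on_def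
    using oemb_inj[OF wx g] B by blast
  show "g ` Field (fst (wrestr x B)) = Field (fst (wrestr y (g ` B)))" unfolding FB FgB ..
  fix p q assume p: "p \<in> Field (fst (wrestr x B))" and q: "q \<in> Field (fst (wrestr x B))"
  have pB: "p \<in> B" and qB: "q \<in> B" using p q FB by auto
  hence pA: "p \<in> A" and qA: "q \<in> A" using B by auto
  show "(p, q) \<in> fst (wrestr x B) \<longleftrightarrow> (g p, g q) \<in> fst (wrestr y (g ` B))"
    using oembD(4)[OF g pA qA] pB qB by auto
next
  fix p assume "p \<in> Field (fst (wrestr x B))"
  hence "p \<in> A" using B Field_wrestr[OF wx] by auto
  thus "snd (wrestr y (g ` B)) (g p) = snd (wrestr x B) p" using lab by simp
qed

lemma iso_oemb:
  assumes "word_iso x y"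
  obtains h where "oemb (fst x) (fst y) (Field (fst x)) h" "h ` Field (fst x) = Field (fst y)"
    "\<And>a. a \<in> Field (fst x) \<Longrightarrow> snd y (h a) = snd x a"
proof -
  obtain h where h1: "bij_betw h (Field (fst x)) (Field (fst y))"
    and h2: "\<forall>p\<in>Field (fst x). \<forall>q\<in>Field (fst x). (p, q) \<in> fst x \<longleftrightarrow> (h p, h q) \<in> fst y"
    and h3: "\<forall>p\<in>Field (fst x). snd y (h p) = snd x p" using assms unfolding word_iso_def by blast
  have "oemb (fst x) (fst y) (Field (fst x)) h"
  proof (rule oemb_full_intro)
    show "\<And>a. a \<in> Field (fst x) \<Longrightarrow> h a \<in> Field (fst y)" using h1 bij_betwE by blast
    show "\<And>a b. a \<in> Field (fst x) \<Longrightarrow> b \<in> Field (fst x) \<Longrightarrow> ((a, b) \<in> fst x) = ((h a, h b) \<in> fst y)"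
      using h2 by blast
    fix a c assume a: "a \<in> Field (fst x)" and c: "(c, h a) \<in> fst y"
    have "c \<in> Field (fst y)" using Field_closed[OF _ c] h1 a bij_betwE by blast
    thus "c \<in> h ` Field (fst x)" using h1 unfolding bij_betw_def by blast
  qed
  moreover have "h ` Field (fst x) = Field (fst y)" using h1 unfolding bij_betw_def by blast
  ultimately show ?thesis using that h3 by blast
qed

lemma oemb_above_image:
  assumes wx: "wo x" and g: "oemb (fst x) (fst y) (Field (fst x)) g" and sur: "g ` Field (fst x) = Field (fst y)"
    and p: "p \<in> Field (fst x)"
  shows "g ` above (fst x) p = above (fst y) (g p)"
proof
  show "g ` above (fst x) p \<subseteq> above (fst y) (g p)"
  proof
    fix c assume "c \<in> g ` above (fst x) p"
    then obtain a where a: "(p,a) \<in> fst x" "c = g a" unfolding above_def by blast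
    have "a \<in> Field (fst x)" using a(1) by (rule wo_FieldI2)
    thus "c \<in> above (fst y) (g p)" using oembD(4)[OF g p] a unfolding above_def by simp
  qed
  show "above (fst y) (g p) \<subseteq> g ` above (fst x) p"
  proof
    fix c assume c: "c \<in> above (fst y) (g p)"
    hence "(g p, c) \<in> fst y" unfolding above_def by simp
    hence "c \<in> Field (fst y)" by (rule wo_FieldI2)
    then obtain a where a: "a \<in> Field (fst x)" "c = g a" using sur by blast
    hence "(p,a) \<in> fst x" using oembD(4)[OF g p a(1)] c unfolding above_def by simp
    thus "c \<in> g ` above (fst x) p" using a unfolding above_def by blast
  qed
qed

lemma iso_sfx:
  assumes wx: "wo x" and wy: "wo y" and iso: "word_iso x y" and p: "p \<in> Field (fst x)"
  obtains p' where "p' \<in> Field (fst y)" "word_iso (wrestr x (above (fst x) p)) (wrestr y (above (fst y) p'))"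
    "(\<exists>q. (q,p) \<in> fst x \<and> q \<noteq> p) \<longleftrightarrow> (\<exists>q. (q,p') \<in> fst y \<and> q \<noteq> p')"
proof -
  obtain h where h: "oemb (fst x) (fst y) (Field (fst x)) h" "h ` Field (fst x) = Field (fst y)"
    "\<And>a. a \<in> Field (fst x) \<Longrightarrow> snd y (h a) = snd x a" using iso_oemb[OF iso] by blast
  have sub: "above (fst x) p \<subseteq> Field (fst x)" unfolding above_def by (auto intro: wo_FieldI2)
  have i: "word_iso (wrestr x (above (fst x) p)) (wrestr y (h ` above (fst x) p))"
    by (rule iso_restr_oemb[OF wx wy h(1) h(3) sub])
  have hp: "h p \<in> Field (fst y)" using oembD(3)[OF h(1) p] .
  have e: "(\<exists>q. (q,p) \<in> fst x \<and> q \<noteq> p) \<longleftrightarrow> (\<exists>q. (q,h p) \<in> fst y \<and> q \<noteq> h p)"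
  proof
    assume "\<exists>q. (q,p) \<in> fst x \<and> q \<noteq> p"
    then obtain q where q: "(q,p) \<in> fst x" "q \<noteq> p" by blast
    have qF: "q \<in> Field (fst x)" using q(1) by (rule wo_FieldI1)
    have "(h q, h p) \<in> fst y" using oembD(4)[OF h(1) qF p] q by simp
    moreover have "h q \<noteq> h p" using oemb_inj[OF wx h(1) qF p] q by blast
    ultimately show "\<exists>q. (q,h p) \<in> fst y \<and> q \<noteq> h p" by blast
  next
    assume "\<exists>q. (q,h p) \<in> fst y \<and> q \<noteq> h p"
    then obtain q where q: "(q,h p) \<in> fst y" "q \<noteq> h p" by blast
    then obtain a where a: "a \<in> Field (fst x)" "q = h a" using oembD(5)[OF h(1) p] by blast
    have "(a,p) \<in> fst x" using oembD(4)[OF h(1) a(1) p] q a by simp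
    moreover have "a \<noteq> p" using q a by blast
    ultimately show "\<exists>q. (q,p) \<in> fst x \<and> q \<noteq> p" by blast
  qed
  show ?thesis using that[OF hp i[unfolded oemb_above_image[OF wx h(1) h(2) p]] e] .
qed

lemma iso_wconc_cong:
  assumes wx: "wo x" and wy: "wo y" and wx': "wo x'" and wy': "wo y'"
    and ix: "word_iso x x'" and iy: "word_iso y y'"
  shows "word_iso (wconc x y) (wconc x' y')"
proof -
  obtain f where f: "oemb (fst x) (fst x') (Field (fst x)) f" "f ` Field (fst x) = Field (fst x')"
    "\<And>a. a \<in> Field (fst x) \<Longrightarrow> snd x' (f a) = snd x a" using iso_oemb[OF ix] by blast
  obtain g where g: "oemb (fst y) (fst y') (Field (fst y)) g" "g ` Field (fst y) = Field (fst y')"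
    "\<And>a. a \<in> Field (fst y) \<Longrightarrow> snd y' (g a) = snd y a" using iso_oemb[OF iy] by blast
  show ?thesis
  proof (rule word_isoI2[of "map_sum f g"])
    show "inj_on (map_sum f g) (Field (fst (wconc x y)))"
      unfolding Field_wconc inj_on_def using oemb_inj[OF wx f(1)] oemb_inj[OF wy g(1)] by auto
    show "map_sum f g ` Field (fst (wconc x y)) = Field (fst (wconc x' y'))"
      unfolding Field_wconc f(2)[symmetric] g(2)[symmetric] by force
    fix p q assume p: "p \<in> Field (fst (wconc x y))" and q: "q \<in> Field (fst (wconc x y))"
    show "(p, q) \<in> fst (wconc x y) \<longleftrightarrow> (map_sum f g p, map_sum f g q) \<in> fst (wconc x' y')"
    proof (cases p; cases q)
      fix a b assume ab: "p = Inl a" "q = Inl b"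
      thus ?thesis using p q oembD(4)[OF f(1), of a b] by auto
    next
      fix a b assume ab: "p = Inl a" "q = Inr b"
      thus ?thesis using p q oembD(3)[OF f(1), of a] oembD(3)[OF g(1), of b] by auto
    next
      fix a b assume ab: "p = Inr a" "q = Inr b"
      thus ?thesis using p q oembD(4)[OF g(1), of a b] by auto
    qed auto
  next
    fix p assume "p \<in> Field (fst (wconc x y))"
    thus "snd (wconc x' y') (map_sum f g p) = snd (wconc x y) p" using f(3) g(3) by (cases p) auto
  qed
qed

lemma iso_wconc_assoc:
  assumes wx: "wo x" and wy: "wo y" and wz: "wo z"
  shows "word_iso (wconc (wconc x y) z) (wconc x (wconc y z))"
proof (rule word_isoI2[of "case_sum (case_sum Inl (Inr \<circ> Inl)) (Inr \<circ> Inr)"])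
  show "inj_on (case_sum (case_sum Inl (Inr \<circ> Inl)) (Inr \<circ> Inr)) (Field (fst (wconc (wconc x y) z)))"
    unfolding Field_wconc inj_on_def by auto
  show "case_sum (case_sum Inl (Inr \<circ> Inl)) (Inr \<circ> Inr) ` Field (fst (wconc (wconc x y) z)) = Field (fst (wconc x (wconc y z)))"
    unfolding Field_wconc by force
  fix p q assume p: "p \<in> Field (fst (wconc (wconc x y) z))" and q: "q \<in> Field (fst (wconc (wconc x y) z))"
  show "(p, q) \<in> fst (wconc (wconc x y) z) \<longleftrightarrow>
    (case_sum (case_sum Inl (Inr \<circ> Inl)) (Inr \<circ> Inr) p, case_sum (case_sum Inl (Inr \<circ> Inl)) (Inr \<circ> Inr) q) \<in> fst (wconc x (wconc y z))"
    using p q unfolding Field_wconc by (cases p; cases q) (auto split: sum.splits)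
next
  fix p assume "p \<in> Field (fst (wconc (wconc x y) z))"
  thus "snd (wconc x (wconc y z)) (case_sum (case_sum Inl (Inr \<circ> Inl)) (Inr \<circ> Inr) p) = snd (wconc (wconc x y) z) p"
    by (cases p) (auto split: sum.splits)
qed

definition riso :: "'a rel \<Rightarrow> 'b rel \<Rightarrow> ('a \<Rightarrow> 'b) \<Rightarrow> bool" where
  "riso k k' e \<longleftrightarrow> bij_betw e (Field k) (Field k') \<and> (\<forall>a\<in>Field k. \<forall>b\<in>Field k. (a,b) \<in> k \<longleftrightarrow> (e a, e b) \<in> k')"

lemma iso_wpow_cong:
  assumes wx: "wo x" and wx': "wo x'" and ix: "word_iso x x'" and e: "riso k k' e"
  shows "word_iso (wpow x k) (wpow x' k')"
proof -
  obtain f where f: "oemb (fst x) (fst x') (Field (fst x)) f" "f ` Field (fst x) = Field (fst x')"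
    "\<And>a. a \<in> Field (fst x) \<Longrightarrow> snd x' (f a) = snd x a" using iso_oemb[OF ix] by blast
  have eb: "bij_betw e (Field k) (Field k')" and eo: "\<And>a b. a \<in> Field k \<Longrightarrow> b \<in> Field k \<Longrightarrow> (a,b) \<in> k \<longleftrightarrow> (e a, e b) \<in> k'"
    using e unfolding riso_def by blast+
  have einj: "inj_on e (Field k)" and eimg: "e ` Field k = Field k'" using eb unfolding bij_betw_def by blast+
  have finj: "inj_on f (Field (fst x))" unfolding inj_on_def using oemb_inj[OF wx f(1)] by blast
  show ?thesis
  proof (rule word_isoI2[of "map_prod e f"])
    show "inj_on (map_prod e f) (Field (fst (wpow x k)))"
      unfolding Field_wpow[OF wx] using einj finj by (rule map_prod_inj_on)
    show "map_prod e f ` Field (fst (wpow x k)) = Field (fst (wpow x' k'))"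
      unfolding Field_wpow[OF wx] Field_wpow[OF wx'] eimg[symmetric] f(2)[symmetric] by (rule map_prod_surj_on; rule refl)
    fix p q assume p: "p \<in> Field (fst (wpow x k))" and q: "q \<in> Field (fst (wpow x k))"
    obtain o1 p1 o2 p2 where pq: "p = (o1,p1)" "q = (o2,p2)" by (cases p; cases q) auto
    have F: "o1 \<in> Field k" "p1 \<in> Field (fst x)" "o2 \<in> Field k" "p2 \<in> Field (fst x)"
      using p q pq Field_wpow[OF wx] by auto
    have F': "e o1 \<in> Field k'" "f p1 \<in> Field (fst x')" "e o2 \<in> Field k'" "f p2 \<in> Field (fst x')"
      using F eimg f(2) by auto
    have "e o1 = e o2 \<longleftrightarrow> o1 = o2" using einj F unfolding inj_on_def by blast
    thus "(p, q) \<in> fst (wpow x k) \<longleftrightarrow> (map_prod e f p, map_prod e f q) \<in> fst (wpow x' k')"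
      unfolding pq using F F' eo[OF F(1) F(3)] oembD(4)[OF f(1) F(2) F(4)] by auto
  next
    fix p assume "p \<in> Field (fst (wpow x k))"
    thus "snd (wpow x' k') (map_prod e f p) = snd (wpow x k) p" using f(3) Field_wpow[OF wx] by (cases p) auto
  qed
qed

lemma riso_refl: "riso k k id" unfolding riso_def by auto

lemma riso_Restr_oemb:
  assumes wk: "Well_order k" and e: "oemb k k' A e"
  shows "riso (Restr k A) (Restr k' (e ` A)) e"
proof -
  have AF: "A \<subseteq> Field k" using oembD(1)[OF e] .
  have eAF: "e ` A \<subseteq> Field k'" using oembD(3)[OF e] by blast
  have F1: "Field (Restr k A) = A" using Field_Restr_wo[OF wk AF] .
  have F2: "Field (Restr k' (e ` A)) = e ` A"
  proof
    show "Field (Restr k' (e ` A)) \<subseteq> e ` A" by (rule Field_Restr_subset)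
    show "e ` A \<subseteq> Field (Restr k' (e ` A))"
    proof
      fix c assume "c \<in> e ` A"
      then obtain a where a: "a \<in> A" "c = e a" by blast
      have "(a,a) \<in> k" using wo_refl[OF wk] AF a by blast
      hence "(c,c) \<in> k'" using oembD(4)[OF e a(1) a(1)] a by simp
      thus "c \<in> Field (Restr k' (e ` A))" using a unfolding Field_def by blast
    qed
  qed
  show ?thesis unfolding riso_def F1 F2
  proof (intro conjI ballI)
    show "bij_betw e A (e ` A)" unfolding bij_betw_def inj_on_def using oemb_inj[OF wk e] by blast
    fix a b assume a: "a \<in> A" and b: "b \<in> A"
    have "e a \<in> e ` A" "e b \<in> e ` A" using a b by blast+
    thus "(a,b) \<in> Restr k A \<longleftrightarrow> (e a, e b) \<in> Restr k' (e ` A)" using oembD(4)[OF e a b] a b by simp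
  qed
qed

lemma oemb_map_sum:
  assumes wz: "wo z" and f: "oemb (fst a) (fst b) A f"
  shows "oemb (fst (wconc z a)) (fst (wconc z b)) (Inl ` Field (fst z) \<union> Inr ` A) (map_sum id f)"
  unfolding oemb_def
proof (intro conjI ballI allI impI)
  have AF: "A \<subseteq> Field (fst a)" using oembD(1)[OF f] .
  show "Inl ` Field (fst z) \<union> Inr ` A \<subseteq> Field (fst (wconc z a))" unfolding Field_wconc using AF by blast
  show "map_sum id f ` (Inl ` Field (fst z) \<union> Inr ` A) \<subseteq> Field (fst (wconc z b))"
    unfolding Field_wconc using oembD(3)[OF f] by auto
  fix c assume c: "c \<in> Inl ` Field (fst z) \<union> Inr ` A"
  { fix d assume d: "(d, c) \<in> fst (wconc z a)"
    show "d \<in> Inl ` Field (fst z) \<union> Inr ` A"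
    proof (cases c; cases d)
      fix c1 d1 assume "c = Inl c1" "d = Inl d1" thus ?thesis using d by (auto intro: wo_FieldI1)
    next
      fix c1 d1 assume "c = Inr c1" "d = Inl d1" thus ?thesis using d by auto
    next
      fix c1 d1 assume cd: "c = Inr c1" "d = Inr d1"
      hence "c1 \<in> A" "(d1,c1) \<in> fst a" using c d by auto
      thus ?thesis using cd oembD(2)[OF f] by blast
    next
      fix c1 d1 assume "c = Inl c1" "d = Inr d1" thus ?thesis using d by auto
    qed }
  { fix d assume d: "d \<in> Inl ` Field (fst z) \<union> Inr ` A"
    show "(c, d) \<in> fst (wconc z a) \<longleftrightarrow> (map_sum id f c, map_sum id f d) \<in> fst (wconc z b)"
    proof (cases c; cases d)
      fix c1 d1 assume cd: "c = Inr c1" "d = Inr d1"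
      hence "c1 \<in> A" "d1 \<in> A" using c d by auto
      thus ?thesis using cd oembD(4)[OF f] by simp
    next
      fix c1 d1 assume cd: "c = Inl c1" "d = Inr d1"
      hence "d1 \<in> A" using d by auto
      thus ?thesis using cd oembD(3)[OF f] AF by auto
    qed (use c d in auto) }
  { fix e assume e: "(e, map_sum id f c) \<in> fst (wconc z b)"
    show "e \<in> map_sum id f ` (Inl ` Field (fst z) \<union> Inr ` A)"
    proof (cases c; cases e)
      fix c1 e1 assume ce: "c = Inl c1" "e = Inl e1"
      hence "e1 \<in> Field (fst z)" using e by (auto intro: wo_FieldI1)
      thus ?thesis using ce by force
    next
      fix c1 e1 assume ce: "c = Inr c1" "e = Inl e1"
      hence "e1 \<in> Field (fst z)" using e by auto
      thus ?thesis using ce by force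
    next
      fix c1 e1 assume ce: "c = Inr c1" "e = Inr e1"
      hence c1: "c1 \<in> A" "(e1, f c1) \<in> fst b" using c e by auto
      then obtain a1 where "a1 \<in> A" "e1 = f a1" using oembD(5)[OF f] by blast
      thus ?thesis using ce by force
    next
      fix c1 e1 assume ce: "c = Inl c1" "e = Inr e1"
      thus ?thesis using e by auto
    qed }
qed

lemma under_wconc_Inr:
  assumes "p \<in> Field (fst y)"
  shows "under (fst (wconc x y)) (Inr p) = Inl ` Field (fst x) \<union> Inr ` under (fst y) p"
proof
  show "under (fst (wconc x y)) (Inr p) \<subseteq> Inl ` Field (fst x) \<union> Inr ` under (fst y) p"
  proof
    fix c assume "c \<in> under (fst (wconc x y)) (Inr p)"
    thus "c \<in> Inl ` Field (fst x) \<union> Inr ` under (fst y) p" unfolding under_def by (cases c) auto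
  qed
  show "Inl ` Field (fst x) \<union> Inr ` under (fst y) p \<subseteq> under (fst (wconc x y)) (Inr p)"
    using assms unfolding under_def by auto
qed

lemma underS_wconc_Inr:
  assumes "p \<in> Field (fst y)"
  shows "underS (fst (wconc x y)) (Inr p) = Inl ` Field (fst x) \<union> Inr ` underS (fst y) p"
proof
  show "underS (fst (wconc x y)) (Inr p) \<subseteq> Inl ` Field (fst x) \<union> Inr ` underS (fst y) p"
  proof
    fix c assume "c \<in> underS (fst (wconc x y)) (Inr p)"
    thus "c \<in> Inl ` Field (fst x) \<union> Inr ` underS (fst y) p" unfolding underS_def by (cases c) auto
  qed
  show "Inl ` Field (fst x) \<union> Inr ` underS (fst y) p \<subseteq> underS (fst (wconc x y)) (Inr p)"
    using assms unfolding underS_def by auto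
qed

lemma wle_prepend:
  assumes wz: "wo z" and wa: "wo a" and wb: "wo b" and le: "wle a b"
  shows "wle (wconc z a) (wconc z b)"
  using le unfolding wle_def
proof
  assume "pre a b"
  then obtain f where f: "oemb (fst a) (fst b) (Field (fst a)) f" "\<forall>p\<in>Field (fst a). snd b (f p) = snd a p"
    unfolding pre_def by blast
  have "oemb (fst (wconc z a)) (fst (wconc z b)) (Field (fst (wconc z a))) (map_sum id f)"
    using oemb_map_sum[OF wz f(1)] unfolding Field_wconc .
  moreover have "\<forall>p\<in>Field (fst (wconc z a)). snd (wconc z b) (map_sum id f p) = snd (wconc z a) p"
    unfolding Field_wconc using f(2) by auto
  ultimately have "pre (wconc z a) (wconc z b)" unfolding pre_def by blast
  thus "pre (wconc z a) (wconc z b) \<or> sless (wconc z a) (wconc z b)" by blast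
next
  assume "sless a b"
  then obtain p f where pf: "p \<in> Field (fst a)" "oemb (fst a) (fst b) (under (fst a) p) f"
    "\<And>q. q \<in> underS (fst a) p \<Longrightarrow> snd b (f q) = snd a q" "snd a p < snd b (f p)"
    using slessE by blast
  have "sless (wconc z a) (wconc z b)"
  proof (rule slessI[where p="Inr p" and f="map_sum id f"])
    show "Inr p \<in> Field (fst (wconc z a))" using pf(1) by simp
    show "oemb (fst (wconc z a)) (fst (wconc z b)) (under (fst (wconc z a)) (Inr p)) (map_sum id f)"
      unfolding under_wconc_Inr[OF pf(1)] by (rule oemb_map_sum[OF wz pf(2)])
    fix q assume "q \<in> underS (fst (wconc z a)) (Inr p)"
    thus "snd (wconc z b) (map_sum id f q) = snd (wconc z a) q"
      unfolding underS_wconc_Inr[OF pf(1)] using pf(3) by auto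
  next
    show "snd (wconc z a) (Inr p) < snd (wconc z b) (map_sum id f (Inr p))" using pf(4) by simp
  qed
  thus "pre (wconc z a) (wconc z b) \<or> sless (wconc z a) (wconc z b)" by blast
qed

lemma pre_wconc:
  assumes wx: "wo x" and wy: "wo y"
  shows "pre x (wconc x y)"
  unfolding pre_def
proof (intro exI conjI)
  show "oemb (fst x) (fst (wconc x y)) (Field (fst x)) Inl"
  proof (rule oemb_full_intro)
    fix c d assume c: "c \<in> Field (fst x)" and d: "(d, Inl c) \<in> fst (wconc x y)"
    show "d \<in> Inl ` Field (fst x)" using d by (cases d) (auto intro: wo_FieldI1)
  qed auto
qed auto

lemma pre_first_block:
  assumes wu: "wo u" and wk: "Well_order k" and m: "m \<in> Field k" and mmin: "\<And>o'. o' \<in> Field k \<Longrightarrow> (m,o') \<in> k"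
  shows "pre u (wpow u k)"
  unfolding pre_def
proof (intro exI conjI)
  show "oemb (fst u) (fst (wpow u k)) (Field (fst u)) (Pair m)"
  proof (rule oemb_full_intro)
    show "\<And>a. a \<in> Field (fst u) \<Longrightarrow> (m, a) \<in> Field (fst (wpow u k))" using m wu by simp
    show "\<And>a b. a \<in> Field (fst u) \<Longrightarrow> b \<in> Field (fst u) \<Longrightarrow> ((a, b) \<in> fst u) = (((m, a), m, b) \<in> fst (wpow u k))"
      using m by simp
    fix c d assume c: "c \<in> Field (fst u)" and d: "(d, (m,c)) \<in> fst (wpow u k)"
    obtain d1 d2 where dd: "d = (d1,d2)" by (cases d)
    have "d1 \<in> Field k" "d2 \<in> Field (fst u)" "(d1, m) \<in> k \<and> d1 \<noteq> m \<or> d1 = m" using d dd by auto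
    hence "d1 = m" using mmin wo_antisym[OF wk] by blast
    thus "d \<in> Pair m ` Field (fst u)" using dd \<open>d2 \<in> Field (fst u)\<close> by blast
  qed
qed auto


section \<open>Subsets of well-orders embed as initial segments\<close>

lemma sub_oemb:
  assumes wk: "Well_order k" and D: "D \<subseteq> Field k"
  obtains e where "oemb (Restr k D) k D e"
proof -
  have wD: "Well_order (Restr k D)" using Well_order_Restr[OF wk] .
  have FD: "Field (Restr k D) = D" using Field_Restr_wo[OF wk D] .
  from wellorders_totally_ordered[OF wD wk]
  consider e where "embed (Restr k D) k e" | e where "embed k (Restr k D) e" by blast
  thus ?thesis
  proof cases
    case 1
    show ?thesis using that embed_oemb[OF wD wk 1] unfolding FD by blast
  next
    case 2
    have e: "oemb k (Restr k D) (Field k) e" using embed_oemb[OF wk wD 2] .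
    have eF: "\<And>a. a \<in> Field k \<Longrightarrow> e a \<in> D" using oembD(3)[OF e] FD by blast
    have ge: "\<And>a. a \<in> Field k \<Longrightarrow> (a, e a) \<in> k"
    proof (rule wo_strict_mono_ge[OF wk])
      show "\<And>a. a \<in> Field k \<Longrightarrow> e a \<in> Field k" using eF D by blast
      fix a b assume ab: "(a,b) \<in> k" "a \<noteq> b"
      have aF: "a \<in> Field k" and bF: "b \<in> Field k" using ab(1) by (auto intro: wo_FieldI1 wo_FieldI2)
      have "(e a, e b) \<in> Restr k D" using oembD(4)[OF e aF bF] ab by simp
      moreover have "e a \<noteq> e b" using oemb_inj[OF wk e aF bF] ab by blast
      ultimately show "(e a, e b) \<in> k \<and> e a \<noteq> e b" by blast
    qed
    have img: "e ` Field k = D"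
    proof
      show "e ` Field k \<subseteq> D" using eF by blast
      show "D \<subseteq> e ` Field k"
      proof
        fix d assume d: "d \<in> D"
        have dF: "d \<in> Field k" using d D by blast
        have "(d, e d) \<in> Restr k D" using ge[OF dF] d eF[OF dF] by blast
        thus "d \<in> e ` Field k" using oembD(5)[OF e dF] by blast
      qed
    qed
    have "oemb (Restr k D) k (e ` Field k) (inv_into (Field k) e)" by (rule oemb_inv[OF wk e])
    thus ?thesis using that unfolding img by blast
  qed
qed

lemma oemb_image_closed:
  assumes e: "oemb r s A e" and c: "c \<in> e ` A" and d: "(d, c) \<in> s"
  shows "d \<in> e ` A"
  using c d oembD(5)[OF e] by blast

section \<open>Comparing powers with a common tail\<close>

lemma wpow_split:
  assumes wu: "wo u" and wk: "Well_order k" and I: "I \<subseteq> Field k"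
    and Icl: "\<And>a b. a \<in> I \<Longrightarrow> (b,a) \<in> k \<Longrightarrow> b \<in> I"
  shows "word_iso (wconc (wpow u (Restr k I)) (wpow u (Restr k (Field k - I)))) (wpow u k)"
proof -
  let ?P = "wpow u k"
  have wP: "wo ?P" using wo_wpow[OF wu wk] .
  have e1: "wrestr ?P (I \<times> Field (fst u)) = wpow u (Restr k I)" using wrestr_wpow[OF wu wk I] .
  have e2: "wrestr ?P ((Field k - I) \<times> Field (fst u)) = wpow u (Restr k (Field k - I))"
    using wrestr_wpow[OF wu wk, of "Field k - I"] by blast
  have un: "(I \<times> Field (fst u)) \<union> ((Field k - I) \<times> Field (fst u)) = Field (fst ?P)"
    unfolding Field_wpow[OF wu] using I by blast
  have "word_iso (wconc (wrestr ?P (I \<times> Field (fst u))) (wrestr ?P ((Field k - I) \<times> Field (fst u))))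
     (wrestr ?P ((I \<times> Field (fst u)) \<union> ((Field k - I) \<times> Field (fst u))))"
  proof (rule iso_pieces[OF wP])
    show "I \<times> Field (fst u) \<inter> (Field k - I) \<times> Field (fst u) = {}" by blast
    fix s t assume s: "s \<in> I \<times> Field (fst u)" and t: "t \<in> (Field k - I) \<times> Field (fst u)"
    obtain s1 s2 t1 t2 where st: "s = (s1,s2)" "t = (t1,t2)" by (cases s; cases t)
    have F: "s1 \<in> I" "s2 \<in> Field (fst u)" "t1 \<in> Field k" "t1 \<notin> I" "t2 \<in> Field (fst u)"
      using s t st by auto
    have s1F: "s1 \<in> Field k" using F I by blast
    have "(t1, s1) \<notin> k" using Icl F by blast
    hence "(s1, t1) \<in> k" using wo_total[OF wk s1F F(3)] by blast
    moreover have "s1 \<noteq> t1" using F by blast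
    ultimately show "(s,t) \<in> fst ?P" using st F s1F by simp
  qed
  thus ?thesis unfolding e1 e2 un wrestr_Field .
qed

lemma wle_pow_tail:
  fixes k :: "'k rel"
  assumes wu: "wo u" and wt: "wo t" and wk: "Well_order k" and D: "D \<subseteq> Field k"
    and up: "\<And>d e. d \<in> D \<Longrightarrow> (d,e) \<in> k \<Longrightarrow> e \<in> D"
    and R: "\<And>r :: 'k rel. Well_order r \<Longrightarrow> Field r \<noteq> {} \<Longrightarrow> wle (wconc (wpow u r) t) t"
  shows "wle (wconc (wpow u k) t) (wconc (wpow u (Restr k D)) t)"
proof -
  obtain e where e: "oemb (Restr k D) k D e" using sub_oemb[OF wk D] by blast
  let ?I = "e ` D"
  have wD: "Well_order (Restr k D)" using Well_order_Restr[OF wk] .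
  have IF: "?I \<subseteq> Field k" using oembD(3)[OF e] by blast
  have Icl: "\<And>a b. a \<in> ?I \<Longrightarrow> (b,a) \<in> k \<Longrightarrow> b \<in> ?I" using oemb_image_closed[OF e] by blast
  have ri: "riso (Restr (Restr k D) D) (Restr k ?I) e" by (rule riso_Restr_oemb[OF wD e])
  have RR: "Restr (Restr k D) D = Restr k D" by blast
  have iDI: "word_iso (wpow u (Restr k D)) (wpow u (Restr k ?I))"
    using iso_wpow_cong[OF wu wu iso_refl ri[unfolded RR]] .
  have wpD: "wo (wpow u (Restr k D))" using wo_wpow[OF wu wD] .
  have wpI: "wo (wpow u (Restr k ?I))" using wo_wpow[OF wu Well_order_Restr[OF wk]] .
  have wpk: "wo (wpow u k)" using wo_wpow[OF wu wk] .
  show ?thesis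
  proof (cases "Field k - ?I = {}")
    case True
    hence "?I = Field k" using IF by blast
    hence "Restr k ?I = k" using Restr_Field by metis
    hence "word_iso (wpow u (Restr k D)) (wpow u k)" using iDI by simp
    hence "word_iso (wconc (wpow u (Restr k D)) t) (wconc (wpow u k) t)"
      using iso_wconc_cong[OF wpD wt wpk wt _ iso_refl] by blast
    thus ?thesis using iso_wle iso_sym by blast
  next
    case False
    let ?F = "Field k - ?I"
    let ?A = "wpow u (Restr k ?I)" and ?B = "wpow u (Restr k ?F)"
    have wF: "Well_order (Restr k ?F)" using Well_order_Restr[OF wk] .
    have wA: "wo ?A" using wpI .
    have wB: "wo ?B" using wo_wpow[OF wu wF] .
    have FF: "Field (Restr k ?F) = ?F" using Field_Restr_wo[OF wk] by blast
    have sp: "word_iso (wconc ?A ?B) (wpow u k)" using wpow_split[OF wu wk IF Icl] .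
    have i1: "word_iso (wconc (wpow u k) t) (wconc ?A (wconc ?B t))"
    proof -
      have "word_iso (wconc (wpow u k) t) (wconc (wconc ?A ?B) t)"
        using iso_wconc_cong[OF wpk wt wo_wconc[OF wA wB] wt iso_sym[OF sp] iso_refl] .
      moreover have "word_iso (wconc (wconc ?A ?B) t) (wconc ?A (wconc ?B t))"
        using iso_wconc_assoc[OF wA wB wt] .
      ultimately show ?thesis using iso_trans by blast
    qed
    have l1: "wle (wconc ?B t) t" using R[OF wF] FF False by simp
    have l2: "wle (wconc ?A (wconc ?B t)) (wconc ?A t)" using wle_prepend[OF wA wo_wconc[OF wB wt] wt l1] .
    have i2: "word_iso (wconc ?A t) (wconc (wpow u (Restr k D)) t)"
      using iso_wconc_cong[OF wA wt wpD wt iso_sym[OF iDI] iso_refl] .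
    have l3: "wle (wconc ?A (wconc ?B t)) (wconc (wpow u (Restr k D)) t)"
      using wle_iso_right[OF wo_wconc[OF wA wo_wconc[OF wB wt]] l2 i2] .
    show ?thesis using wle_iso_left[OF wo_wconc[OF wA wo_wconc[OF wB wt]] wo_wconc[OF wpk wt] i1 l3] .
  qed
qed

definition primelike :: "('i,'a::linorder) wrd \<Rightarrow> bool" where
  "primelike x \<longleftrightarrow> (\<forall>p\<in>Field (fst x). (\<exists>q. (q,p) \<in> fst x \<and> q \<noteq> p) \<longrightarrow> wle x (wrestr x (above (fst x) p)))"

lemma above_Field: "above r p \<subseteq> Field r"
  unfolding above_def Field_def by blast

lemma Field_sfx: "wo x \<Longrightarrow> Field (fst (wrestr x (above (fst x) p))) = above (fst x) p"
  using Field_wrestr[of x "above (fst x) p"] above_Field[of "fst x" p] by blast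

lemma sfx_min:
  assumes wx: "wo x" and p: "p \<in> Field (fst x)" and nm: "\<not> (\<exists>q. (q,p) \<in> fst x \<and> q \<noteq> p)"
  shows "wrestr x (above (fst x) p) = x"
proof -
  have "above (fst x) p = Field (fst x)"
  proof
    show "above (fst x) p \<subseteq> Field (fst x)" by (rule above_Field)
    show "Field (fst x) \<subseteq> above (fst x) p"
    proof
      fix b assume b: "b \<in> Field (fst x)"
      show "b \<in> above (fst x) p"
      proof (cases "(p,b) \<in> fst x")
        case True thus ?thesis unfolding above_def by blast
      next
        case False
        hence "(b,p) \<in> fst x" using wo_total[OF wx p b] by blast
        hence "b = p" using nm by blast
        thus ?thesis using wo_refl[OF wx p] unfolding above_def by blast
      qed
    qed
  qed
  thus ?thesis using wrestr_Field by metis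
qed

lemma oemb_underS_image:
  assumes wx: "Well_order r" and g: "oemb r s A g" and p: "p \<in> A"
  shows "g ` underS r p = underS s (g p)"
proof
  show "g ` underS r p \<subseteq> underS s (g p)"
  proof
    fix c assume "c \<in> g ` underS r p"
    then obtain a where a: "a \<in> underS r p" "c = g a" by blast
    show "c \<in> underS s (g p)" using oemb_underS[OF wx g p a(1)] a(2) by simp
  qed
  show "underS s (g p) \<subseteq> g ` underS r p"
  proof
    fix c assume c: "c \<in> underS s (g p)"
    hence "c \<in> under s (g p)" by (rule underS_under)
    hence "c \<in> g ` under r p" using oemb_under_image[OF g p] by simp
    then obtain a where a: "a \<in> under r p" "c = g a" by blast
    have "a \<noteq> p" using a c unfolding underS_def by auto
    thus "c \<in> g ` underS r p" using a unfolding under_def underS_def by blast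
  qed
qed

lemma sfx_split:
  assumes wx: "wo x" and p: "p \<in> Field (fst x)"
  shows "word_iso (wconc (wrestr x (underS (fst x) p)) (wrestr x (above (fst x) p))) x"
proof -
  have "word_iso (wconc (wrestr x (underS (fst x) p)) (wrestr x (above (fst x) p)))
          (wrestr x (underS (fst x) p \<union> above (fst x) p))"
  proof (rule iso_pieces[OF wx])
    show "underS (fst x) p \<inter> above (fst x) p = {}"
      unfolding underS_def above_def using wo_antisym[OF wx] by blast
    fix s t assume "s \<in> underS (fst x) p" "t \<in> above (fst x) p"
    thus "(s,t) \<in> fst x" unfolding underS_def above_def using wo_trans[OF wx] by blast
  qed
  moreover have "underS (fst x) p \<union> above (fst x) p = Field (fst x)"
  proof
    show "underS (fst x) p \<union> above (fst x) p \<subseteq> Field (fst x)"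
      unfolding underS_def above_def Field_def by blast
    show "Field (fst x) \<subseteq> underS (fst x) p \<union> above (fst x) p"
    proof
      fix b assume b: "b \<in> Field (fst x)"
      show "b \<in> underS (fst x) p \<union> above (fst x) p"
        using wo_total[OF wx p b] wo_refl[OF wx p] unfolding underS_def above_def by blast
    qed
  qed
  ultimately show ?thesis using wrestr_Field by metis
qed

lemma underS_wpow_min:
  assumes wu: "wo u" and wk: "Well_order k" and o: "ob \<in> Field k" and m: "m \<in> Field (fst u)"
    and mmin: "\<And>c. c \<in> Field (fst u) \<Longrightarrow> (m,c) \<in> fst u"
  shows "underS (fst (wpow u k)) (ob,m) = underS k ob \<times> Field (fst u)"
proof
  show "underS (fst (wpow u k)) (ob,m) \<subseteq> underS k ob \<times> Field (fst u)"
  proof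
    fix c assume c: "c \<in> underS (fst (wpow u k)) (ob,m)"
    obtain c1 c2 where cc: "c = (c1,c2)" by (cases c)
    have h: "c1 \<in> Field k" "c2 \<in> Field (fst u)" "((c1,ob) \<in> k \<and> c1 \<noteq> ob) \<or> (c1 = ob \<and> (c2,m) \<in> fst u)" "c \<noteq> (ob,m)"
      using c cc unfolding underS_def by auto
    have "c1 \<noteq> ob"
    proof
      assume "c1 = ob"
      hence "(c2,m) \<in> fst u" using h by blast
      hence "c2 = m" using mmin[OF h(2)] wo_antisym[OF wu] by blast
      thus False using h \<open>c1 = ob\<close> cc by blast
    qed
    thus "c \<in> underS k ob \<times> Field (fst u)" using h cc unfolding underS_def by blast
  qed
  show "underS k ob \<times> Field (fst u) \<subseteq> underS (fst (wpow u k)) (ob,m)"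
  proof
    fix c assume c: "c \<in> underS k ob \<times> Field (fst u)"
    obtain c1 c2 where cc: "c = (c1,c2)" by (cases c)
    have "c1 \<in> Field k" using c cc unfolding underS_def by (auto intro: wo_FieldI1)
    thus "c \<in> underS (fst (wpow u k)) (ob,m)" using c cc o m unfolding underS_def by auto
  qed
qed

lemma same_block:
  assumes wu: "wo u" and wk: "Well_order k" and m: "m \<in> Field (fst u)"
    and mmin: "\<And>c. c \<in> Field (fst u) \<Longrightarrow> (m,c) \<in> fst u"
    and h1: "((ob,m), c) \<in> fst (wpow u k)" and h2: "(c, (ob,q)) \<in> fst (wpow u k)"
  shows "fst c = ob \<and> (snd c, q) \<in> fst u \<and> snd c \<in> Field (fst u)"
proof -
  obtain c1 c2 where cc: "c = (c1,c2)" by (cases c)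
  have a: "((ob,c1) \<in> k \<and> ob \<noteq> c1) \<or> ob = c1" and b: "((c1,ob) \<in> k \<and> c1 \<noteq> ob) \<or> (c1 = ob \<and> (c2,q) \<in> fst u)"
    and c2: "c2 \<in> Field (fst u)"
    using h1 h2 cc by auto
  have "c1 = ob" using a b wo_antisym[OF wk] by blast
  thus ?thesis using b cc c2 by auto
qed


section \<open>Decomposition of v with respect to powers of u\<close>

lemma img_underS_min:
  assumes wy: "wo y" and g: "oemb (fst x) (fst y) (Field (fst x)) g"
    and c: "c \<in> Field (fst y) - g ` Field (fst x)" and cmin: "\<And>d. d \<in> Field (fst y) - g ` Field (fst x) \<Longrightarrow> (c,d) \<in> fst y"
  shows "g ` Field (fst x) = underS (fst y) c"
proof
  show "g ` Field (fst x) \<subseteq> underS (fst y) c"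
  proof
    fix a assume a: "a \<in> g ` Field (fst x)"
    have aF: "a \<in> Field (fst y)" using a oembD(3)[OF g] by blast
    have "(c,a) \<notin> fst y" using oemb_image_closed[OF g a] c by blast
    hence "(a,c) \<in> fst y" using wo_total[OF wy aF] c by blast
    moreover have "a \<noteq> c" using a c by blast
    ultimately show "a \<in> underS (fst y) c" unfolding underS_def by blast
  qed
  show "underS (fst y) c \<subseteq> g ` Field (fst x)"
  proof
    fix d assume d: "d \<in> underS (fst y) c"
    have dF: "d \<in> Field (fst y)" using d unfolding underS_def by (auto intro: wo_FieldI1)
    show "d \<in> g ` Field (fst x)"
    proof (rule ccontr)
      assume "d \<notin> g ` Field (fst x)"
      hence "(c,d) \<in> fst y" using cmin dF by blast
      thus False using d wo_antisym[OF wy] unfolding underS_def by blast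
    qed
  qed
qed

locale decomp =
  fixes u :: "('i,'a::linorder) wrd" and v :: "('j,'a) wrd" and m :: 'i
  assumes wu: "wo u" and wv: "wo v" and m: "m \<in> Field (fst u)"
    and mmin: "\<And>c. c \<in> Field (fst u) \<Longrightarrow> (m,c) \<in> fst u"
    and puv: "pre u v" and niso: "\<not> word_iso u v" and plv: "primelike v"
    and notpow: "\<And>b :: 'j rel. Well_order b \<Longrightarrow> Field b \<subseteq> Field (fst v) \<Longrightarrow> word_iso v (wpow u b) \<Longrightarrow> False"
begin

abbreviation "k \<equiv> fst v"
abbreviation "U \<equiv> wpow u (fst v)"

lemma wU: "wo U" using wo_wpow[OF wu wv] .

lemma no_pre_vu: "pre v u \<Longrightarrow> False"
  using pre_antisym[OF wu wv puv] niso by blast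

lemma no_sless_vu: "sless v u \<Longrightarrow> False"
  using sless_pre_False[OF wv wu _ puv] by blast

lemma sfx_contra:
  assumes p0: "p0 \<in> Field (fst v)" and h: "sless (wrestr v (above (fst v) p0)) u \<or> pre (wrestr v (above (fst v) p0)) u"
  shows False
proof (cases "\<exists>q. (q,p0) \<in> fst v \<and> q \<noteq> p0")
  case False
  hence "wrestr v (above (fst v) p0) = v" using sfx_min[OF wv p0] by blast
  thus False using h no_pre_vu no_sless_vu by auto
next
  case True
  let ?t = "wrestr v (above (fst v) p0)"
  have wt: "wo ?t" using wo_wrestr[OF wv] .
  have "wle v ?t" using plv p0 True unfolding primelike_def by blast
  thus False unfolding wle_def
  proof
    assume pvt: "pre v ?t"
    show False using h
    proof
      assume "sless ?t u"
      thus False using pre_sless_trans[OF wv wt wu pvt] no_pre_vu no_sless_vu by blast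
    next
      assume "pre ?t u"
      thus False using pre_trans[OF pvt] no_pre_vu by blast
    qed
  next
    assume svt: "sless v ?t"
    show False using h
    proof
      assume "sless ?t u"
      thus False using sless_trans[OF wv wt wu svt] no_sless_vu by blast
    next
      assume "pre ?t u"
      thus False using sless_pre_right[OF wv svt] no_sless_vu by blast
    qed
  qed
qed

lemma case_preUv: "pre U v \<Longrightarrow> False"
proof -
  assume "pre U v"
  then obtain g where g: "oemb (fst U) (fst v) (Field (fst U)) g" "\<forall>a\<in>Field (fst U). snd v (g a) = snd U a"
    unfolding pre_def by blast
  have FU: "Field (fst U) = Field k \<times> Field (fst u)" using Field_wpow[OF wu] .
  have gF: "\<And>a. a \<in> Field k \<Longrightarrow> g (a,m) \<in> Field k" using oembD(3)[OF g(1)] FU m by blast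
  have ge: "\<And>a. a \<in> Field k \<Longrightarrow> (a, g (a,m)) \<in> k"
  proof (rule wo_strict_mono_ge[OF wv gF])
    fix a b assume ab: "(a,b) \<in> k" "a \<noteq> b"
    have F: "(a,m) \<in> Field (fst U)" "(b,m) \<in> Field (fst U)" using ab(1) m FU by (auto intro: wo_FieldI1 wo_FieldI2)
    have "((a,m),(b,m)) \<in> fst U" using ab m F FU by auto
    hence "(g (a,m), g (b,m)) \<in> k" using oembD(4)[OF g(1) F] by simp
    moreover have "g (a,m) \<noteq> g (b,m)" using oemb_inj[OF wU g(1) F] ab by blast
    ultimately show "(g (a,m), g (b,m)) \<in> k \<and> g (a,m) \<noteq> g (b,m)" by blast
  qed
  have sur: "g ` Field (fst U) = Field k"
  proof
    show "g ` Field (fst U) \<subseteq> Field k" using oembD(3)[OF g(1)] by blast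
    show "Field k \<subseteq> g ` Field (fst U)"
    proof
      fix b assume b: "b \<in> Field k"
      have bm: "(b,m) \<in> Field (fst U)" using b m FU by blast
      show "b \<in> g ` Field (fst U)" using oembD(5)[OF g(1) bm ge[OF b]] .
    qed
  qed
  have "word_iso U v"
  proof (rule word_isoI2[OF _ sur])
    show "inj_on g (Field (fst U))" unfolding inj_on_def using oemb_inj[OF wU g(1)] by blast
    show "\<And>p q. p \<in> Field (fst U) \<Longrightarrow> q \<in> Field (fst U) \<Longrightarrow> ((p, q) \<in> fst U) = ((g p, g q) \<in> fst v)"
      using oembD(4)[OF g(1)] by blast
    show "\<And>p. p \<in> Field (fst U) \<Longrightarrow> snd v (g p) = snd U p" using g(2) by blast
  qed
  thus False using notpow[OF wv] iso_sym by blast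
qed

lemma case_prevU: "pre v U \<Longrightarrow> False"
proof -
  assume "pre v U"
  then obtain g where g: "oemb (fst v) (fst U) (Field (fst v)) g" "\<forall>a\<in>Field (fst v). snd U (g a) = snd v a"
    unfolding pre_def by blast
  have FU: "Field (fst U) = Field k \<times> Field (fst u)" using Field_wpow[OF wu] .
  show False
  proof (cases "g ` Field (fst v) = Field (fst U)")
    case True
    have "word_iso v U"
    proof (rule word_isoI2[OF _ True])
      show "inj_on g (Field (fst v))" unfolding inj_on_def using oemb_inj[OF wv g(1)] by blast
      show "\<And>p q. p \<in> Field (fst v) \<Longrightarrow> q \<in> Field (fst v) \<Longrightarrow> ((p, q) \<in> fst v) = ((g p, g q) \<in> fst U)"
        using oembD(4)[OF g(1)] by blast
      show "\<And>p. p \<in> Field (fst v) \<Longrightarrow> snd U (g p) = snd v p" using g(2) by blast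
    qed
    thus False using notpow[OF wv] by blast
  next
    case False
    let ?C = "Field (fst U) - g ` Field (fst v)"
    have gsub: "g ` Field (fst v) \<subseteq> Field (fst U)"
    proof
      fix c assume "c \<in> g ` Field (fst v)"
      then obtain a where "a \<in> Field (fst v)" "c = g a" by blast
      thus "c \<in> Field (fst U)" using oembD(3)[OF g(1)] by simp
    qed
    have C1: "?C \<subseteq> Field (fst U)" by blast
    have C2: "?C \<noteq> {}" using False gsub by (metis Diff_eq_empty_iff subset_antisym)
    obtain c where c: "c \<in> ?C" "\<forall>d\<in>?C. (c,d) \<in> fst U" using wo_min[OF wU C1 C2] by blast
    obtain ob q where obq: "c = (ob,q)" by (cases c)
    have obF: "ob \<in> Field k" and qF: "q \<in> Field (fst u)" using c obq FU by auto
    have img: "g ` Field (fst v) = underS (fst U) c" using img_underS_min[OF wU g(1) c(1)] c(2) by blast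
    have omq: "((ob,m),(ob,q)) \<in> fst U" using obF m qF mmin[OF qF] by simp
    show False
    proof (cases "(ob,m) \<in> g ` Field (fst v)")
      case False
      have "(ob,m) \<in> ?C" using False obF m FU by blast
      hence "(c,(ob,m)) \<in> fst U" using c by blast
      hence ceq: "c = (ob,m)" using omq obq wo_antisym[OF wU] by blast
      have BF: "underS k ob \<subseteq> Field k" unfolding underS_def Field_def by blast
      have "word_iso (wrestr v (Field (fst v))) (wrestr U (g ` Field (fst v)))"
        by (rule iso_restr_oemb[OF wv wU g(1)]) (use g(2) in auto)
      hence i1: "word_iso v (wrestr U (underS (fst U) (ob,m)))" unfolding wrestr_Field img ceq .
      have e1: "underS (fst U) (ob,m) = underS k ob \<times> Field (fst u)"
        by (rule underS_wpow_min[OF wu wv obF m mmin])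
      have e2: "wrestr U (underS k ob \<times> Field (fst u)) = wpow u (Restr k (underS k ob))"
        by (rule wrestr_wpow[OF wu wv BF])
      have "word_iso v (wpow u (Restr k (underS k ob)))" using i1 unfolding e1 e2 .
      moreover have "Field (Restr k (underS k ob)) \<subseteq> Field k"
        using Field_Restr_subset[of k "underS k ob"] BF by (rule subset_trans)
      ultimately show False using notpow[OF Well_order_Restr[OF wv]] by blast
    next
      case True
      then obtain p0 where p0: "p0 \<in> Field (fst v)" "g p0 = (ob,m)" by (metis imageE)
      let ?t = "wrestr v (above (fst v) p0)"
      let ?phi = "\<lambda>a. snd (g a)"
      have Ft: "Field (fst ?t) = above (fst v) p0" using Field_sfx[OF wv] .
      have blk: "\<And>a. a \<in> above (fst v) p0 \<Longrightarrow> g a = (ob, ?phi a) \<and> ?phi a \<in> Field (fst u)"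
      proof -
        fix a assume a: "a \<in> above (fst v) p0"
        have aF: "a \<in> Field (fst v)" using a above_Field[of "fst v" p0] by blast
        have "(g p0, g a) \<in> fst U" using oembD(4)[OF g(1) p0(1) aF] a unfolding above_def by simp
        hence h1: "((ob,m), g a) \<in> fst U" using p0 by simp
        have "g a \<in> underS (fst U) c" using img aF by blast
        hence h2: "(g a, (ob,q)) \<in> fst U" unfolding underS_def obq by blast
        have "fst (g a) = ob \<and> (snd (g a), q) \<in> fst u \<and> snd (g a) \<in> Field (fst u)"
          by (rule same_block[OF wu wv m mmin h1 h2])
        thus "g a = (ob, ?phi a) \<and> ?phi a \<in> Field (fst u)" by (metis prod.collapse)
      qed
      have "pre ?t u"
        unfolding pre_def
      proof (intro exI conjI)
        show "oemb (fst ?t) (fst u) (Field (fst ?t)) ?phi"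
        proof (rule oemb_full_intro)
          show "\<And>a. a \<in> Field (fst ?t) \<Longrightarrow> ?phi a \<in> Field (fst u)" using blk Ft by blast
        next
          fix a b assume a: "a \<in> Field (fst ?t)" and b: "b \<in> Field (fst ?t)"
          have a': "a \<in> above (fst v) p0" and b': "b \<in> above (fst v) p0" using a b Ft by auto
          have aF: "a \<in> Field (fst v)" and bF: "b \<in> Field (fst v)" using a' b' above_Field[of "fst v" p0] by blast+
          have "(a,b) \<in> fst ?t \<longleftrightarrow> (a,b) \<in> fst v" using a' b' by simp
          also have "\<dots> \<longleftrightarrow> (g a, g b) \<in> fst U" using oembD(4)[OF g(1) aF bF] .
          also have "\<dots> \<longleftrightarrow> (?phi a, ?phi b) \<in> fst u"
            using blk[OF a'] blk[OF b'] obF by (metis wpow_rel)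
          finally show "(a,b) \<in> fst ?t \<longleftrightarrow> (?phi a, ?phi b) \<in> fst u" .
        next
          fix a d assume a: "a \<in> Field (fst ?t)" and d: "(d, ?phi a) \<in> fst u"
          have a': "a \<in> above (fst v) p0" using a Ft by auto
          have aF: "a \<in> Field (fst v)" using a' above_Field[of "fst v" p0] by blast
          have dF: "d \<in> Field (fst u)" using d by (rule wo_FieldI1)
          have "((ob,d), g a) \<in> fst U" using blk[OF a'] d dF obF by (metis wpow_rel)
          then obtain b where b: "b \<in> Field (fst v)" "(ob,d) = g b" using oembD(5)[OF g(1) aF] by blast
          have "((ob,m),(ob,d)) \<in> fst U" using obF m dF mmin[OF dF] by simp
          hence "(g p0, g b) \<in> fst U" using p0 b by simp
          hence "(p0, b) \<in> fst v" using oembD(4)[OF g(1) p0(1) b(1)] by simp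
          hence "b \<in> Field (fst ?t)" using Ft unfolding above_def by blast
          moreover have "d = ?phi b" using b(2) by (metis snd_conv)
          ultimately show "d \<in> ?phi ` Field (fst ?t)" by blast
        qed
        show "\<forall>a\<in>Field (fst ?t). snd u (?phi a) = snd ?t a"
        proof
          fix a assume a: "a \<in> Field (fst ?t)"
          have a': "a \<in> above (fst v) p0" using a Ft by auto
          have aF: "a \<in> Field (fst v)" using a' above_Field[of "fst v" p0] by blast
          have "snd U (g a) = snd v a" using g(2) aF by blast
          thus "snd u (?phi a) = snd ?t a" using blk[OF a'] by (metis wpow_lab wrestr_lab)
        qed
      qed
      thus False using sfx_contra[OF p0(1)] by blast
    qed
  qed
qed

lemma case_slessvU: "sless v U \<Longrightarrow> False"
proof -
  assume "sless v U"
  then obtain p g where pg: "p \<in> Field (fst v)" "oemb (fst v) (fst U) (under (fst v) p) g"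
    "\<And>a. a \<in> underS (fst v) p \<Longrightarrow> snd U (g a) = snd v a" "snd v p < snd U (g p)"
    using slessE by blast
  have FU: "Field (fst U) = Field k \<times> Field (fst u)" using Field_wpow[OF wu] .
  have pu: "p \<in> under (fst v) p" using under_self[OF wv pg(1)] .
  obtain ob q where gp: "g p = (ob,q)" by (cases "g p")
  have gpF: "g p \<in> Field (fst U)" using oembD(3)[OF pg(2) pu] .
  have obF: "ob \<in> Field k" and qF: "q \<in> Field (fst u)" using gpF gp FU by auto
  have omq: "((ob,m), g p) \<in> fst U" using obF m qF mmin[OF qF] gp by simp
  obtain p0 where p0: "p0 \<in> under (fst v) p" "g p0 = (ob,m)"
    using oembD(5)[OF pg(2) pu omq] by (metis imageE)
  have p0F: "p0 \<in> Field (fst v)" using p0(1) under_sub[of "fst v" p] by blast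
  let ?t = "wrestr v (above (fst v) p0)"
  let ?phi = "\<lambda>a. snd (g a)"
  have Ft: "Field (fst ?t) = above (fst v) p0" using Field_sfx[OF wv] .
  have pp0: "(p0, p) \<in> fst v" using p0(1) unfolding under_def by blast
  have pt: "p \<in> Field (fst ?t)" using Ft pp0 unfolding above_def by blast
  have ut: "under (fst ?t) p = under (fst v) p \<inter> above (fst v) p0"
    using pt Ft unfolding under_def above_def by auto
  have blk: "\<And>a. a \<in> under (fst v) p \<inter> above (fst v) p0 \<Longrightarrow> g a = (ob, ?phi a) \<and> ?phi a \<in> Field (fst u) \<and> (?phi a, q) \<in> fst u"
  proof -
    fix a assume a: "a \<in> under (fst v) p \<inter> above (fst v) p0"
    have au: "a \<in> under (fst v) p" using a by blast
    have "(g p0, g a) \<in> fst U" using oembD(4)[OF pg(2) p0(1) au] a unfolding above_def by simp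
    hence h1: "((ob,m), g a) \<in> fst U" using p0 by simp
    have "(g a, g p) \<in> fst U" using oembD(4)[OF pg(2) au pu] au unfolding under_def by simp
    hence h2: "(g a, (ob,q)) \<in> fst U" using gp by simp
    have "fst (g a) = ob \<and> (snd (g a), q) \<in> fst u \<and> snd (g a) \<in> Field (fst u)"
      by (rule same_block[OF wu wv m mmin h1 h2])
    thus "g a = (ob, ?phi a) \<and> ?phi a \<in> Field (fst u) \<and> (?phi a, q) \<in> fst u" by (metis prod.collapse)
  qed
  have "sless ?t u"
  proof (rule slessI[where p=p and f="?phi"])
    show "p \<in> Field (fst ?t)" by (rule pt)
    show "oemb (fst ?t) (fst u) (under (fst ?t) p) ?phi"
      unfolding oemb_def
    proof (intro conjI ballI allI impI)
      show "under (fst ?t) p \<subseteq> Field (fst ?t)" by (rule under_sub)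
      show "\<And>a b. a \<in> under (fst ?t) p \<Longrightarrow> (b, a) \<in> fst ?t \<Longrightarrow> b \<in> under (fst ?t) p"
        using under_closed[OF wo_wrestr[OF wv, of "above (fst v) p0"], of _ p] by metis
      show "?phi ` under (fst ?t) p \<subseteq> Field (fst u)" using blk unfolding ut by blast
      fix a assume a: "a \<in> under (fst ?t) p"
      have a': "a \<in> under (fst v) p \<inter> above (fst v) p0" using a ut by blast
      have au: "a \<in> under (fst v) p" using a' by blast
      { fix b assume b: "b \<in> under (fst ?t) p"
        have b': "b \<in> under (fst v) p \<inter> above (fst v) p0" using b ut by blast
        have bu: "b \<in> under (fst v) p" using b' by blast
        have "(a,b) \<in> fst ?t \<longleftrightarrow> (a,b) \<in> fst v" using a' b' by simp
        also have "\<dots> \<longleftrightarrow> (g a, g b) \<in> fst U" using oembD(4)[OF pg(2) au bu] .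
        also have "\<dots> \<longleftrightarrow> (?phi a, ?phi b) \<in> fst u"
          using blk[OF a'] blk[OF b'] obF by (metis wpow_rel)
        finally show "(a,b) \<in> fst ?t \<longleftrightarrow> (?phi a, ?phi b) \<in> fst u" . }
      { fix d assume d: "(d, ?phi a) \<in> fst u"
        have dF: "d \<in> Field (fst u)" using d by (rule wo_FieldI1)
        have "((ob,d), g a) \<in> fst U" using blk[OF a'] d dF obF by (metis wpow_rel)
        then obtain b where b: "b \<in> under (fst v) p" "(ob,d) = g b" using oembD(5)[OF pg(2) au] by blast
        have "((ob,m),(ob,d)) \<in> fst U" using obF m dF mmin[OF dF] by simp
        hence "(g p0, g b) \<in> fst U" using p0 b by simp
        hence "(p0, b) \<in> fst v" using oembD(4)[OF pg(2) p0(1) b(1)] by simp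
        hence "b \<in> under (fst ?t) p" using b(1) ut unfolding above_def by blast
        moreover have "d = ?phi b" using b(2) by (metis snd_conv)
        ultimately show "d \<in> ?phi ` under (fst ?t) p" by blast }
    qed
  next
    fix a assume a: "a \<in> underS (fst ?t) p"
    have au: "a \<in> under (fst ?t) p" using underS_under[OF a] .
    have a': "a \<in> under (fst v) p \<inter> above (fst v) p0" using au ut by blast
    have aS: "a \<in> underS (fst v) p" using a unfolding underS_def by auto
    have "snd U (g a) = snd v a" using pg(3)[OF aS] .
    thus "snd u (?phi a) = snd ?t a" using blk[OF a'] by (metis wpow_lab wrestr_lab)
  next
    have p': "p \<in> under (fst v) p \<inter> above (fst v) p0" using pu pp0 unfolding above_def by blast
    show "snd ?t p < snd u (?phi p)" using pg(4) blk[OF p'] by (metis wpow_lab wrestr_lab)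
  qed
  thus False using sfx_contra[OF p0F] by blast
qed

lemma case_slessUv:
  assumes "sless U v"
  shows "\<exists>(mu :: 'j rel) (t :: ('j,'a) wrd). Well_order mu \<and> wo t \<and> word_iso v (wconc (wpow u mu) t) \<and> sless u t"
proof -
  obtain c g where cg: "c \<in> Field (fst U)" "oemb (fst U) (fst v) (under (fst U) c) g"
    "\<And>a. a \<in> underS (fst U) c \<Longrightarrow> snd v (g a) = snd U a" "snd U c < snd v (g c)"
    using slessE[OF assms] by blast
  have FU: "Field (fst U) = Field k \<times> Field (fst u)" using Field_wpow[OF wu] .
  obtain ob q where c: "c = (ob,q)" by (cases c)
  have obF: "ob \<in> Field k" and qF: "q \<in> Field (fst u)" using cg(1) c FU by auto
  have cu: "c \<in> under (fst U) c" using under_self[OF wU cg(1)] .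
  have omu: "(ob,m) \<in> under (fst U) c" using obF m qF mmin[OF qF] c unfolding under_def by simp
  let ?p0 = "g (ob,m)"
  have p0F: "?p0 \<in> Field (fst v)" using oembD(3)[OF cg(2) omu] .
  let ?t = "wrestr v (above (fst v) ?p0)"
  let ?mu = "Restr k (underS k ob)"
  let ?psi = "\<lambda>c'. g (ob,c')"
  have Ft: "Field (fst ?t) = above (fst v) ?p0" using Field_sfx[OF wv] .
  have inU: "\<And>c'. c' \<in> under (fst u) q \<Longrightarrow> (ob,c') \<in> under (fst U) c"
  proof -
    fix c' assume "c' \<in> under (fst u) q"
    hence h: "(c',q) \<in> fst u" unfolding under_def by blast
    hence "c' \<in> Field (fst u)" by (rule wo_FieldI1)
    thus "(ob,c') \<in> under (fst U) c" using h obF qF c unfolding under_def by simp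
  qed
  have psiF: "\<And>c'. c' \<in> under (fst u) q \<Longrightarrow> ?psi c' \<in> above (fst v) ?p0"
  proof -
    fix c' assume c': "c' \<in> under (fst u) q"
    have c'F: "c' \<in> Field (fst u)" using c' under_sub[of "fst u" q] by blast
    have "((ob,m),(ob,c')) \<in> fst U" using obF m c'F mmin[OF c'F] by simp
    hence "(?p0, ?psi c') \<in> fst v" using oembD(4)[OF cg(2) omu inU[OF c']] by simp
    thus "?psi c' \<in> above (fst v) ?p0" unfolding above_def by blast
  qed
  have s1: "sless u ?t"
  proof (rule slessI[where p=q and f="?psi"])
    show "q \<in> Field (fst u)" by (rule qF)
    show "oemb (fst u) (fst ?t) (under (fst u) q) ?psi"
      unfolding oemb_def
    proof (intro conjI ballI allI impI)
      show "under (fst u) q \<subseteq> Field (fst u)" by (rule under_sub)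
      show "\<And>a b. a \<in> under (fst u) q \<Longrightarrow> (b, a) \<in> fst u \<Longrightarrow> b \<in> under (fst u) q"
        using under_closed[OF wu, of _ q] by metis
      show "?psi ` under (fst u) q \<subseteq> Field (fst ?t)" using psiF Ft by blast
      fix a assume a: "a \<in> under (fst u) q"
      have aF: "a \<in> Field (fst u)" using a under_sub[of "fst u" q] by blast
      { fix b assume b: "b \<in> under (fst u) q"
        have bF: "b \<in> Field (fst u)" using b under_sub[of "fst u" q] by blast
        have "(a,b) \<in> fst u \<longleftrightarrow> ((ob,a),(ob,b)) \<in> fst U" using aF bF obF by simp
        also have "\<dots> \<longleftrightarrow> (?psi a, ?psi b) \<in> fst v" using oembD(4)[OF cg(2) inU[OF a] inU[OF b]] .
        also have "\<dots> \<longleftrightarrow> (?psi a, ?psi b) \<in> fst ?t" using psiF[OF a] psiF[OF b] by simp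
        finally show "(a,b) \<in> fst u \<longleftrightarrow> (?psi a, ?psi b) \<in> fst ?t" . }
      { fix e assume e: "(e, ?psi a) \<in> fst ?t"
        have ev: "(e, ?psi a) \<in> fst v" and ea: "e \<in> above (fst v) ?p0" using e by auto
        obtain b where b: "b \<in> under (fst U) c" "e = g b" using oembD(5)[OF cg(2) inU[OF a] ev] by blast
        have "(g (ob,m), g b) \<in> fst v" using ea b unfolding above_def by simp
        hence h1: "((ob,m), b) \<in> fst U" using oembD(4)[OF cg(2) omu b(1)] by simp
        have "(g b, g (ob,a)) \<in> fst v" using ev b by simp
        hence h2: "(b, (ob,a)) \<in> fst U" using oembD(4)[OF cg(2) b(1) inU[OF a]] by simp
        have sb: "fst b = ob \<and> (snd b, a) \<in> fst u \<and> snd b \<in> Field (fst u)"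
          by (rule same_block[OF wu wv m mmin h1 h2])
        hence "snd b \<in> under (fst u) q" using a wo_trans[OF wu] unfolding under_def by blast
        moreover have "e = ?psi (snd b)" using sb b(2) by (metis prod.collapse)
        ultimately show "e \<in> ?psi ` under (fst u) q" by blast }
    qed
  next
    fix a assume a: "a \<in> underS (fst u) q"
    have au: "a \<in> under (fst u) q" using underS_under[OF a] .
    have aF: "a \<in> Field (fst u)" using au under_sub[of "fst u" q] by blast
    have "(ob,a) \<in> underS (fst U) c" using a aF obF qF c unfolding underS_def by auto
    hence "snd v (?psi a) = snd U (ob,a)" using cg(3) by blast
    thus "snd ?t (?psi a) = snd u a" by simp
  next
    show "snd u q < snd ?t (?psi q)" using cg(4) c by simp
  qed
  have BF: "underS k ob \<subseteq> Field k" unfolding underS_def Field_def by blast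
  have Bsub: "underS (fst U) (ob,m) \<subseteq> under (fst U) c"
  proof
    fix d assume "d \<in> underS (fst U) (ob,m)"
    hence "(d, (ob,m)) \<in> fst U" unfolding underS_def by blast
    moreover have "((ob,m), c) \<in> fst U" using omu unfolding under_def by blast
    ultimately show "d \<in> under (fst U) c" unfolding under_def using wo_trans[OF wU] by blast
  qed
  let ?B = "underS (fst U) (ob,m)"
  have Bcl: "\<And>a b. a \<in> ?B \<Longrightarrow> (b,a) \<in> fst U \<Longrightarrow> b \<in> ?B"
    unfolding underS_def using wo_trans[OF wU] wo_antisym[OF wU] by blast
  have gB: "oemb (fst U) (fst v) ?B g" by (rule oemb_restr[OF cg(2) Bsub Bcl])
  have labs: "\<And>a. a \<in> ?B \<Longrightarrow> snd v (g a) = snd U a"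
  proof -
    fix a assume a: "a \<in> ?B"
    have "(a, (ob,m)) \<in> fst U" "a \<noteq> (ob,m)" using a unfolding underS_def by blast+
    moreover have "((ob,m), c) \<in> fst U" using omu unfolding under_def by blast
    ultimately have "(a,c) \<in> fst U" "a \<noteq> c" using wo_trans[OF wU] wo_antisym[OF wU] by blast+
    hence "a \<in> underS (fst U) c" unfolding underS_def by blast
    thus "snd v (g a) = snd U a" using cg(3) by blast
  qed
  have i1: "word_iso (wrestr U ?B) (wrestr v (g ` ?B))"
    by (rule iso_restr_oemb[OF wU wv gB labs subset_refl])
  have e0: "g ` ?B = underS (fst v) ?p0" by (rule oemb_underS_image[OF wU cg(2) omu])
  have e1: "?B = underS k ob \<times> Field (fst u)" by (rule underS_wpow_min[OF wu wv obF m mmin])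
  have e2: "wrestr U (underS k ob \<times> Field (fst u)) = wpow u ?mu" by (rule wrestr_wpow[OF wu wv BF])
  have i2': "word_iso (wrestr v (underS (fst v) ?p0)) (wrestr U ?B)"
    using iso_sym[OF i1] unfolding e0 .
  have i2: "word_iso (wrestr v (underS (fst v) ?p0)) (wpow u ?mu)"
    using i2' unfolding e1 e2 .
  have wmu: "Well_order ?mu" using Well_order_Restr[OF wv] .
  have wt: "wo ?t" using wo_wrestr[OF wv] .
  have i3: "word_iso v (wconc (wrestr v (underS (fst v) ?p0)) ?t)" using iso_sym[OF sfx_split[OF wv p0F]] .
  have i4: "word_iso (wconc (wrestr v (underS (fst v) ?p0)) ?t) (wconc (wpow u ?mu) ?t)"
    by (rule iso_wconc_cong[OF wo_wrestr[OF wv] wt wo_wpow[OF wu wmu] wt i2 iso_refl])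
  have "word_iso v (wconc (wpow u ?mu) ?t)" using iso_trans[OF i3 i4] .
  thus ?thesis using wmu wt s1 by blast
qed

lemma decomposition:
  "\<exists>(mu :: 'j rel) (t :: ('j,'a) wrd). Well_order mu \<and> wo t \<and> word_iso v (wconc (wpow u mu) t) \<and> sless u t"
  using trichotomy[OF wv wU] case_preUv case_prevU case_slessvU case_slessUv by blast


end

definition osum :: "'a rel \<Rightarrow> 'b rel \<Rightarrow> ('a + 'b) rel" where
  "osum a b = fst (wconc (a, \<lambda>_. ()) (b, \<lambda>_. ()))"

lemma wo_osum: "Well_order a \<Longrightarrow> Well_order b \<Longrightarrow> Well_order (osum a b)"
  unfolding osum_def using wo_wconc[of "(a, \<lambda>_. ())" "(b, \<lambda>_. ())"] by simp

lemma Field_osum: "Field (osum a b) = Inl ` Field a \<union> Inr ` Field b"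
  unfolding osum_def using Field_wconc[of "(a, \<lambda>_. ())" "(b, \<lambda>_. ())"] by simp

lemma osum_rel[simp]:
  "(Inl x, Inl y) \<in> osum a b \<longleftrightarrow> (x,y) \<in> a"
  "(Inr x', Inr y') \<in> osum a b \<longleftrightarrow> (x',y') \<in> b"
  "(Inl x, Inr y') \<in> osum a b \<longleftrightarrow> x \<in> Field a \<and> y' \<in> Field b"
  "(Inr x', Inl y) \<notin> osum a b"
  unfolding osum_def using wconc_rel[of _ _ "(a, \<lambda>_. ())" "(b, \<lambda>_. ())"] by auto

lemma riso_Inl:
  assumes wa: "Well_order a" and wb: "Well_order b"
  shows "riso a (Restr (osum a b) (Inl ` Field a)) Inl"
proof -
  have sub: "Inl ` Field a \<subseteq> Field (osum a b)" unfolding Field_osum by blast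
  have F: "Field (Restr (osum a b) (Inl ` Field a)) = Inl ` Field a"
    by (rule Field_Restr_wo[OF wo_osum[OF wa wb] sub])
  show ?thesis unfolding riso_def F bij_betw_def inj_on_def by simp
qed

lemma riso_Inr:
  assumes wa: "Well_order a" and wb: "Well_order b"
  shows "riso b (Restr (osum a b) (Inr ` Field b)) Inr"
proof -
  have sub: "Inr ` Field b \<subseteq> Field (osum a b)" unfolding Field_osum by blast
  have F: "Field (Restr (osum a b) (Inr ` Field b)) = Inr ` Field b"
    by (rule Field_Restr_wo[OF wo_osum[OF wa wb] sub])
  show ?thesis unfolding riso_def F bij_betw_def inj_on_def by simp
qed

lemma wpow_osum:
  assumes wu: "wo u" and wa: "Well_order a" and wb: "Well_order b"
  shows "word_iso (wconc (wpow u a) (wpow u b)) (wpow u (osum a b))"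
proof -
  let ?k = "osum a b"
  have wk: "Well_order ?k" using wo_osum[OF wa wb] .
  have I: "Inl ` Field a \<subseteq> Field ?k" unfolding Field_osum by blast
  have Icl: "\<And>x y. x \<in> Inl ` Field a \<Longrightarrow> (y,x) \<in> ?k \<Longrightarrow> y \<in> Inl ` Field a"
  proof -
    fix x y assume x: "x \<in> Inl ` Field a" and yx: "(y,x) \<in> ?k"
    then obtain x1 where x1: "x = Inl x1" by blast
    show "y \<in> Inl ` Field a"
    proof (cases y)
      case (Inl y1) thus ?thesis using yx x1 by (auto intro: wo_FieldI1)
    next
      case (Inr y1) thus ?thesis using yx x1 by auto
    qed
  qed
  have D: "Field ?k - Inl ` Field a = Inr ` Field b" unfolding Field_osum by blast
  have sp: "word_iso (wconc (wpow u (Restr ?k (Inl ` Field a))) (wpow u (Restr ?k (Inr ` Field b)))) (wpow u ?k)"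
    using wpow_split[OF wu wk I Icl] unfolding D .
  have wI: "Well_order (Restr ?k (Inl ` Field a))" and wJ: "Well_order (Restr ?k (Inr ` Field b))"
    using Well_order_Restr[OF wk] by blast+
  have i1: "word_iso (wpow u a) (wpow u (Restr ?k (Inl ` Field a)))"
    using iso_wpow_cong[OF wu wu iso_refl riso_Inl[OF wa wb]] .
  have i2: "word_iso (wpow u b) (wpow u (Restr ?k (Inr ` Field b)))"
    using iso_wpow_cong[OF wu wu iso_refl riso_Inr[OF wa wb]] .
  have "word_iso (wconc (wpow u a) (wpow u b)) (wconc (wpow u (Restr ?k (Inl ` Field a))) (wpow u (Restr ?k (Inr ` Field b))))"
    by (rule iso_wconc_cong[OF wo_wpow[OF wu wa] wo_wpow[OF wu wb] wo_wpow[OF wu wI] wo_wpow[OF wu wJ] i1 i2])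
  thus ?thesis using iso_trans sp by blast
qed

lemma R_of_sless:
  assumes wu: "wo u" and wt: "wo t" and s: "sless u t" and wr: "Well_order r" and ne: "Field r \<noteq> {}"
  shows "wle (wconc (wpow u r) t) t"
proof -
  obtain m0 where m0: "m0 \<in> Field r" "\<forall>s\<in>Field r. (m0,s) \<in> r" using wo_min[OF wr subset_refl ne] by blast
  have p1: "pre u (wpow u r)" using pre_first_block[OF wu wr m0(1)] m0(2) by blast
  have p2: "pre (wpow u r) (wconc (wpow u r) t)" using pre_wconc[OF wo_wpow[OF wu wr] wt] .
  have "sless (wconc (wpow u r) t) t"
    using pre_sless_left[OF wu wo_wconc[OF wo_wpow[OF wu wr] wt] pre_trans[OF p1 p2] s] .
  thus ?thesis by (rule sless_wle)
qed

lemma claimB: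
  fixes u :: "('i,'a::linorder) wrd" and v :: "('j,'a) wrd" and e :: "'e rel"
  assumes wu: "wo u" and wv: "wo v" and une: "Field (fst u) \<noteq> {}"
    and le: "wle u v" and niso: "\<not> word_iso u v" and plv: "primelike v"
    and notpow: "\<And>b :: 'j rel. Well_order b \<Longrightarrow> Field b \<subseteq> Field (fst v) \<Longrightarrow> word_iso v (wpow u b) \<Longrightarrow> False"
    and we: "Well_order e" and ene: "Field e \<noteq> {}"
  shows "wle (wconc (wpow u e) v) v"
proof (cases "sless u v")
  case True
  thus ?thesis using R_of_sless[OF wu wv True we ene] by blast
next
  case False
  hence puv: "pre u v" using le unfolding wle_def by blast
  obtain m where m: "m \<in> Field (fst u)" "\<forall>s\<in>Field (fst u). (m,s) \<in> fst u"
    using wo_min[OF wu subset_refl une] by blast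
  interpret decomp u v m
    by (unfold_locales) (use wu wv m puv niso plv notpow in auto)
  obtain mu :: "'j rel" and t :: "('j,'a) wrd" where mt: "Well_order mu" "wo t" "word_iso v (wconc (wpow u mu) t)" "sless u t"
    using decomposition by blast
  let ?k = "osum e mu"
  have wk: "Well_order ?k" using wo_osum[OF we mt(1)] .
  have wpe: "wo (wpow u e)" using wo_wpow[OF wu we] .
  have wpm: "wo (wpow u mu)" using wo_wpow[OF wu mt(1)] .
  have wpk: "wo (wpow u ?k)" using wo_wpow[OF wu wk] .
  have A1: "word_iso (wconc (wpow u e) v) (wconc (wpow u e) (wconc (wpow u mu) t))"
    by (rule iso_wconc_cong[OF wpe wv wpe wo_wconc[OF wpm mt(2)] iso_refl mt(3)])
  have A2: "word_iso (wconc (wpow u e) (wconc (wpow u mu) t)) (wconc (wconc (wpow u e) (wpow u mu)) t)"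
    using iso_sym[OF iso_wconc_assoc[OF wpe wpm mt(2)]] .
  have A3: "word_iso (wconc (wconc (wpow u e) (wpow u mu)) t) (wconc (wpow u ?k) t)"
    by (rule iso_wconc_cong[OF wo_wconc[OF wpe wpm] mt(2) wpk mt(2) wpow_osum[OF wu we mt(1)] iso_refl])
  have A: "word_iso (wconc (wpow u e) v) (wconc (wpow u ?k) t)" using iso_trans[OF A1 iso_trans[OF A2 A3]] .
  let ?D = "Inr ` Field mu"
  have D: "?D \<subseteq> Field ?k" unfolding Field_osum by blast
  have up: "\<And>d x. d \<in> ?D \<Longrightarrow> (d,x) \<in> ?k \<Longrightarrow> x \<in> ?D"
  proof -
    fix d x assume d: "d \<in> ?D" and dx: "(d,x) \<in> ?k"
    then obtain d1 where d1: "d = Inr d1" by blast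
    show "x \<in> ?D"
    proof (cases x)
      case (Inl x1) thus ?thesis using dx d1 by auto
    next
      case (Inr x1) thus ?thesis using dx d1 by (auto intro: wo_FieldI2)
    qed
  qed
  have B: "wle (wconc (wpow u ?k) t) (wconc (wpow u (Restr ?k ?D)) t)"
    by (rule wle_pow_tail[OF wu mt(2) wk D up R_of_sless[OF wu mt(2) mt(4)]])
  have wD: "Well_order (Restr ?k ?D)" using Well_order_Restr[OF wk] .
  have C1: "word_iso (wpow u mu) (wpow u (Restr ?k ?D))"
    using iso_wpow_cong[OF wu wu iso_refl riso_Inr[OF we mt(1)]] .
  have C2: "word_iso (wconc (wpow u (Restr ?k ?D)) t) (wconc (wpow u mu) t)"
    by (rule iso_wconc_cong[OF wo_wpow[OF wu wD] mt(2) wpm mt(2) iso_sym[OF C1] iso_refl])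
  have C: "word_iso (wconc (wpow u (Restr ?k ?D)) t) v" using iso_trans[OF C2 iso_sym[OF mt(3)]] .
  have "wle (wconc (wpow u ?k) t) v" using wle_iso_right[OF wo_wconc[OF wpk mt(2)] B C] .
  thus ?thesis using wle_iso_left[OF wo_wconc[OF wpk mt(2)] wo_wconc[OF wpe wv] A] by blast
qed

section \<open>Transfer to nat-indexed words\<close>

lemma dir_image_mem:
  assumes inj: "inj_on g (Field r)" and a: "a \<in> Field r" and b: "b \<in> Field r"
  shows "(g a, g b) \<in> dir_image r g \<longleftrightarrow> (a,b) \<in> r"
proof
  assume "(g a, g b) \<in> dir_image r g"
  then obtain a' b' where ab: "(a',b') \<in> r" "g a = g a'" "g b = g b'" unfolding dir_image_def by blast
  have "a' \<in> Field r" "b' \<in> Field r" using ab(1) by (auto intro: wo_FieldI1 wo_FieldI2)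
  hence "a' = a" "b' = b" using inj a b ab unfolding inj_on_def by metis+
  thus "(a,b) \<in> r" using ab by simp
next
  assume "(a,b) \<in> r" thus "(g a, g b) \<in> dir_image r g" unfolding dir_image_def by blast
qed

lemma nat_word:
  fixes x :: "('i,'a) wrd"
  assumes wx: "wo x" and cx: "countable (Field (fst x))"
  obtains y :: "(nat,'a) wrd" where "word y" "word_iso x y"
proof -
  let ?F = "Field (fst x)"
  let ?g = "to_nat_on ?F"
  have inj: "inj_on ?g ?F" using cx by (rule inj_on_to_nat_on)
  let ?y = "(dir_image (fst x) ?g, \<lambda>n. snd x (inv_into ?F ?g n))"
  have wy: "wo ?y" using Well_order_dir_image[OF wx inj] by simp
  have Fy: "Field (fst ?y) = ?g ` ?F" using dir_image_Field by simp
  have "word ?y" unfolding word_def using wy by simp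
  moreover have "word_iso x ?y"
  proof (rule word_isoI2[OF inj Fy[symmetric]])
    show "\<And>p q. p \<in> ?F \<Longrightarrow> q \<in> ?F \<Longrightarrow> ((p, q) \<in> fst x) = ((?g p, ?g q) \<in> fst ?y)"
      using dir_image_mem[OF inj] by simp
    show "\<And>p. p \<in> ?F \<Longrightarrow> snd ?y (?g p) = snd x p" using inj by (simp add: inv_into_f_f)
  qed
  ultimately show ?thesis using that by blast
qed

lemma nat_rel:
  fixes b :: "'o rel"
  assumes wb: "Well_order b" and cb: "countable (Field b)"
  obtains b' :: "nat rel" and g where "Well_order b'" "riso b b' g"
proof -
  let ?g = "to_nat_on (Field b)"
  have inj: "inj_on ?g (Field b)" using cb by (rule inj_on_to_nat_on)
  have "Well_order (dir_image b ?g)" using Well_order_dir_image[OF wb inj] .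
  moreover have "riso b (dir_image b ?g) ?g"
    unfolding riso_def bij_betw_def dir_image_Field using inj dir_image_mem[OF inj] by blast
  ultimately show ?thesis using that by blast
qed

lemma primitive_transfer:
  fixes x :: "('i,'a) wrd" and y :: "('k,'a) wrd" and b :: "'o rel"
  assumes px: "primitive x" and wy: "wo y" and cy: "countable (Field (fst y))"
    and wb: "Well_order b" and cb: "countable (Field b)" and i: "word_iso x (wpow y b)"
  shows "(\<exists>o1. Field b = {o1}) \<and> word_iso y x"
proof -
  obtain y' :: "(nat,'a) wrd" where y': "word y'" "word_iso y y'" using nat_word[OF wy cy] by blast
  obtain b' :: "nat rel" and g where b': "Well_order b'" "riso b b' g" using nat_rel[OF wb cb] by blast
  have wy': "wo y'" using y'(1) unfolding word_def by blast
  have "word_iso (wpow y b) (wpow y' b')" by (rule iso_wpow_cong[OF wy wy' y'(2) b'(2)])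
  hence "word_iso x (wpow y' b')" using i iso_trans by blast
  hence r: "(\<exists>o1. Field b' = {o1}) \<and> word_iso y' x" using px y'(1) b'(1) unfolding primitive_def by blast
  have bij: "bij_betw g (Field b) (Field b')" using b'(2) unfolding riso_def by blast
  then obtain o1 where "Field b' = {o1}" using r by blast
  hence "g ` Field b = {o1}" using bij unfolding bij_betw_def by blast
  moreover have "inj_on g (Field b)" using bij unfolding bij_betw_def by blast
  ultimately have "\<exists>o2. Field b = {o2}"
  proof -
    assume gi: "g ` Field b = {o1}" and inj: "inj_on g (Field b)"
    have "o1 \<in> g ` Field b" using gi by blast
    then obtain o2 where o2: "o2 \<in> Field b" "g o2 = o1" by (metis imageE)
    have "\<And>o3. o3 \<in> Field b \<Longrightarrow> o3 = o2"
    proof -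
      fix o3 assume o3: "o3 \<in> Field b"
      have "g o3 \<in> {o1}" using gi o3 by blast
      hence "g o3 = g o2" using o2 by simp
      thus "o3 = o2" using inj o2(1) o3 unfolding inj_on_def by blast
    qed
    hence "Field b = {o2}" using o2(1) by blast
    thus ?thesis by blast
  qed
  moreover have "word_iso y x" using iso_trans[OF y'(2)] r by blast
  ultimately show ?thesis by blast
qed

lemma underS_set: "{q. (q, p) \<in> r \<and> q \<noteq> p} = underS r p"
  unfolding underS_def by blast

lemma pre_wrestr_down:
  assumes wy: "wo y" and S: "S \<subseteq> Field (fst y)" and Scl: "\<And>a b. a \<in> S \<Longrightarrow> (b,a) \<in> fst y \<Longrightarrow> b \<in> S"
  shows "pre (wrestr y S) y"
  unfolding pre_def
proof (intro exI conjI)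
  have F: "Field (fst (wrestr y S)) = S" using Field_wrestr[OF wy] S by blast
  show "oemb (fst (wrestr y S)) (fst y) (Field (fst (wrestr y S))) id"
    unfolding oemb_def F
  proof (intro conjI ballI allI impI)
    show "S \<subseteq> S" by simp
    show "id ` S \<subseteq> Field (fst y)" using S by simp
    fix a assume a: "a \<in> S"
    { fix b assume "(b,a) \<in> fst (wrestr y S)" thus "b \<in> S" by simp }
    { fix b assume "b \<in> S" thus "((a, b) \<in> fst (wrestr y S)) = ((id a, id b) \<in> fst y)" using a by simp }
    { fix c assume "(c, id a) \<in> fst y" thus "c \<in> id ` S" using Scl a by simp }
  qed
qed simp

lemma is_prefix_pre:
  assumes wx: "wo x" and wy: "wo y"
  shows "is_prefix x y \<longleftrightarrow> pre x y"
proof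
  assume "is_prefix x y"
  then consider "word_iso x y" | p where "p \<in> Field (fst y)" "word_iso x (wrestr y (underS (fst y) p))"
    unfolding is_prefix_def underS_set by blast
  thus "pre x y"
  proof cases
    case 1 thus ?thesis by (rule iso_pre)
  next
    case 2
    have S: "underS (fst y) p \<subseteq> Field (fst y)" unfolding underS_def Field_def by blast
    have "pre (wrestr y (underS (fst y) p)) y"
      by (rule pre_wrestr_down[OF wy S]) (unfold underS_def, use wo_trans[OF wy] wo_antisym[OF wy] in blast)
    thus ?thesis using pre_trans[OF iso_pre[OF 2(2)]] by blast
  qed
next
  assume "pre x y"
  then obtain f where f: "oemb (fst x) (fst y) (Field (fst x)) f" "\<forall>a\<in>Field (fst x). snd y (f a) = snd x a"
    unfolding pre_def by blast
  have fsub: "f ` Field (fst x) \<subseteq> Field (fst y)"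
  proof
    fix c assume "c \<in> f ` Field (fst x)"
    then obtain a where "a \<in> Field (fst x)" "c = f a" by blast
    thus "c \<in> Field (fst y)" using oembD(3)[OF f(1)] by simp
  qed
  have i: "word_iso (wrestr x (Field (fst x))) (wrestr y (f ` Field (fst x)))"
    by (rule iso_restr_oemb[OF wx wy f(1)]) (use f(2) in auto)
  show "is_prefix x y"
  proof (cases "f ` Field (fst x) = Field (fst y)")
    case True
    thus ?thesis using i unfolding wrestr_Field True is_prefix_def by simp
  next
    case False
    let ?C = "Field (fst y) - f ` Field (fst x)"
    have C1: "?C \<subseteq> Field (fst y)" by blast
    have C2: "?C \<noteq> {}" using False fsub by (metis Diff_eq_empty_iff subset_antisym)
    obtain c where c: "c \<in> ?C" "\<forall>d\<in>?C. (c,d) \<in> fst y" using wo_min[OF wy C1 C2] by blast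
    have "f ` Field (fst x) = underS (fst y) c" using img_underS_min[OF wy f(1) c(1)] c(2) by blast
    hence "word_iso x (wrestr y (underS (fst y) c))" using i unfolding wrestr_Field by simp
    thus ?thesis unfolding is_prefix_def underS_set using c(1) by blast
  qed
qed

lemma wletter_simps[simp]:
  "fst (wletter a) = {((),())}" "snd (wletter a) p = a" "Field (fst (wletter a)) = {()}"
  unfolding wletter_def Field_def by auto

lemma wo_wletter: "wo (wletter a)"
proof (rule wo_intro)
  show "\<And>S. S \<subseteq> Field (fst (wletter a)) \<Longrightarrow> S \<noteq> {} \<Longrightarrow> \<exists>m\<in>S. \<forall>s\<in>S. (m, s) \<in> fst (wletter a)" by auto
qed auto

lemma three_split:
  assumes wx: "wo x" and p: "p \<in> Field (fst x)"
  shows "word_iso x (wconc (wconc (wrestr x (underS (fst x) p)) (wletter (snd x p))) (wrestr x (aboveS (fst x) p)))"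
proof -
  let ?A = "wrestr x (underS (fst x) p)" and ?B = "wrestr x {p}" and ?C = "wrestr x (aboveS (fst x) p)"
  have wA: "wo ?A" and wB: "wo ?B" and wC: "wo ?C" using wo_wrestr[OF wx] by blast+
  have i1: "word_iso x (wconc ?A (wrestr x (above (fst x) p)))" using iso_sym[OF sfx_split[OF wx p]] .
  have "word_iso (wconc ?B ?C) (wrestr x ({p} \<union> aboveS (fst x) p))"
  proof (rule iso_pieces[OF wx])
    show "{p} \<inter> aboveS (fst x) p = {}" unfolding aboveS_def by blast
    show "\<And>s t. s \<in> {p} \<Longrightarrow> t \<in> aboveS (fst x) p \<Longrightarrow> s \<in> Field (fst x) \<Longrightarrow> t \<in> Field (fst x) \<Longrightarrow> (s, t) \<in> fst x"
      unfolding aboveS_def by blast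
  qed
  moreover have "{p} \<union> aboveS (fst x) p = above (fst x) p"
    unfolding above_def aboveS_def using wo_refl[OF wx p] by blast
  ultimately have i2: "word_iso (wrestr x (above (fst x) p)) (wconc ?B ?C)" using iso_sym by metis
  have i3: "word_iso ?B (wletter (snd x p))"
  proof (rule word_isoI2[of "\<lambda>_. ()"])
    have FB: "Field (fst ?B) = {p}" using Field_wrestr[OF wx] p by blast
    show "inj_on (\<lambda>_. ()) (Field (fst ?B))" unfolding FB by simp
    show "(\<lambda>_. ()) ` Field (fst ?B) = Field (fst (wletter (snd x p)))" unfolding FB by simp
    show "\<And>pa q. pa \<in> Field (fst ?B) \<Longrightarrow> q \<in> Field (fst ?B) \<Longrightarrow> ((pa, q) \<in> fst ?B) = (((), ()) \<in> fst (wletter (snd x p)))"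
      unfolding FB using wo_refl[OF wx p] by simp
    show "\<And>pa. pa \<in> Field (fst ?B) \<Longrightarrow> snd (wletter (snd x p)) () = snd ?B pa" unfolding FB by simp
  qed
  have i4: "word_iso (wconc ?B ?C) (wconc (wletter (snd x p)) ?C)"
    by (rule iso_wconc_cong[OF wB wC wo_wletter wC i3 iso_refl])
  have i5: "word_iso (wconc ?A (wrestr x (above (fst x) p))) (wconc ?A (wconc (wletter (snd x p)) ?C))"
    by (rule iso_wconc_cong[OF wA wo_wrestr[OF wx] wA wo_wconc[OF wo_wletter wC] iso_refl iso_trans[OF i2 i4]])
  have i6: "word_iso (wconc ?A (wconc (wletter (snd x p)) ?C)) (wconc (wconc ?A (wletter (snd x p))) ?C)"
    using iso_sym[OF iso_wconc_assoc[OF wA wo_wletter wC]] .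
  show ?thesis using iso_trans[OF i1 iso_trans[OF i5 i6]] .
qed

lemma sless_prepend:
  assumes wz: "wo z" and s: "sless a b"
  shows "sless (wconc z a) (wconc z b)"
proof -
  obtain p f where pf: "p \<in> Field (fst a)" "oemb (fst a) (fst b) (under (fst a) p) f"
    "\<And>q. q \<in> underS (fst a) p \<Longrightarrow> snd b (f q) = snd a q" "snd a p < snd b (f p)"
    using slessE[OF s] by blast
  show ?thesis
  proof (rule slessI[where p="Inr p" and f="map_sum id f"])
    show "Inr p \<in> Field (fst (wconc z a))" using pf(1) by simp
    show "oemb (fst (wconc z a)) (fst (wconc z b)) (under (fst (wconc z a)) (Inr p)) (map_sum id f)"
      unfolding under_wconc_Inr[OF pf(1)] by (rule oemb_map_sum[OF wz pf(2)])
    fix q assume "q \<in> underS (fst (wconc z a)) (Inr p)"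
    thus "snd (wconc z b) (map_sum id f q) = snd (wconc z a) q"
      unfolding underS_wconc_Inr[OF pf(1)] using pf(3) by auto
  next
    show "snd (wconc z a) (Inr p) < snd (wconc z b) (map_sum id f (Inr p))" using pf(4) by simp
  qed
qed

lemma sless_letter0:
  assumes ab: "a < b"
  shows "sless (wconc (wletter a) z) (wconc (wletter b) z')"
proof (rule slessI[where p="Inl ()" and f="\<lambda>_. Inl ()"])
  show "Inl () \<in> Field (fst (wconc (wletter a) z))" by simp
  have U: "under (fst (wconc (wletter a) z)) (Inl ()) = {Inl ()}"
  proof
    show "under (fst (wconc (wletter a) z)) (Inl ()) \<subseteq> {Inl ()}"
    proof
      fix c assume "c \<in> under (fst (wconc (wletter a) z)) (Inl ())"
      thus "c \<in> {Inl ()}" unfolding under_def by (cases c) auto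
    qed
    show "{Inl ()} \<subseteq> under (fst (wconc (wletter a) z)) (Inl ())" unfolding under_def by simp
  qed
  show "oemb (fst (wconc (wletter a) z)) (fst (wconc (wletter b) z')) (under (fst (wconc (wletter a) z)) (Inl ())) (\<lambda>_. Inl ())"
    unfolding U oemb_def
  proof (intro conjI ballI allI impI)
    fix x c assume "x \<in> {Inl ()}" "(c, Inl ()) \<in> fst (wconc (wletter b) z')"
    thus "c \<in> (\<lambda>_. Inl ()) ` {Inl ()}" by (cases c) auto
  next
    fix x c assume "x \<in> {Inl ()}" "(c, x) \<in> fst (wconc (wletter a) z)"
    thus "c \<in> {Inl ()}" by (cases c) auto
  qed auto
  show "\<And>q. q \<in> underS (fst (wconc (wletter a) z)) (Inl ()) \<Longrightarrow> snd (wconc (wletter b) z') (Inl ()) = snd (wconc (wletter a) z) q"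
  proof -
    fix q assume "q \<in> underS (fst (wconc (wletter a) z)) (Inl ())"
    hence "q \<noteq> Inl ()" "(q, Inl ()) \<in> fst (wconc (wletter a) z)" unfolding underS_def by auto
    hence False by (cases q) auto
    thus "snd (wconc (wletter b) z') (Inl ()) = snd (wconc (wletter a) z) q" by blast
  qed
  show "snd (wconc (wletter a) z) (Inl ()) < snd (wconc (wletter b) z') (Inl ())" using ab by simp
qed

lemma sless_letter:
  assumes wy: "wo y" and wz: "wo z" and wz': "wo z'" and ab: "a < b"
  shows "sless (wconc (wconc y (wletter a)) z) (wconc (wconc y (wletter b)) z')"
proof -
  have s: "sless (wconc y (wconc (wletter a) z)) (wconc y (wconc (wletter b) z'))"
    by (rule sless_prepend[OF wy sless_letter0[OF ab]])
  have w1: "wo (wconc (wconc y (wletter a)) z)" using wo_wconc[OF wo_wconc[OF wy wo_wletter] wz] .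
  have w2: "wo (wconc y (wconc (wletter a) z))" using wo_wconc[OF wy wo_wconc[OF wo_wletter wz]] .
  have s2: "sless (wconc (wconc y (wletter a)) z) (wconc y (wconc (wletter b) z'))"
    by (rule sless_iso_left[OF w2 w1 iso_wconc_assoc[OF wy wo_wletter wz] s])
  show ?thesis
    by (rule sless_iso_right[OF w1 s2 iso_sym[OF iso_wconc_assoc[OF wy wo_wletter wz']]])
qed

lemma str_less_sless:
  fixes x :: "('i,'a::linorder) wrd" and x' :: "('j,'a) wrd"
  assumes wx: "wo x" and wx': "wo x'" and cx: "countable (Field (fst x))" and cx': "countable (Field (fst x'))"
  shows "str_less x x' \<longleftrightarrow> sless x x'"
proof
  assume "str_less x x'"
  then obtain y z z' :: "(nat,'a) wrd" and a b where h: "word y" "word z" "word z'" "a < b"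
    "word_iso x (wconc (wconc y (wletter a)) z)" "word_iso x' (wconc (wconc y (wletter b)) z')"
    unfolding str_less_def by blast
  have wy: "wo y" "wo z" "wo z'" using h unfolding word_def by blast+
  have w1: "wo (wconc (wconc y (wletter a)) z)" using wo_wconc[OF wo_wconc[OF wy(1) wo_wletter] wy(2)] .
  have s: "sless (wconc (wconc y (wletter a)) z) (wconc (wconc y (wletter b)) z')"
    by (rule sless_letter[OF wy h(4)])
  have "sless x (wconc (wconc y (wletter b)) z')" by (rule sless_iso_left[OF w1 wx h(5) s])
  thus "sless x x'" by (rule sless_iso_right[OF wx _ iso_sym[OF h(6)]])
next
  assume s: "sless x x'"
  then obtain p f where pf: "p \<in> Field (fst x)" "oemb (fst x) (fst x') (under (fst x) p) f"
    "\<And>q. q \<in> underS (fst x) p \<Longrightarrow> snd x' (f q) = snd x q" "snd x p < snd x' (f p)"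
    using slessE by blast
  have pu: "p \<in> under (fst x) p" using under_self[OF wx pf(1)] .
  have fp: "f p \<in> Field (fst x')" using oembD(3)[OF pf(2) pu] .
  let ?A = "wrestr x (underS (fst x) p)" and ?C = "wrestr x (aboveS (fst x) p)"
  let ?A' = "wrestr x' (underS (fst x') (f p))" and ?C' = "wrestr x' (aboveS (fst x') (f p))"
  have wA: "wo ?A" "wo ?C" "wo ?A'" "wo ?C'" using wo_wrestr wx wx' by blast+
  obtain y :: "(nat,'a) wrd" where y: "word y" "word_iso ?A y"
    using nat_word[OF wA(1) countable_wrestr[OF wx cx]] by blast
  obtain z :: "(nat,'a) wrd" where z: "word z" "word_iso ?C z"
    using nat_word[OF wA(2) countable_wrestr[OF wx cx]] by blast
  obtain z' :: "(nat,'a) wrd" where z': "word z'" "word_iso ?C' z'"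
    using nat_word[OF wA(4) countable_wrestr[OF wx' cx']] by blast
  have wyz: "wo y" "wo z" "wo z'" using y z z' unfolding word_def by blast+
  have US: "underS (fst x) p \<subseteq> under (fst x) p" by (rule underS_sub_under)
  have labs: "\<And>q. q \<in> underS (fst x) p \<Longrightarrow> snd x' (f q) = snd x q" using pf(3) .
  have Ucl: "\<And>a b. a \<in> underS (fst x) p \<Longrightarrow> (b,a) \<in> fst x \<Longrightarrow> b \<in> underS (fst x) p"
    unfolding underS_def using wo_trans[OF wx] wo_antisym[OF wx] by blast
  have fU: "oemb (fst x) (fst x') (underS (fst x) p) f" by (rule oemb_restr[OF pf(2) US Ucl])
  have iAA': "word_iso ?A (wrestr x' (f ` underS (fst x) p))"
    by (rule iso_restr_oemb[OF wx wx' fU labs subset_refl])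
  have eA: "f ` underS (fst x) p = underS (fst x') (f p)" by (rule oemb_underS_image[OF wx pf(2) pu])
  have iA'y: "word_iso ?A' y" using iso_trans[OF iso_sym[OF iAA'[unfolded eA]] y(2)] .
  have i1: "word_iso x (wconc (wconc y (wletter (snd x p))) z)"
  proof -
    have "word_iso (wconc (wconc ?A (wletter (snd x p))) ?C) (wconc (wconc y (wletter (snd x p))) z)"
      by (rule iso_wconc_cong[OF wo_wconc[OF wA(1) wo_wletter] wA(2) wo_wconc[OF wyz(1) wo_wletter] wyz(2)
            iso_wconc_cong[OF wA(1) wo_wletter wyz(1) wo_wletter y(2) iso_refl] z(2)])
    thus ?thesis using iso_trans[OF three_split[OF wx pf(1)]] by blast
  qed
  have i2: "word_iso x' (wconc (wconc y (wletter (snd x' (f p)))) z')"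
  proof -
    have "word_iso (wconc (wconc ?A' (wletter (snd x' (f p)))) ?C') (wconc (wconc y (wletter (snd x' (f p)))) z')"
      by (rule iso_wconc_cong[OF wo_wconc[OF wA(3) wo_wletter] wA(4) wo_wconc[OF wyz(1) wo_wletter] wyz(3)
            iso_wconc_cong[OF wA(3) wo_wletter wyz(1) wo_wletter iA'y iso_refl] z'(2)])
    thus ?thesis using iso_trans[OF three_split[OF wx' fp]] by blast
  qed
  show "str_less x x'" unfolding str_less_def using y(1) z(1) z'(1) pf(4) i1 i2 by blast
qed

lemma lex_le_wle:
  fixes x :: "('i,'a::linorder) wrd" and x' :: "('j,'a) wrd"
  assumes wx: "wo x" and wx': "wo x'" and cx: "countable (Field (fst x))" and cx': "countable (Field (fst x'))"
  shows "lex_le x x' \<longleftrightarrow> wle x x'"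
  unfolding lex_le_def wle_def is_prefix_pre[OF wx wx'] str_less_sless[OF wx wx' cx cx'] ..

lemma same_block2:
  assumes wk: "Well_order k"
    and h1: "((ob,q), c) \<in> fst (wpow u k)" and h2: "(c, (ob,q')) \<in> fst (wpow u k)"
  shows "fst c = ob \<and> (q, snd c) \<in> fst u \<and> (snd c, q') \<in> fst u"
proof -
  obtain c1 c2 where cc: "c = (c1,c2)" by (cases c)
  have a: "((ob,c1) \<in> k \<and> ob \<noteq> c1) \<or> (ob = c1 \<and> (q,c2) \<in> fst u)"
    and b: "((c1,ob) \<in> k \<and> c1 \<noteq> ob) \<or> (c1 = ob \<and> (c2,q') \<in> fst u)"
    using h1 h2 cc by auto
  have "c1 = ob" using a b wo_antisym[OF wk] by blast
  thus ?thesis using a b cc by auto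
qed

lemma length_lemma:
  assumes wu: "wo u" and q: "q \<in> Field (fst u)" and p: "pre u (wrestr u (above (fst u) q))"
  shows "word_iso u (wrestr u (above (fst u) q))"
proof -
  let ?t = "wrestr u (above (fst u) q)"
  have wt: "wo ?t" using wo_wrestr[OF wu] .
  have Ft: "Field (fst ?t) = above (fst u) q" using Field_sfx[OF wu] .
  obtain f where f: "oemb (fst u) (fst ?t) (Field (fst u)) f" "\<forall>a\<in>Field (fst u). snd ?t (f a) = snd u a"
    using p unfolding pre_def by blast
  have fF: "\<And>a. a \<in> Field (fst u) \<Longrightarrow> f a \<in> above (fst u) q" using oembD(3)[OF f(1)] Ft by blast
  have aF: "above (fst u) q \<subseteq> Field (fst u)" by (rule above_Field)
  show ?thesis
  proof (cases "f ` Field (fst u) = Field (fst ?t)")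
    case True
    show ?thesis
    proof (rule word_isoI2[OF _ True])
      show "inj_on f (Field (fst u))" unfolding inj_on_def using oemb_inj[OF wu f(1)] by blast
      show "\<And>p q. p \<in> Field (fst u) \<Longrightarrow> q \<in> Field (fst u) \<Longrightarrow> ((p, q) \<in> fst u) = ((f p, f q) \<in> fst ?t)"
        using oembD(4)[OF f(1)] by blast
      show "\<And>p. p \<in> Field (fst u) \<Longrightarrow> snd ?t (f p) = snd u p" using f(2) by blast
    qed
  next
    case False
    have "f ` Field (fst u) \<subseteq> Field (fst ?t)" using fF Ft by blast
    then obtain c where c: "c \<in> Field (fst ?t)" "c \<notin> f ` Field (fst u)" using False by blast
    have cF: "c \<in> Field (fst u)" using c(1) Ft aF by blast
    have below: "\<And>a. a \<in> Field (fst u) \<Longrightarrow> (f a, c) \<in> fst u \<and> f a \<noteq> c"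
    proof -
      fix a assume a: "a \<in> Field (fst u)"
      have fa: "f a \<in> Field (fst ?t)" using fF[OF a] Ft by simp
      have "(c, f a) \<notin> fst ?t"
      proof
        assume "(c, f a) \<in> fst ?t"
        hence "c \<in> f ` Field (fst u)" using oembD(5)[OF f(1) a] by blast
        thus False using c(2) by blast
      qed
      hence "(f a, c) \<in> fst ?t" using wo_total[OF wt fa c(1)] by blast
      moreover have "f a \<noteq> c" using c(2) a by blast
      ultimately show "(f a, c) \<in> fst u \<and> f a \<noteq> c" by simp
    qed
    have ge: "(c, f c) \<in> fst u"
    proof (rule wo_strict_mono_ge[OF wu _ _ cF])
      show "\<And>a. a \<in> Field (fst u) \<Longrightarrow> f a \<in> Field (fst u)" using fF aF by blast
      fix a b assume ab: "(a,b) \<in> fst u" "a \<noteq> b"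
      have aF': "a \<in> Field (fst u)" and bF': "b \<in> Field (fst u)" using ab(1) by (auto intro: wo_FieldI1 wo_FieldI2)
      have "(f a, f b) \<in> fst ?t" using oembD(4)[OF f(1) aF' bF'] ab by simp
      moreover have "f a \<noteq> f b" using oemb_inj[OF wu f(1) aF' bF'] ab by blast
      ultimately show "(f a, f b) \<in> fst u \<and> f a \<noteq> f b" by simp
    qed
    thus ?thesis using below[OF cF] wo_antisym[OF wu] by blast
  qed
qed

lemma primelike_iso:
  assumes wx: "wo x" and wx': "wo x'" and i: "word_iso x x'" and pl: "primelike x"
  shows "primelike x'"
  unfolding primelike_def
proof (intro ballI impI)
  fix p' assume p': "p' \<in> Field (fst x')" and nm: "\<exists>q. (q,p') \<in> fst x' \<and> q \<noteq> p'"
  obtain p where p: "p \<in> Field (fst x)" "word_iso (wrestr x' (above (fst x') p')) (wrestr x (above (fst x) p))"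
    "(\<exists>q. (q,p') \<in> fst x' \<and> q \<noteq> p') \<longleftrightarrow> (\<exists>q. (q,p) \<in> fst x \<and> q \<noteq> p)"
    using iso_sfx[OF wx' wx iso_sym[OF i] p'] by blast
  have "wle x (wrestr x (above (fst x) p))" using pl p(1) p(3) nm unfolding primelike_def by blast
  hence "wle x (wrestr x' (above (fst x') p'))" using wle_iso_right[OF wx _ iso_sym[OF p(2)]] by blast
  thus "wle x' (wrestr x' (above (fst x') p'))" using wle_iso_left[OF wx wx' iso_sym[OF i]] by blast
qed

lemma sfx_sfx:
  assumes wx: "wo x" and p12: "(p1,p2) \<in> fst x"
  shows "wrestr (wrestr x (above (fst x) p1)) (above (fst (wrestr x (above (fst x) p1))) p2) = wrestr x (above (fst x) p2)"
proof -
  have "above (fst x) p1 \<inter> above (fst (wrestr x (above (fst x) p1))) p2 = above (fst x) p2"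
    unfolding above_def using p12 wo_trans[OF wx] by auto
  thus ?thesis unfolding wrestr_wrestr by simp
qed

lemma above_wpow_min:
  assumes wy: "wo y" and wb: "Well_order b" and o: "ob \<in> Field b" and m: "m \<in> Field (fst y)"
    and mmin: "\<And>c. c \<in> Field (fst y) \<Longrightarrow> (m,c) \<in> fst y"
  shows "above (fst (wpow y b)) (ob,m) = above b ob \<times> Field (fst y)"
proof
  show "above (fst (wpow y b)) (ob,m) \<subseteq> above b ob \<times> Field (fst y)"
  proof
    fix c assume c: "c \<in> above (fst (wpow y b)) (ob,m)"
    obtain c1 c2 where cc: "c = (c1,c2)" by (cases c)
    have "c1 \<in> Field b" "c2 \<in> Field (fst y)" "((ob,c1) \<in> b \<and> ob \<noteq> c1) \<or> ob = c1"
      using c cc unfolding above_def by auto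
    thus "c \<in> above b ob \<times> Field (fst y)" using cc wo_refl[OF wb] unfolding above_def by auto
  qed
  show "above b ob \<times> Field (fst y) \<subseteq> above (fst (wpow y b)) (ob,m)"
  proof
    fix c assume c: "c \<in> above b ob \<times> Field (fst y)"
    obtain c1 c2 where cc: "c = (c1,c2)" by (cases c)
    have "c1 \<in> Field b" using c cc unfolding above_def by (auto intro: wo_FieldI2)
    thus "c \<in> above (fst (wpow y b)) (ob,m)" using c cc o m mmin unfolding above_def by auto
  qed
qed

lemma pre_pow_sub:
  assumes wy: "wo y" and wb: "Well_order b" and D: "D \<subseteq> Field b"
  shows "pre (wpow y (Restr b D)) (wpow y b)"
proof -
  obtain e where e: "oemb (Restr b D) b D e" using sub_oemb[OF wb D] by blast
  have wD: "Well_order (Restr b D)" using Well_order_Restr[OF wb] .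
  have FD: "Field (Restr b D) = D" using Field_Restr_wo[OF wb D] .
  let ?h = "\<lambda>(o1,p1). (e o1, p1)"
  have FP: "Field (fst (wpow y (Restr b D))) = D \<times> Field (fst y)" unfolding Field_wpow[OF wy] FD ..
  have eF: "\<And>o1. o1 \<in> D \<Longrightarrow> e o1 \<in> Field b" using oembD(3)[OF e] .
  have eo: "\<And>o1 o2. o1 \<in> D \<Longrightarrow> o2 \<in> D \<Longrightarrow> (o1,o2) \<in> b \<longleftrightarrow> (e o1, e o2) \<in> b"
    using oembD(4)[OF e] by auto
  have ei: "\<And>o1 o2. o1 \<in> D \<Longrightarrow> o2 \<in> D \<Longrightarrow> e o1 = e o2 \<longleftrightarrow> o1 = o2"
    using oemb_inj[OF wD e] by blast
  show ?thesis
    unfolding pre_def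
  proof (intro exI conjI)
    show "oemb (fst (wpow y (Restr b D))) (fst (wpow y b)) (Field (fst (wpow y (Restr b D)))) ?h"
    proof (rule oemb_full_intro)
      fix a assume "a \<in> Field (fst (wpow y (Restr b D)))"
      thus "?h a \<in> Field (fst (wpow y b))" using FP eF Field_wpow[OF wy] by auto
    next
      fix a c assume a: "a \<in> Field (fst (wpow y (Restr b D)))" and c: "c \<in> Field (fst (wpow y (Restr b D)))"
      obtain a1 a2 c1 c2 where ac: "a = (a1,a2)" "c = (c1,c2)" by (cases a; cases c)
      have F: "a1 \<in> D" "a2 \<in> Field (fst y)" "c1 \<in> D" "c2 \<in> Field (fst y)" using a c ac FP by auto
      show "(a,c) \<in> fst (wpow y (Restr b D)) \<longleftrightarrow> (?h a, ?h c) \<in> fst (wpow y b)"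
        unfolding ac using F FD eF[OF F(1)] eF[OF F(3)] eo[OF F(1) F(3)] ei[OF F(1) F(3)] by auto
    next
      fix a c assume a: "a \<in> Field (fst (wpow y (Restr b D)))" and c: "(c, ?h a) \<in> fst (wpow y b)"
      obtain a1 a2 c1 c2 where ac: "a = (a1,a2)" "c = (c1,c2)" by (cases a; cases c)
      have F: "a1 \<in> D" "a2 \<in> Field (fst y)" using a ac FP by auto
      have h: "c1 \<in> Field b" "c2 \<in> Field (fst y)" "((c1, e a1) \<in> b \<and> c1 \<noteq> e a1) \<or> (c1 = e a1 \<and> (c2,a2) \<in> fst y)"
        using c ac by auto
      have "c1 \<in> e ` D"
      proof (cases "c1 = e a1")
        case True thus ?thesis using F by blast
      next
        case False
        hence "(c1, e a1) \<in> b" using h by blast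
        thus ?thesis using oembD(5)[OF e F(1)] by blast
      qed
      then obtain d where d: "d \<in> D" "c1 = e d" by blast
      have "(d, c2) \<in> D \<times> Field (fst y)" using d h by blast
      moreover have "c = ?h (d, c2)" using ac d by simp
      ultimately show "c \<in> ?h ` Field (fst (wpow y (Restr b D)))" using FP h(2) d(1) by force
    qed
    show "\<forall>a\<in>Field (fst (wpow y (Restr b D))). snd (wpow y b) (?h a) = snd (wpow y (Restr b D)) a"
      by auto
  qed
qed

lemma pow_single:
  assumes wy: "wo y" and wb: "Well_order b" and F: "Field b = {ob}"
  shows "word_iso y (wpow y b)"
proof (rule word_isoI2[of "Pair ob"])
  show "inj_on (Pair ob) (Field (fst y))" by (auto simp: inj_on_def)
  show "Pair ob ` Field (fst y) = Field (fst (wpow y b))" unfolding Field_wpow[OF wy] F by auto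
  show "\<And>p q. p \<in> Field (fst y) \<Longrightarrow> q \<in> Field (fst y) \<Longrightarrow> ((p, q) \<in> fst y) = (((ob, p), ob, q) \<in> fst (wpow y b))"
    using F by simp
qed simp

lemma strict_pre_False:
  assumes wx: "wo x" and wy: "wo y" and f: "oemb (fst x) (fst y) (Field (fst x)) f"
    and ns: "f ` Field (fst x) \<noteq> Field (fst y)" and p: "pre y x"
  shows False
proof -
  obtain g where g: "oemb (fst y) (fst x) (Field (fst y)) g" using p unfolding pre_def by blast
  have sf: "f ` Field (fst x) \<subseteq> Field (fst y)"
  proof
    fix c assume "c \<in> f ` Field (fst x)"
    then obtain a where "a \<in> Field (fst x)" "c = f a" by blast
    thus "c \<in> Field (fst y)" using oembD(3)[OF f] by simp
  qed
  have sg: "g ` Field (fst y) \<subseteq> Field (fst x)"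
  proof
    fix c assume "c \<in> g ` Field (fst y)"
    then obtain a where "a \<in> Field (fst y)" "c = g a" by blast
    thus "c \<in> Field (fst x)" using oembD(3)[OF g] by simp
  qed
  have gf: "oemb (fst x) (fst x) (Field (fst x)) (g \<circ> f)" by (rule oemb_comp[OF f g sf])
  have idx: "oemb (fst x) (fst x) (Field (fst x)) id" by (rule oemb_id) (auto dest: Field_closed)
  have gfid: "\<And>a. a \<in> Field (fst x) \<Longrightarrow> g (f a) = a" using oemb_unique[OF wx wx gf idx] by simp
  obtain c where c: "c \<in> Field (fst y)" "c \<notin> f ` Field (fst x)" using ns sf by blast
  have gc: "g c \<in> Field (fst x)" using sg c(1) by blast
  have fgc: "f (g c) \<in> Field (fst y)" using sf gc by blast
  have "g (f (g c)) = g c" using gfid[OF gc] .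
  hence "f (g c) = c" using oemb_inj[OF wy g fgc c(1)] by blast
  thus False using c gc by (metis imageI)
qed

lemma first_block_oemb:
  assumes wu: "wo u" and wk: "Well_order k" and m: "m \<in> Field k" and mmin: "\<And>o'. o' \<in> Field k \<Longrightarrow> (m,o') \<in> k"
  shows "oemb (fst u) (fst (wpow u k)) (Field (fst u)) (Pair m)"
proof (rule oemb_full_intro)
  show "\<And>a. a \<in> Field (fst u) \<Longrightarrow> (m, a) \<in> Field (fst (wpow u k))" using m wu by simp
  show "\<And>a b. a \<in> Field (fst u) \<Longrightarrow> b \<in> Field (fst u) \<Longrightarrow> ((a, b) \<in> fst u) = (((m, a), m, b) \<in> fst (wpow u k))"
    using m by simp
  fix c d assume c: "c \<in> Field (fst u)" and d: "(d, (m,c)) \<in> fst (wpow u k)"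
  obtain d1 d2 where dd: "d = (d1,d2)" by (cases d)
  have "d1 \<in> Field k" "d2 \<in> Field (fst u)" "(d1, m) \<in> k \<and> d1 \<noteq> m \<or> d1 = m" using d dd by auto
  hence "d1 = m" using mmin wo_antisym[OF wk] by blast
  thus "d \<in> Pair m ` Field (fst u)" using dd \<open>d2 \<in> Field (fst u)\<close> by blast
qed

locale mainloc =
  fixes u :: "('i,'a::linorder) wrd" and v :: "('j,'a) wrd" and al :: "'o rel" and m :: 'i
  assumes wu: "wo u" and wv: "wo v" and wa: "Well_order al" and m: "m \<in> Field (fst u)"
    and mmin: "\<And>c. c \<in> Field (fst u) \<Longrightarrow> (m,c) \<in> fst u"
    and plu: "primelike u" and plv: "primelike v" and luv: "wle u v" and niso: "\<not> word_iso u v"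
    and notpow: "\<And>b :: 'j rel. Well_order b \<Longrightarrow> Field b \<subseteq> Field (fst v) \<Longrightarrow> word_iso v (wpow u b) \<Longrightarrow> False"
    and pv: "primitive v" and vne: "Field (fst v) \<noteq> {}"
begin

abbreviation "P \<equiv> wpow u al"
abbreviation "W \<equiv> wconc (wpow u al) v"

lemma wP: "wo P" using wo_wpow[OF wu wa] .
lemma wW: "wo W" using wo_wconc[OF wP wv] .
lemma une: "Field (fst u) \<noteq> {}" using m by blast
lemma FP: "Field (fst P) = Field al \<times> Field (fst u)" using Field_wpow[OF wu] .

lemma claimB':
  fixes r :: "'o rel"
  assumes "Well_order r" "Field r \<noteq> {}"
  shows "wle (wconc (wpow u r) v) v"
  by (rule claimB[OF wu wv une luv niso plv _ assms], rule notpow, assumption+)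

lemma wWv: "wle W v"
proof (cases "Field al = {}")
  case False thus ?thesis using claimB'[OF wa] by blast
next
  case True
  have "word_iso v W"
  proof (rule word_isoI2[of Inr])
    show "inj_on Inr (Field (fst v))" by simp
    show "Inr ` Field (fst v) = Field (fst W)" unfolding Field_wconc FP True by simp
  qed auto
  thus ?thesis using iso_wle iso_sym by blast
qed

lemma above_W_Inr:
  assumes r: "r \<in> Field (fst v)"
  shows "above (fst W) (Inr r) = Inr ` above (fst v) r"
proof
  show "above (fst W) (Inr r) \<subseteq> Inr ` above (fst v) r"
  proof
    fix c assume "c \<in> above (fst W) (Inr r)"
    thus "c \<in> Inr ` above (fst v) r" unfolding above_def by (cases c) auto
  qed
  show "Inr ` above (fst v) r \<subseteq> above (fst W) (Inr r)" unfolding above_def by auto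
qed

lemma caseI:
  assumes r: "r \<in> Field (fst v)"
  shows "wle W (wrestr W (above (fst W) (Inr r)))"
proof -
  have i1: "word_iso (wrestr v (above (fst v) r)) (wrestr W (above (fst W) (Inr r)))"
    using iso_Inr_piece[OF wP wv] unfolding above_W_Inr[OF r] .
  have ws: "wo (wrestr v (above (fst v) r))" using wo_wrestr[OF wv] .
  have "wle W (wrestr v (above (fst v) r))"
  proof (cases "\<exists>q. (q,r) \<in> fst v \<and> q \<noteq> r")
    case True
    hence "wle v (wrestr v (above (fst v) r))" using plv r unfolding primelike_def by blast
    thus ?thesis using wle_trans[OF wW wv ws wWv] by blast
  next
    case False
    hence "wrestr v (above (fst v) r) = v" using sfx_min[OF wv r] by blast
    thus ?thesis using wWv by simp
  qed
  thus ?thesis using wle_iso_right[OF wW _ i1] by blast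
qed

lemma above_W_Inl_m:
  assumes ob: "ob \<in> Field al"
  shows "above (fst W) (Inl (ob,m)) = Inl ` (above al ob \<times> Field (fst u)) \<union> Inr ` Field (fst v)"
proof
  show "above (fst W) (Inl (ob,m)) \<subseteq> Inl ` (above al ob \<times> Field (fst u)) \<union> Inr ` Field (fst v)"
  proof
    fix c assume c: "c \<in> above (fst W) (Inl (ob,m))"
    show "c \<in> Inl ` (above al ob \<times> Field (fst u)) \<union> Inr ` Field (fst v)"
    proof (cases c)
      case (Inl a)
      obtain a1 a2 where a: "a = (a1,a2)" by (cases a)
      have "a1 \<in> Field al" "a2 \<in> Field (fst u)" "((ob,a1) \<in> al \<and> ob \<noteq> a1) \<or> ob = a1"
        using c Inl a unfolding above_def by auto
      thus ?thesis using Inl a wo_refl[OF wa ob] unfolding above_def by auto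
    next
      case (Inr b)
      thus ?thesis using c unfolding above_def by auto
    qed
  qed
  show "Inl ` (above al ob \<times> Field (fst u)) \<union> Inr ` Field (fst v) \<subseteq> above (fst W) (Inl (ob,m))"
  proof
    fix c assume c: "c \<in> Inl ` (above al ob \<times> Field (fst u)) \<union> Inr ` Field (fst v)"
    show "c \<in> above (fst W) (Inl (ob,m))"
    proof (cases c)
      case (Inl a)
      obtain a1 a2 where a: "a = (a1,a2)" by (cases a)
      have h: "(ob,a1) \<in> al" "a2 \<in> Field (fst u)" using c Inl a unfolding above_def by auto
      have "a1 \<in> Field al" using h(1) by (rule wo_FieldI2)
      thus ?thesis using Inl a h ob m mmin[OF h(2)] unfolding above_def by auto
    next
      case (Inr b)
      thus ?thesis using c ob m wu unfolding above_def by auto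
    qed
  qed
qed

lemma caseIII:
  assumes ob: "ob \<in> Field al"
  shows "wle W (wrestr W (above (fst W) (Inl (ob,m))))"
proof -
  let ?D = "above al ob"
  let ?S = "Inl ` (?D \<times> Field (fst u)) :: ('o \<times> 'i + 'j) set" and ?T = "Inr ` Field (fst v) :: ('o \<times> 'i + 'j) set"
  have D: "?D \<subseteq> Field al" by (rule above_Field)
  have j1: "word_iso (wconc (wrestr W ?S) (wrestr W ?T)) (wrestr W (?S \<union> ?T))"
  proof (rule iso_pieces[OF wW])
    show "?S \<inter> ?T = {}" by blast
    fix s t assume s: "s \<in> ?S" and t: "t \<in> ?T" and sF: "s \<in> Field (fst W)" and tF: "t \<in> Field (fst W)"
    obtain s1 where s1: "s = Inl s1" using s by blast
    obtain t1 where t1: "t = Inr t1" using t by blast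
    show "(s,t) \<in> fst W" using sF tF s1 t1 by simp
  qed
  have e1: "wrestr P (?D \<times> Field (fst u)) = wpow u (Restr al ?D)" by (rule wrestr_wpow[OF wu wa D])
  have j2: "word_iso (wpow u (Restr al ?D)) (wrestr W ?S)"
    using iso_Inl_piece[OF wP wv, of "?D \<times> Field (fst u)"] unfolding e1 .
  have j3: "word_iso v (wrestr W ?T)"
    using iso_Inr_piece[OF wP wv, of "Field (fst v)"] unfolding wrestr_Field .
  have wD: "Well_order (Restr al ?D)" using Well_order_Restr[OF wa] .
  have j4: "word_iso (wconc (wpow u (Restr al ?D)) v) (wconc (wrestr W ?S) (wrestr W ?T))"
    by (rule iso_wconc_cong[OF wo_wpow[OF wu wD] wv wo_wrestr[OF wW] wo_wrestr[OF wW] j2 j3])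
  have j: "word_iso (wconc (wpow u (Restr al ?D)) v) (wrestr W (above (fst W) (Inl (ob,m))))"
    using iso_trans[OF j4 j1] unfolding above_W_Inl_m[OF ob] .
  have up: "\<And>d e. d \<in> ?D \<Longrightarrow> (d,e) \<in> al \<Longrightarrow> e \<in> ?D"
    unfolding above_def using wo_trans[OF wa] by blast
  have M: "wle W (wconc (wpow u (Restr al ?D)) v)"
    by (rule wle_pow_tail[OF wu wv wa D up claimB'])
  show ?thesis using wle_iso_right[OF wW M j] .
qed

lemma pre_block_sfx:
  assumes ob: "ob \<in> Field al" and q: "q \<in> Field (fst u)"
  shows "pre (wrestr u (above (fst u) q)) (wrestr W (above (fst W) (Inl (ob,q))))"
proof -
  let ?t = "wrestr u (above (fst u) q)" and ?T = "wrestr W (above (fst W) (Inl (ob,q)))"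
  let ?h = "\<lambda>c. Inl (ob,c) :: 'o \<times> 'i + 'j"
  have Ft: "Field (fst ?t) = above (fst u) q" using Field_sfx[OF wu] .
  have FT: "Field (fst ?T) = above (fst W) (Inl (ob,q))" using Field_sfx[OF wW] .
  have inA: "\<And>c. c \<in> above (fst u) q \<Longrightarrow> ?h c \<in> above (fst W) (Inl (ob,q)) \<and> c \<in> Field (fst u)"
  proof -
    fix c assume c: "c \<in> above (fst u) q"
    hence qc: "(q,c) \<in> fst u" unfolding above_def by blast
    hence cF: "c \<in> Field (fst u)" by (rule wo_FieldI2)
    thus "?h c \<in> above (fst W) (Inl (ob,q)) \<and> c \<in> Field (fst u)" using qc ob q unfolding above_def by simp
  qed
  show ?thesis
    unfolding pre_def
  proof (intro exI conjI)
    show "oemb (fst ?t) (fst ?T) (Field (fst ?t)) ?h"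
    proof (rule oemb_full_intro)
      show "\<And>a. a \<in> Field (fst ?t) \<Longrightarrow> ?h a \<in> Field (fst ?T)" using inA Ft FT by blast
    next
      fix a b assume a: "a \<in> Field (fst ?t)" and b: "b \<in> Field (fst ?t)"
      have a': "?h a \<in> above (fst W) (Inl (ob,q))" "a \<in> Field (fst u)" using inA a Ft by auto
      have b': "?h b \<in> above (fst W) (Inl (ob,q))" "b \<in> Field (fst u)" using inA b Ft by auto
      show "(a,b) \<in> fst ?t \<longleftrightarrow> (?h a, ?h b) \<in> fst ?T" using a b Ft a' b' ob by auto
    next
      fix a c assume a: "a \<in> Field (fst ?t)" and c: "(c, ?h a) \<in> fst ?T"
      have cA: "c \<in> above (fst W) (Inl (ob,q))" and cW: "(c, ?h a) \<in> fst W" using c by auto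
      show "c \<in> ?h ` Field (fst ?t)"
      proof (cases c)
        case (Inl c2)
        have h1: "((ob,q), c2) \<in> fst P" using cA Inl unfolding above_def by simp
        have h2: "(c2, (ob,a)) \<in> fst P" using cW Inl by simp
        have sb: "fst c2 = ob \<and> (q, snd c2) \<in> fst u \<and> (snd c2, a) \<in> fst u" by (rule same_block2[OF wa h1 h2])
        hence "snd c2 \<in> Field (fst ?t)" using Ft unfolding above_def by blast
        moreover have "c = ?h (snd c2)" using Inl sb by (metis prod.collapse)
        ultimately show ?thesis by blast
      next
        case (Inr c2) thus ?thesis using cW by simp
      qed
    qed
    show "\<forall>a\<in>Field (fst ?t). snd ?T (?h a) = snd ?t a" by simp
  qed
qed

lemma above_W_Inl:
  assumes ob: "ob \<in> Field al" and q: "q \<in> Field (fst u)"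
  shows "above (fst W) (Inl (ob,q)) = Inl ` ({ob} \<times> above (fst u) q) \<union> (Inl ` (aboveS al ob \<times> Field (fst u)) \<union> Inr ` Field (fst v))"
proof
  show "above (fst W) (Inl (ob,q)) \<subseteq> Inl ` ({ob} \<times> above (fst u) q) \<union> (Inl ` (aboveS al ob \<times> Field (fst u)) \<union> Inr ` Field (fst v))"
  proof
    fix c assume c: "c \<in> above (fst W) (Inl (ob,q))"
    show "c \<in> Inl ` ({ob} \<times> above (fst u) q) \<union> (Inl ` (aboveS al ob \<times> Field (fst u)) \<union> Inr ` Field (fst v))"
    proof (cases c)
      case (Inl a)
      obtain a1 a2 where a: "a = (a1,a2)" by (cases a)
      have "a1 \<in> Field al" "a2 \<in> Field (fst u)" "((ob,a1) \<in> al \<and> ob \<noteq> a1) \<or> (ob = a1 \<and> (q,a2) \<in> fst u)"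
        using c Inl a unfolding above_def by auto
      thus ?thesis using Inl a unfolding above_def aboveS_def by auto
    next
      case (Inr b)
      thus ?thesis using c unfolding above_def by auto
    qed
  qed
  show "Inl ` ({ob} \<times> above (fst u) q) \<union> (Inl ` (aboveS al ob \<times> Field (fst u)) \<union> Inr ` Field (fst v)) \<subseteq> above (fst W) (Inl (ob,q))"
  proof
    fix c assume c: "c \<in> Inl ` ({ob} \<times> above (fst u) q) \<union> (Inl ` (aboveS al ob \<times> Field (fst u)) \<union> Inr ` Field (fst v))"
    show "c \<in> above (fst W) (Inl (ob,q))"
    proof (cases c)
      case (Inl a)
      obtain a1 a2 where a: "a = (a1,a2)" by (cases a)
      consider "a1 = ob" "(q,a2) \<in> fst u" | "(ob,a1) \<in> al" "ob \<noteq> a1" "a2 \<in> Field (fst u)"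
        using c Inl a unfolding above_def aboveS_def by auto
      thus ?thesis
      proof cases
        case 1
        have "a2 \<in> Field (fst u)" using 1(2) by (rule wo_FieldI2)
        thus ?thesis using 1 Inl a ob q unfolding above_def by auto
      next
        case 2
        have "a1 \<in> Field al" using 2(1) by (rule wo_FieldI2)
        thus ?thesis using 2 Inl a ob q unfolding above_def by auto
      qed
    next
      case (Inr b)
      thus ?thesis using c ob q wu unfolding above_def by auto
    qed
  qed
qed

lemma sfx_Inl_decomp:
  assumes ob: "ob \<in> Field al" and q: "q \<in> Field (fst u)"
  shows "word_iso (wrestr W (above (fst W) (Inl (ob,q))))
           (wconc (wrestr u (above (fst u) q)) (wrestr W (Inl ` (aboveS al ob \<times> Field (fst u)) \<union> Inr ` Field (fst v))))"
proof -
  let ?S = "Inl ` ({ob} \<times> above (fst u) q) :: ('o \<times> 'i + 'j) set"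
  let ?R = "Inl ` (aboveS al ob \<times> Field (fst u)) \<union> Inr ` Field (fst v) :: ('o \<times> 'i + 'j) set"
  have j1: "word_iso (wconc (wrestr W ?S) (wrestr W ?R)) (wrestr W (?S \<union> ?R))"
  proof (rule iso_pieces[OF wW])
    show "?S \<inter> ?R = {}" unfolding aboveS_def by blast
    fix s t assume s: "s \<in> ?S" and t: "t \<in> ?R" and sF: "s \<in> Field (fst W)" and tF: "t \<in> Field (fst W)"
    obtain s2 where s2: "s = Inl (ob,s2)" "s2 \<in> above (fst u) q" using s by blast
    have s2F: "s2 \<in> Field (fst u)" using s2(2) above_Field[of "fst u" q] by blast
    show "(s,t) \<in> fst W"
    proof (cases t)
      case (Inl t1)
      obtain t11 t12 where tt: "t1 = (t11,t12)" by (cases t1)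
      have "(ob,t11) \<in> al" "ob \<noteq> t11" "t12 \<in> Field (fst u)" using t Inl tt unfolding aboveS_def by auto
      moreover have "t11 \<in> Field al" using \<open>(ob,t11) \<in> al\<close> by (rule wo_FieldI2)
      ultimately show ?thesis using s2 Inl tt ob s2F by auto
    next
      case (Inr t1)
      thus ?thesis using sF tF s2 by simp
    qed
  qed
  have j2: "word_iso (wrestr u (above (fst u) q)) (wrestr P ({ob} \<times> above (fst u) q))"
    by (rule iso_block[OF wu wa ob])
  have j3: "word_iso (wrestr P ({ob} \<times> above (fst u) q)) (wrestr W ?S)"
    by (rule iso_Inl_piece[OF wP wv])
  have j4: "word_iso (wconc (wrestr W ?S) (wrestr W ?R)) (wconc (wrestr u (above (fst u) q)) (wrestr W ?R))"
    by (rule iso_wconc_cong[OF wo_wrestr[OF wW] wo_wrestr[OF wW] wo_wrestr[OF wu] wo_wrestr[OF wW]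
          iso_sym[OF iso_trans[OF j2 j3]] iso_refl])
  show ?thesis using iso_trans[OF iso_sym[OF j1[unfolded above_W_Inl[OF ob q, symmetric]]] j4] .
qed

lemma caseII:
  assumes ob: "ob \<in> Field al" and q: "q \<in> Field (fst u)" and nm: "\<exists>q'. (q',q) \<in> fst u \<and> q' \<noteq> q"
  shows "wle W (wrestr W (above (fst W) (Inl (ob,q))))"
proof -
  let ?t = "wrestr u (above (fst u) q)" and ?T = "wrestr W (above (fst W) (Inl (ob,q)))"
  have wt: "wo ?t" using wo_wrestr[OF wu] .
  have wT: "wo ?T" using wo_wrestr[OF wW] .
  have l: "wle u ?t" using plu q nm unfolding primelike_def by blast
  have ane: "Field al \<noteq> {}" using ob by blast
  obtain m0 where m0: "m0 \<in> Field al" "\<forall>s\<in>Field al. (m0,s) \<in> al" using wo_min[OF wa subset_refl ane] by blast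
  have puW: "pre u W" using pre_trans[OF pre_first_block[OF wu wa m0(1)] pre_wconc[OF wP wv]] m0(2) by blast
  show ?thesis using l unfolding wle_def
  proof
    assume s: "sless u ?t"
    have "sless W ?t" by (rule pre_sless_left[OF wu wW puW s])
    hence "sless W ?T" using sless_pre_right[OF wW _ pre_block_sfx[OF ob q]] by blast
    thus "pre W ?T \<or> sless W ?T" by blast
  next
    assume p: "pre u ?t"
    have iu: "word_iso u ?t" by (rule length_lemma[OF wu q p])
    let ?R = "wrestr W (Inl ` (aboveS al ob \<times> Field (fst u)) \<union> Inr ` Field (fst v))"
    have wR: "wo ?R" using wo_wrestr[OF wW] .
    have k1: "word_iso ?T (wconc ?t ?R)" by (rule sfx_Inl_decomp[OF ob q])
    have "\<not> (\<exists>q'. (q',m) \<in> fst u \<and> q' \<noteq> m)"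
    proof
      assume "\<exists>q'. (q',m) \<in> fst u \<and> q' \<noteq> m"
      then obtain q' where q': "(q',m) \<in> fst u" "q' \<noteq> m" by blast
      have "q' \<in> Field (fst u)" using q'(1) by (rule wo_FieldI1)
      hence "(m,q') \<in> fst u" by (rule mmin)
      thus False using q' wo_antisym[OF wu] by blast
    qed
    hence um: "wrestr u (above (fst u) m) = u" using sfx_min[OF wu m] by blast
    have k2: "word_iso (wrestr W (above (fst W) (Inl (ob,m)))) (wconc u ?R)"
      using sfx_Inl_decomp[OF ob m] unfolding um .
    have k3: "word_iso (wconc ?t ?R) (wconc u ?R)"
      by (rule iso_wconc_cong[OF wt wR wu wR iso_sym[OF iu] iso_refl])
    have k: "word_iso (wrestr W (above (fst W) (Inl (ob,m)))) ?T"
      using iso_trans[OF k2 iso_sym[OF iso_trans[OF k1 k3]]] .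
    have "wle W ?T" using wle_iso_right[OF wW caseIII[OF ob] k] .
    thus "pre W ?T \<or> sless W ?T" unfolding wle_def .
  qed
qed

theorem primelike_W: "primelike W"
  unfolding primelike_def
proof (intro ballI impI)
  fix p assume p: "p \<in> Field (fst W)" and nm: "\<exists>q. (q,p) \<in> fst W \<and> q \<noteq> p"
  show "wle W (wrestr W (above (fst W) p))"
  proof (cases p)
    case (Inl a)
    obtain ob q where a: "a = (ob,q)" by (cases a)
    have ob: "ob \<in> Field al" and q: "q \<in> Field (fst u)" using p Inl a FP by auto
    show ?thesis
    proof (cases "\<exists>q'. (q',q) \<in> fst u \<and> q' \<noteq> q")
      case True thus ?thesis using caseII[OF ob q] Inl a by simp
    next
      case False
      hence "q = m" using mmin[OF q] by blast
      thus ?thesis using caseIII[OF ob] Inl a by simp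
    qed
  next
    case (Inr r)
    have "r \<in> Field (fst v)" using p Inr by simp
    thus ?thesis using caseI Inr by simp
  qed
qed

end

context mainloc
begin

theorem primitive_W: "primitive W"
  unfolding primitive_def
proof (intro allI impI)
  fix y :: "(nat,'a) wrd" and b :: "nat rel"
  assume h: "word y \<and> Well_order b \<and> word_iso W (wpow y b)"
  have wy: "wo y" using h unfolding word_def by blast
  have wb: "Well_order b" using h by blast
  have iWY: "word_iso W (wpow y b)" using h by blast
  let ?Y = "wpow y b"
  have wY: "wo ?Y" using wo_wpow[OF wy wb] .
  have FY: "Field (fst ?Y) = Field b \<times> Field (fst y)" using Field_wpow[OF wy] .
  obtain hh where hh: "oemb (fst W) (fst ?Y) (Field (fst W)) hh" "hh ` Field (fst W) = Field (fst ?Y)"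
    "\<And>a. a \<in> Field (fst W) \<Longrightarrow> snd ?Y (hh a) = snd W a" using iso_oemb[OF iWY] by blast
  obtain rmin where rmin: "rmin \<in> Field (fst v)" "\<forall>s\<in>Field (fst v). (rmin,s) \<in> fst v"
    using wo_min[OF wv subset_refl vne] by blast
  have rW: "Inr rmin \<in> Field (fst W)" using rmin(1) by simp
  have "hh (Inr rmin) \<in> Field (fst ?Y)" using hh(2) rW by blast
  hence bne: "Field b \<noteq> {}" and yne: "Field (fst y) \<noteq> {}" using FY by auto
  show "(\<exists>o1. Field b = {o1}) \<and> word_iso y W"
  proof (cases "\<exists>o1. Field b = {o1}")
    case True
    then obtain o1 where o1: "Field b = {o1}" by blast
    have "word_iso y ?Y" using pow_single[OF wy wb o1] .
    thus ?thesis using True iso_trans[OF _ iso_sym[OF iWY]] by blast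
  next
    case False
    have two: "\<exists>o1\<in>Field b. \<exists>o2\<in>Field b. o1 \<noteq> o2"
    proof -
      obtain o1 where o1: "o1 \<in> Field b" using bne by blast
      have "Field b \<noteq> {o1}" using False by blast
      then obtain o2 where "o2 \<in> Field b" "o2 \<noteq> o1" using o1 by blast
      thus ?thesis using o1 by blast
    qed
    obtain my where my: "my \<in> Field (fst y)" "\<forall>s\<in>Field (fst y). (my,s) \<in> fst y"
      using wo_min[OF wy subset_refl yne] by blast
    have mymin: "\<And>c. c \<in> Field (fst y) \<Longrightarrow> (my,c) \<in> fst y" using my(2) by blast
    have plY: "primelike ?Y" using primelike_iso[OF wW wY iWY primelike_W] .
    have rmin_nm: "\<not> (\<exists>q. (q,rmin) \<in> fst v \<and> q \<noteq> rmin)"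
    proof
      assume "\<exists>q. (q,rmin) \<in> fst v \<and> q \<noteq> rmin"
      then obtain q where q: "(q,rmin) \<in> fst v" "q \<noteq> rmin" by blast
      have "q \<in> Field (fst v)" using q(1) by (rule wo_FieldI1)
      hence "(rmin,q) \<in> fst v" using rmin(2) by blast
      thus False using q wo_antisym[OF wv] by blast
    qed
    have i0: "word_iso (wrestr v (above (fst v) rmin)) (wrestr W (Inr ` above (fst v) rmin))"
      by (rule iso_Inr_piece[OF wP wv])
    have i1: "word_iso v (wrestr W (above (fst W) (Inr rmin)))"
      using i0 unfolding above_W_Inr[OF rmin(1)] sfx_min[OF wv rmin(1) rmin_nm] .
    obtain p' where p': "p' \<in> Field (fst ?Y)" "word_iso (wrestr W (above (fst W) (Inr rmin))) (wrestr ?Y (above (fst ?Y) p'))"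
      using iso_sfx[OF wW wY iWY rW] by blast
    let ?V = "wrestr ?Y (above (fst ?Y) p')"
    have wV: "wo ?V" using wo_wrestr[OF wY] .
    have ivV: "word_iso v ?V" using iso_trans[OF i1 p'(2)] .
    have plV: "primelike ?V" using primelike_iso[OF wv wV ivV plv] .
    have wYV: "wle ?Y ?V"
    proof -
      have "wle W ?V" using wle_iso_right[OF wW wWv ivV] .
      thus ?thesis using wle_iso_left[OF wW wY iso_sym[OF iWY]] by blast
    qed
    obtain ob qb where obq: "p' = (ob,qb)" by (cases p')
    have ob: "ob \<in> Field b" and qb: "qb \<in> Field (fst y)" using p'(1) obq FY by auto
    show ?thesis
    proof (cases "\<exists>o'\<in>Field b. (ob,o') \<in> b \<and> o' \<noteq> ob")
      case True
      then obtain o' where o': "o' \<in> Field b" "(ob,o') \<in> b" "o' \<noteq> ob" by blast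
      let ?pos = "(o', my)"
      have ppos: "(p', ?pos) \<in> fst ?Y" using obq o' ob qb my(1) by auto
      have posV: "?pos \<in> Field (fst ?V)" using Field_sfx[OF wY] ppos unfolding above_def by blast
      have nmV: "\<exists>q. (q, ?pos) \<in> fst ?V \<and> q \<noteq> ?pos"
      proof -
        have "(p',p') \<in> fst ?Y" using wo_refl[OF wY p'(1)] .
        hence "(p', ?pos) \<in> fst ?V" using ppos unfolding above_def by simp
        moreover have "p' \<noteq> ?pos" using obq o'(3) by simp
        ultimately show ?thesis by blast
      qed
      have l1: "wle ?V (wrestr ?V (above (fst ?V) ?pos))" using plV posV nmV unfolding primelike_def by blast
      have e1: "wrestr ?V (above (fst ?V) ?pos) = wrestr ?Y (above (fst ?Y) ?pos)" by (rule sfx_sfx[OF wY ppos])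
      have D: "above b o' \<subseteq> Field b" by (rule above_Field)
      have a1: "above (fst ?Y) ?pos = above b o' \<times> Field (fst y)"
        by (rule above_wpow_min[OF wy wb o'(1) my(1) mymin])
      have e2: "wrestr ?Y (above (fst ?Y) ?pos) = wpow y (Restr b (above b o'))"
        unfolding a1 by (rule wrestr_wpow[OF wy wb D])
      let ?Z = "wpow y (Restr b (above b o'))"
      have wZ: "wo ?Z" using wo_wpow[OF wy Well_order_Restr[OF wb]] .
      have l2: "wle ?V ?Z" using l1 unfolding e1 e2 .
      have l3: "wle ?Z ?Y" using pre_wle[OF pre_pow_sub[OF wy wb D]] .
      have "wle ?V ?Y" by (rule wle_trans[OF wV wZ wY l2 l3])
      hence "word_iso ?V ?Y" using wle_antisym[OF wV wY _ wYV] by blast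
      hence "word_iso v ?Y" using iso_trans[OF ivV] by blast
      hence "\<exists>o1. Field b = {o1}" using pv h unfolding primitive_def by blast
      thus ?thesis using False by blast
    next
      case False
      hence obmax: "\<And>o'. o' \<in> Field b \<Longrightarrow> (ob,o') \<in> b \<Longrightarrow> o' = ob" by blast
      obtain b0 where b0: "b0 \<in> Field b" "\<forall>s\<in>Field b. (b0,s) \<in> b" using wo_min[OF wb subset_refl bne] by blast
      have b0ob: "b0 \<noteq> ob"
      proof
        assume "b0 = ob"
        hence "\<forall>s\<in>Field b. s = ob" using b0 obmax by blast
        thus False using two by metis
      qed
      let ?pos = "(ob, my)"
      have posY: "?pos \<in> Field (fst ?Y)" using ob my(1) FY by blast
      have nmY: "\<exists>q. (q, ?pos) \<in> fst ?Y \<and> q \<noteq> ?pos"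
      proof -
        have "((b0,my), ?pos) \<in> fst ?Y" using b0 ob my(1) b0ob by auto
        thus ?thesis using b0ob by blast
      qed
      have l1: "wle ?Y (wrestr ?Y (above (fst ?Y) ?pos))" using plY posY nmY unfolding primelike_def by blast
      have ab: "above b ob = {ob}"
      proof
        show "above b ob \<subseteq> {ob}"
        proof
          fix c assume "c \<in> above b ob"
          hence c: "(ob,c) \<in> b" unfolding above_def by blast
          hence "c \<in> Field b" by (rule wo_FieldI2)
          thus "c \<in> {ob}" using obmax c by blast
        qed
        show "{ob} \<subseteq> above b ob" using wo_refl[OF wb ob] unfolding above_def by blast
      qed
      have D: "{ob} \<subseteq> Field b" using ob by blast
      have a1: "above (fst ?Y) ?pos = above b ob \<times> Field (fst y)"
        by (rule above_wpow_min[OF wy wb ob my(1) mymin])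
      have e2: "wrestr ?Y (above (fst ?Y) ?pos) = wpow y (Restr b {ob})"
        unfolding a1 ab by (rule wrestr_wpow[OF wy wb D])
      have F1: "Field (Restr b {ob}) = {ob}" by (rule Field_Restr_wo[OF wb D])
      have iyZ: "word_iso y (wpow y (Restr b {ob}))" by (rule pow_single[OF wy Well_order_Restr[OF wb] F1])
      have "wle ?Y (wpow y (Restr b {ob}))" using l1 unfolding e2 .
      hence lYy: "wle ?Y y" using wle_iso_right[OF wY _ iso_sym[OF iyZ]] by blast
      have fo: "oemb (fst y) (fst ?Y) (Field (fst y)) (Pair b0)"
        by (rule first_block_oemb[OF wy wb b0(1)]) (use b0(2) in blast)
      have "pre y ?Y" unfolding pre_def using fo by auto
      hence "word_iso ?Y y" using wle_antisym[OF wY wy lYy pre_wle] by blast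
      hence pYy: "pre ?Y y" by (rule iso_pre)
      have ns: "Pair b0 ` Field (fst y) \<noteq> Field (fst ?Y)"
      proof
        assume "Pair b0 ` Field (fst y) = Field (fst ?Y)"
        hence "?pos \<in> Pair b0 ` Field (fst y)" using posY by simp
        thus False using b0ob by blast
      qed
      show ?thesis using strict_pre_False[OF wy wY fo ns pYy] by blast
    qed
  qed
qed

end

lemma prime_primelike:
  assumes wx: "wo x" and cx: "countable (Field (fst x))" and p: "prime_word x"
  shows "primelike x"
  unfolding primelike_def
proof (intro ballI impI)
  fix q assume q: "q \<in> Field (fst x)" and nm: "\<exists>q'. (q', q) \<in> fst x \<and> q' \<noteq> q"
  have "lex_le x (wrestr x {q'. (q, q') \<in> fst x})" using p q nm unfolding prime_word_def by blast
  hence "lex_le x (wrestr x (above (fst x) q))" unfolding above_def .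
  thus "wle x (wrestr x (above (fst x) q))"
    using lex_le_wle[OF wx wo_wrestr[OF wx] cx countable_wrestr[OF wx cx]] by blast
qed

lemma primitive_nonempty:
  assumes p: "primitive x" and wx: "wo x"
  shows "Field (fst x) \<noteq> {}"
proof
  assume e: "Field (fst x) = {}"
  let ?y = "({}, \<lambda>_. undefined) :: (nat, 'b) wrd"
  have wy: "word ?y" unfolding word_def by (simp add: well_order_on_empty)
  have wb: "Well_order ({} :: nat rel)" by (simp add: well_order_on_empty)
  have F: "Field (fst (wpow ?y ({} :: nat rel))) = {}" unfolding wpow_def Field_def by simp
  have "word_iso x (wpow ?y ({} :: nat rel))" unfolding word_iso_def e F by (simp add: bij_betw_def)
  hence "\<exists>o1. Field ({} :: nat rel) = {o1}" using p wy wb unfolding primitive_def by blast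
  thus False by simp
qed

theorem mainTheorem4:
  fixes u :: "('i, 'a::{linorder, finite}) wrd" and v :: "('j, 'a) wrd" and \<alpha> :: "'o rel"
  assumes "word u" and "word v"
    and "prime_word u" and "prime_word v"
    and "lex_less u v"
    and "Well_order \<alpha>" and "countable (Field \<alpha>)"
  shows "word (wconc (wpow u \<alpha>) v) \<and> prime_word (wconc (wpow u \<alpha>) v)"
proof -
  have wu: "wo u" and cu: "countable (Field (fst u))" using assms(1) unfolding word_def by blast+
  have wv: "wo v" and cv: "countable (Field (fst v))" using assms(2) unfolding word_def by blast+
  have pu: "primitive u" using assms(3) unfolding prime_word_def by blast
  have pv: "primitive v" using assms(4) unfolding prime_word_def by blast
  have plu: "primelike u" by (rule prime_primelike[OF wu cu assms(3)])
  have plv: "primelike v" by (rule prime_primelike[OF wv cv assms(4)])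
  have luv: "wle u v" and niso: "\<not> word_iso u v"
    using assms(5) lex_le_wle[OF wu wv cu cv] unfolding lex_less_def by blast+
  have une: "Field (fst u) \<noteq> {}" by (rule primitive_nonempty[OF pu wu])
  have vne: "Field (fst v) \<noteq> {}" by (rule primitive_nonempty[OF pv wv])
  obtain m where m: "m \<in> Field (fst u)" "\<forall>s\<in>Field (fst u). (m,s) \<in> fst u"
    using wo_min[OF wu subset_refl une] by blast
  have notpow: "\<And>b :: 'j rel. Well_order b \<Longrightarrow> Field b \<subseteq> Field (fst v) \<Longrightarrow> word_iso v (wpow u b) \<Longrightarrow> False"
  proof -
    fix b :: "'j rel" assume wb: "Well_order b" and sb: "Field b \<subseteq> Field (fst v)" and i: "word_iso v (wpow u b)"
    have cb: "countable (Field b)" using countable_subset[OF sb cv] .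
    have "word_iso u v" using primitive_transfer[OF pv wu cu wb cb i] by blast
    thus False using niso by blast
  qed
  interpret mainloc u v \<alpha> m
    by (unfold_locales) (use wu wv assms(6) m plu plv luv niso notpow pv vne in auto)
  have cW: "countable (Field (fst W))"
    by (rule countable_wconc[OF countable_wpow[OF wu assms(7) cu] cv])
  have "word W" unfolding word_def using wW cW by blast
  moreover have "prime_word W"
    unfolding prime_word_def
  proof (intro conjI ballI impI)
    show "primitive W" by (rule primitive_W)
    fix p assume p: "p \<in> Field (fst W)" and nm: "\<exists>q. (q, p) \<in> fst W \<and> q \<noteq> p"
    have "wle W (wrestr W (above (fst W) p))" using primelike_W p nm unfolding primelike_def by blast
    hence "lex_le W (wrestr W (above (fst W) p))"
      using lex_le_wle[OF wW wo_wrestr[OF wW] cW countable_wrestr[OF wW cW]] by blast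
    thus "lex_le W (wrestr W {q. (p, q) \<in> fst W})" unfolding above_def .
  qed
  ultimately show ?thesis by blast
qed

end
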